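(* Let $k = 137006962414679910 = 2 \cdot 3 \cdot 5 \cdot 7 \cdot 23 \cdot 31 \cdot 37 \cdot 43 \cdot 83 \cdot 109 \cdot 151 \cdot 421$. The following 10 points are rational points on the elliptic curve \[ y^2 = x^3 + 4692726937524378378756566939402025 \] (a minimal Weierstrass model of $E'_k$) and are linearly independent in its Mordell–Weil group: $(-135797482140, 46781315964225555)$, $(-150436201545, 35891470127810220)$, $(-42200591214, 67952721291406041)$, $(2327642247924, 3551854243978575507)$, $(5504535148140, 12914782107290941395)$, $(140506152430, 86409469562070095)$, $(397507563420, 259814927561209005)$, $(7162660587075, 19169656506442936830)$, $(73148794740, 71303068454026605)$, $(-102758626586, 60063833881519937)$. Consequently $E_k: x^3+y^3=k$ has rank at least $10$ over $\mathbb{Q}$. *)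

theory Defs
  imports Complex_Main
begin

datatype ec_pt = Inf | Aff rat rat

definition on_curve :: "rat \<Rightarrow> rat \<Rightarrow> ec_pt \<Rightarrow> bool" where
  "on_curve a b P = (case P of Inf \<Rightarrow> True | Aff x y \<Rightarrow> y^2 = x^3 + a*x + b)"

fun ec_add :: "rat \<Rightarrow> rat \<Rightarrow> ec_pt \<Rightarrow> ec_pt \<Rightarrow> ec_pt" where
  "ec_add a b Inf Q = Q"
| "ec_add a b P Inf = P"
| "ec_add a b (Aff x1 y1) (Aff x2 y2) =
     (if x1 = x2 \<and> y1 = - y2 then Inf
      else let l = (if x1 = x2 then (3 * x1^2 + a) / (2 * y1) else (y2 - y1) / (x2 - x1));
               x3 = l^2 - x1 - x2
           in Aff x3 (l * (x1 - x3) - y1))"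

fun ec_neg :: "ec_pt \<Rightarrow> ec_pt" where
  "ec_neg Inf = Inf"
| "ec_neg (Aff x y) = Aff x (- y)"

fun ec_nmul :: "rat \<Rightarrow> rat \<Rightarrow> nat \<Rightarrow> ec_pt \<Rightarrow> ec_pt" where
  "ec_nmul a b 0 P = Inf"
| "ec_nmul a b (Suc n) P = ec_add a b P (ec_nmul a b n P)"

definition ec_smul :: "rat \<Rightarrow> rat \<Rightarrow> int \<Rightarrow> ec_pt \<Rightarrow> ec_pt" where
  "ec_smul a b n P = (if n \<ge> 0 then ec_nmul a b (nat n) P else ec_neg (ec_nmul a b (nat (- n)) P))"

definition ec_sum :: "rat \<Rightarrow> rat \<Rightarrow> ec_pt list \<Rightarrow> ec_pt" where
  "ec_sum a b Ps = foldr (ec_add a b) Ps Inf"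

definition ec_lin_indep :: "rat \<Rightarrow> rat \<Rightarrow> ec_pt list \<Rightarrow> bool" where
  "ec_lin_indep a b Ps =
     (\<forall>ns :: int list. length ns = length Ps \<longrightarrow>
        ec_sum a b (map2 (ec_smul a b) ns Ps) = Inf \<longrightarrow> (\<forall>n \<in> set ns. n = 0))"

definition ec_rank_ge :: "rat \<Rightarrow> rat \<Rightarrow> nat \<Rightarrow> bool" where
  "ec_rank_ge a b r =
     (\<exists>Ps. length Ps = r \<and> (\<forall>P \<in> set Ps. on_curve a b P) \<and> ec_lin_indep a b Ps)"

text \<open>The cubic  E_k : x^3 + y^3 = k  (k nonzero) is birationally isomorphic over Q, via
  X = 12k/(x+y), Y = 36k(x-y)/(x+y)  (point [1:-1:0] going to the point at infinity),
  to its Weierstrass model  Y^2 = X^3 - 432 k^2.  Its Mordell--Weil group (hence rank)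
  is defined through this model.\<close>
definition Ek_rank_ge :: "int \<Rightarrow> nat \<Rightarrow> bool" where
  "Ek_rank_ge k r = ec_rank_ge 0 (- 432 * (of_int k)^2) r"

end

theory Submission
  imports Defs "HOL-Number_Theory.Euler_Criterion"
begin


definition ecsl :: "rat \<Rightarrow> rat \<Rightarrow> rat \<Rightarrow> rat \<Rightarrow> rat \<Rightarrow> bool" where
  "ecsl x1 y1 x2 y2 l \<longleftrightarrow> y2 = y1 + l*(x2 - x1) \<and> 2*l*y1 + l^2*(x2 - x1) = x1^2 + x1*x2 + x2^2"

definition ecthd :: "rat \<Rightarrow> rat \<Rightarrow> rat \<Rightarrow> rat \<Rightarrow> ec_pt" where
  "ecthd x1 y1 x2 l = Aff (l^2 - x1 - x2) (l*(x1 - (l^2 - x1 - x2)) - y1)"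

lemma oc_Aff[simp]: "on_curve 0 b (Aff x y) \<longleftrightarrow> y^2 = x^3 + b"
  by (simp add: on_curve_def)

lemma oc_Inf[simp]: "on_curve 0 b Inf"
  by (simp add: on_curve_def)

lemma add_vert: "x1 = x2 \<Longrightarrow> y1 = - y2 \<Longrightarrow> ec_add 0 b (Aff x1 y1) (Aff x2 y2) = Inf"
  by simp

lemma sl_y0:
  assumes "y1^2 = x1^3 + b" "b \<noteq> 0" "ecsl x1 y1 x1 y2 l" shows "y2 = y1" "y1 \<noteq> 0"
proof -
  show "y2 = y1" using assms(3) by (simp add: ecsl_def)
  show "y1 \<noteq> 0"
  proof
    assume "y1 = 0"
    then have "x1 = 0" using assms(3) by (simp add: ecsl_def power2_eq_square)
    then show False using assms \<open>y1 = 0\<close> by simp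
  qed
qed

lemma add_sl:
  assumes c1: "y1^2 = x1^3 + b" and bnz: "b \<noteq> 0" and s: "ecsl x1 y1 x2 y2 l"
  shows "ec_add 0 b (Aff x1 y1) (Aff x2 y2) = ecthd x1 y1 x2 l"
proof (cases "x1 = x2")
  case True
  with sl_y0[OF c1 bnz] s have e: "y2 = y1" "y1 \<noteq> 0" by auto
  have l: "l = 3*x1^2/(2*y1)" using s True e by (simp add: ecsl_def field_simps power2_eq_square)
  have "\<not> (x1 = x2 \<and> y1 = - y2)" using e by auto
  then show ?thesis using True e l by (simp add: ecthd_def Let_def)
next
  case False
  have l: "l = (y2 - y1)/(x2 - x1)" using s False by (simp add: ecsl_def field_simps)
  show ?thesis using False l by (simp add: ecthd_def Let_def)
qed

lemma sl_ex:
  assumes c1: "y1^2 = x1^3 + b" and c2: "y2^2 = x2^3 + b" and nv: "\<not> (x1 = x2 \<and> y1 = - y2)"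
  shows "\<exists>l. ecsl x1 y1 x2 y2 l"
proof (cases "x1 = x2")
  case True
  then have "(y1 - y2)*(y1 + y2) = 0" using c1 c2 by (simp add: algebra_simps power2_eq_square)
  then have "y1 = y2" using nv True by auto
  have "y1 \<noteq> 0" using nv True \<open>y1 = y2\<close> by auto
  show ?thesis
    by (rule exI[of _ "3*x1^2/(2*y1)"]) (use True \<open>y1 = y2\<close> \<open>y1 \<noteq> 0\<close> in \<open>simp add: ecsl_def field_simps power2_eq_square\<close>)
next
  case False
  define l where "l = (y2 - y1)/(x2 - x1)"
  have a: "y2 = y1 + l*(x2 - x1)" using False by (simp add: l_def field_simps)
  have "(x2 - x1) * (2*l*y1 + l^2*(x2 - x1)) = (x2 - x1) * (x1^2 + x1*x2 + x2^2)"
    using a c1 c2 by Groebner_Basis.algebra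
  then have "2*l*y1 + l^2*(x2 - x1) = x1^2 + x1*x2 + x2^2" using False by simp
  then show ?thesis using a by (auto simp: ecsl_def)
qed

lemma thd_oc:
  assumes c1: "y1^2 = x1^3 + b" and s: "ecsl x1 y1 x2 y2 l"
  shows "on_curve 0 b (ecthd x1 y1 x2 l)"
  using s c1 unfolding ecsl_def ecthd_def oc_Aff by Groebner_Basis.algebra

lemma add_closed:
  assumes "on_curve 0 b P" "on_curve 0 b Q" "b \<noteq> 0"
  shows "on_curve 0 b (ec_add 0 b P Q)"
proof (cases P)
  case Inf then show ?thesis using assms by simp
next
  case (Aff x1 y1) note P = this
  show ?thesis
  proof (cases Q)
    case Inf then show ?thesis using assms P by simp
  next
    case (Aff x2 y2) note Q = this
    show ?thesis
    proof (cases "x1 = x2 \<and> y1 = - y2")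
      case True then show ?thesis using P Q by simp
    next
      case False
      have "\<exists>l. ecsl x1 y1 x2 y2 l" by (rule sl_ex) (use assms P Q False in auto)
      then obtain l where s: "ecsl x1 y1 x2 y2 l" by blast
      then show ?thesis using add_sl[OF _ assms(3) s] thd_oc[OF _ s] assms P Q by simp
    qed
  qed
qed

lemma sl_sym: assumes "ecsl x1 y1 x2 y2 l" shows "ecsl x2 y2 x1 y1 l"
proof -
  have a: "y2 = y1 + l*(x2 - x1)" and r: "2*l*y1 + l^2*(x2 - x1) = x1^2 + x1*x2 + x2^2"
    using assms by (auto simp: ecsl_def)
  have "y1 = y2 + l*(x1 - x2)" using a by (simp add: algebra_simps)
  moreover have "2*l*y2 + l^2*(x1 - x2) = x2^2 + x2*x1 + x1^2" using a r by Groebner_Basis.algebra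
  ultimately show ?thesis by (simp add: ecsl_def)
qed

lemma thd_sym: assumes "ecsl x1 y1 x2 y2 l" shows "ecthd x1 y1 x2 l = ecthd x2 y2 x1 l"
  using assms unfolding ecsl_def ecthd_def by (auto simp: algebra_simps)

lemma add_comm:
  assumes "on_curve 0 b P" "on_curve 0 b Q" "b \<noteq> 0"
  shows "ec_add 0 b P Q = ec_add 0 b Q P"
proof (cases P)
  case Inf then show ?thesis by (cases Q) auto
next
  case (Aff x1 y1) note P = this
  show ?thesis
  proof (cases Q)
    case Inf then show ?thesis using P by simp
  next
    case (Aff x2 y2) note Q = this
    show ?thesis
    proof (cases "x1 = x2 \<and> y1 = - y2")
      case True then show ?thesis using P Q by auto
    next
      case False
      have "\<exists>l. ecsl x1 y1 x2 y2 l" by (rule sl_ex) (use assms P Q False in auto)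
      then obtain l where s: "ecsl x1 y1 x2 y2 l" by blast
      have s': "ecsl x2 y2 x1 y1 l" by (rule sl_sym[OF s])
      show ?thesis using add_sl[OF _ assms(3) s] add_sl[OF _ assms(3) s'] thd_sym[OF s] assms P Q by simp
    qed
  qed
qed

lemma oc_neg[simp]: "on_curve 0 b (ec_neg P) \<longleftrightarrow> on_curve 0 b P"
  by (cases P) auto

lemma neg_neg[simp]: "ec_neg (ec_neg P) = P"
  by (cases P) auto

lemma add_negr[simp]: "ec_add 0 b P (ec_neg P) = Inf"
  by (cases P) auto

lemma neg_thd: "ec_neg (ecthd x1 y1 x2 l) = ecthd x1 (-y1) x2 (-l)"
  by (simp add: ecthd_def algebra_simps)

lemma sl_neg: "ecsl x1 y1 x2 y2 l \<Longrightarrow> ecsl x1 (-y1) x2 (-y2) (-l)"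
  unfolding ecsl_def by (auto simp: algebra_simps)

lemma neg_add:
  assumes "on_curve 0 b P" "on_curve 0 b Q" "b \<noteq> 0"
  shows "ec_neg (ec_add 0 b P Q) = ec_add 0 b (ec_neg P) (ec_neg Q)"
proof (cases P)
  case Inf then show ?thesis by (cases Q) auto
next
  case (Aff x1 y1) note P = this
  show ?thesis
  proof (cases Q)
    case Inf then show ?thesis using P by simp
  next
    case (Aff x2 y2) note Q = this
    show ?thesis
    proof (cases "x1 = x2 \<and> y1 = - y2")
      case True then show ?thesis using P Q by auto
    next
      case False
      have "\<exists>l. ecsl x1 y1 x2 y2 l" by (rule sl_ex) (use assms P Q False in auto)
      then obtain l where s: "ecsl x1 y1 x2 y2 l" by blast
      have s': "ecsl x1 (-y1) x2 (-y2) (-l)" by (rule sl_neg[OF s])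
      have c1: "(-y1)^2 = x1^3 + b" using assms P by simp
      show ?thesis using add_sl[OF _ assms(3) s] add_sl[OF c1 assms(3) s'] neg_thd assms P Q by simp
    qed
  qed
qed

lemma cancel_alg:
  fixes x1 y1 x2 y2 l :: rat
  assumes "ecsl x1 y1 x2 y2 l"
  shows "ecsl (l^2 - x1 - x2) (l*(x1 - (l^2 - x1 - x2)) - y1) x2 (-y2) (-l)"
proof -
  have a: "y2 = y1 + l*(x2 - x1)" and r: "2*l*y1 + l^2*(x2 - x1) = x1^2 + x1*x2 + x2^2"
    using assms by (auto simp: ecsl_def)
  have "- y2 = (l*(x1 - (l^2 - x1 - x2)) - y1) + (-l)*(x2 - (l^2 - x1 - x2))"
    using a by (simp add: algebra_simps)
  moreover have "2*(-l)*(l*(x1 - (l^2 - x1 - x2)) - y1) + (-l)^2*(x2 - (l^2 - x1 - x2))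
     = (l^2 - x1 - x2)^2 + (l^2 - x1 - x2)*x2 + x2^2"
    using r by Groebner_Basis.algebra
  ultimately show ?thesis by (simp add: ecsl_def)
qed

lemma cancel:
  assumes "on_curve 0 b P" "on_curve 0 b Q" "b \<noteq> 0"
  shows "ec_add 0 b (ec_add 0 b P Q) (ec_neg Q) = P"
proof (cases P)
  case Inf then show ?thesis by simp
next
  case (Aff x1 y1) note P = this
  show ?thesis
  proof (cases Q)
    case Inf then show ?thesis using P by simp
  next
    case (Aff x2 y2) note Q = this
    show ?thesis
    proof (cases "x1 = x2 \<and> y1 = - y2")
      case True then show ?thesis using P Q by auto
    next
      case False
      have "\<exists>l. ecsl x1 y1 x2 y2 l" by (rule sl_ex) (use assms P Q False in auto)
      then obtain l where s: "ecsl x1 y1 x2 y2 l" by blast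
      have S: "ec_add 0 b P Q = ecthd x1 y1 x2 l" using add_sl[OF _ assms(3) s] assms P Q by simp
      have cS: "on_curve 0 b (ecthd x1 y1 x2 l)" using thd_oc[OF _ s] assms P by simp
      have s2: "ecsl (l^2 - x1 - x2) (l*(x1 - (l^2 - x1 - x2)) - y1) x2 (-y2) (-l)" by (rule cancel_alg[OF s])
      have "ec_add 0 b (ecthd x1 y1 x2 l) (ec_neg Q) = ecthd (l^2 - x1 - x2) (l*(x1 - (l^2 - x1 - x2)) - y1) x2 (-l)"
        using add_sl[OF _ assms(3) s2] cS Q by (simp add: ecthd_def)
      also have "\<dots> = P" using P by (simp add: ecthd_def algebra_simps)
      finally show ?thesis using S by simp
    qed
  qed
qed




lemma W_s:
  fixes x1 y1 x2 x3 l1 l2 l3 l4 :: rat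
  assumes R1: "2*l1*y1 + l1^2*(x2 - x1) = x1^2 + x1*x2 + x2^2"
  and R3: "2*l3*(y1 + l1*(x2 - x1)) + l3^2*(x3 - x2) = x2^2 + x2*x3 + x3^2"
  and H2: "((y1 + l1*(x2 - x1)) + l3*(x3 - x2)) - (l1*(x1 - (l1^2 - x1 - x2)) - y1) = l2*(x3 - (l1^2 - x1 - x2))" and n2: "x3 \<noteq> (l1^2 - x1 - x2)"
  and H4: "(l3*(x2 - (l3^2 - x2 - x3)) - (y1 + l1*(x2 - x1))) - y1 = l4*((l3^2 - x2 - x3) - x1)" and n4: "(l3^2 - x2 - x3) \<noteq> x1"
  shows "l1 + l2 = l3 + l4"
  using assms by Groebner_Basis.algebra

lemma W_g:
  fixes x1 y1 x2 x3 l1 l2 l3 l4 :: rat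
  assumes R1: "2*l1*y1 + l1^2*(x2 - x1) = x1^2 + x1*x2 + x2^2"
  and R3: "2*l3*(y1 + l1*(x2 - x1)) + l3^2*(x3 - x2) = x2^2 + x2*x3 + x3^2"
  and H2: "((y1 + l1*(x2 - x1)) + l3*(x3 - x2)) - (l1*(x1 - (l1^2 - x1 - x2)) - y1) = l2*(x3 - (l1^2 - x1 - x2))" and n2: "x3 \<noteq> (l1^2 - x1 - x2)"
  and H4: "(l3*(x2 - (l3^2 - x2 - x3)) - (y1 + l1*(x2 - x1))) - y1 = l4*((l3^2 - x2 - x3) - x1)" and n4: "(l3^2 - x2 - x3) \<noteq> x1"
  shows "l1*l2 + (l1^2 - x1 - x2) = l3*l4 + (l3^2 - x2 - x3)"
  using assms by Groebner_Basis.algebra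

lemma W_y:
  fixes x1 y1 x2 x3 l1 l2 l3 l4 :: rat
  assumes R1: "2*l1*y1 + l1^2*(x2 - x1) = x1^2 + x1*x2 + x2^2"
  and R3: "2*l3*(y1 + l1*(x2 - x1)) + l3^2*(x3 - x2) = x2^2 + x2*x3 + x3^2"
  and H2: "((y1 + l1*(x2 - x1)) + l3*(x3 - x2)) - (l1*(x1 - (l1^2 - x1 - x2)) - y1) = l2*(x3 - (l1^2 - x1 - x2))" and n2: "x3 \<noteq> (l1^2 - x1 - x2)"
  and H4: "(l3*(x2 - (l3^2 - x2 - x3)) - (y1 + l1*(x2 - x1))) - y1 = l4*((l3^2 - x2 - x3) - x1)" and n4: "(l3^2 - x2 - x3) \<noteq> x1"
  shows "l2*((l1^2 - x1 - x2) - (l2^2 - (l1^2 - x1 - x2) - x3)) - (l1*(x1 - (l1^2 - x1 - x2)) - y1) = l4*(x1 - (l4^2 - x1 - (l3^2 - x2 - x3))) - y1"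
  using assms by Groebner_Basis.algebra

lemma W_x:
  fixes x1 y1 x2 x3 l1 l2 l3 l4 :: rat
  assumes R1: "2*l1*y1 + l1^2*(x2 - x1) = x1^2 + x1*x2 + x2^2"
  and R3: "2*l3*(y1 + l1*(x2 - x1)) + l3^2*(x3 - x2) = x2^2 + x2*x3 + x3^2"
  and H2: "((y1 + l1*(x2 - x1)) + l3*(x3 - x2)) - (l1*(x1 - (l1^2 - x1 - x2)) - y1) = l2*(x3 - (l1^2 - x1 - x2))" and n2: "x3 \<noteq> (l1^2 - x1 - x2)"
  and H4: "(l3*(x2 - (l3^2 - x2 - x3)) - (y1 + l1*(x2 - x1))) - y1 = l4*((l3^2 - x2 - x3) - x1)" and n4: "(l3^2 - x2 - x3) \<noteq> x1"
  shows "l2^2 - (l1^2 - x1 - x2) - x3 = l4^2 - x1 - (l3^2 - x2 - x3)"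
proof -
  have a: "l1 + l2 = l3 + l4" by (rule W_s[OF assms])
  have b: "l1*l2 + (l1^2 - x1 - x2) = l3*l4 + (l3^2 - x2 - x3)" by (rule W_g[OF assms])
  show ?thesis using a b by Groebner_Basis.algebra
qed

lemma Fc_x:
  fixes x1 y1 x2 l1 l2 l3 l4 :: rat
  assumes bnz: "y1^2 \<noteq> x1^3" and R1: "2*l1*y1 + l1^2*(x2 - x1) = x1^2 + x1*x2 + x2^2"
  and R2: "2*l2*(l1*(x1 - (l1^2 - x1 - x2)) - y1) = 3*(l1^2 - x1 - x2)^2"
  and H3: "(l1*(x1 - (l1^2 - x1 - x2)) - y1) - (y1 + l1*(x2 - x1)) = l3*((l1^2 - x1 - x2) - x2)" and R3: "2*l3*(y1 + l1*(x2 - x1)) + l3^2*((l1^2 - x1 - x2) - x2) = x2^2 + x2*(l1^2 - x1 - x2) + (l1^2 - x1 - x2)^2"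
  and H4: "(l3*(x2 - (l3^2 - x2 - (l1^2 - x1 - x2))) - (y1 + l1*(x2 - x1))) - y1 = l4*((l3^2 - x2 - (l1^2 - x1 - x2)) - x1)" and n4: "(l3^2 - x2 - (l1^2 - x1 - x2)) \<noteq> x1"
  shows "(l2^2 - (l1^2 - x1 - x2) - (l1^2 - x1 - x2)) = (l4^2 - x1 - (l3^2 - x2 - (l1^2 - x1 - x2)))"
  using assms by Groebner_Basis.algebra

lemma Fc_y:
  fixes x1 y1 x2 l1 l2 l3 l4 :: rat
  assumes bnz: "y1^2 \<noteq> x1^3" and R1: "2*l1*y1 + l1^2*(x2 - x1) = x1^2 + x1*x2 + x2^2"
  and R2: "2*l2*(l1*(x1 - (l1^2 - x1 - x2)) - y1) = 3*(l1^2 - x1 - x2)^2"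
  and H3: "(l1*(x1 - (l1^2 - x1 - x2)) - y1) - (y1 + l1*(x2 - x1)) = l3*((l1^2 - x1 - x2) - x2)" and R3: "2*l3*(y1 + l1*(x2 - x1)) + l3^2*((l1^2 - x1 - x2) - x2) = x2^2 + x2*(l1^2 - x1 - x2) + (l1^2 - x1 - x2)^2"
  and H4: "(l3*(x2 - (l3^2 - x2 - (l1^2 - x1 - x2))) - (y1 + l1*(x2 - x1))) - y1 = l4*((l3^2 - x2 - (l1^2 - x1 - x2)) - x1)" and n4: "(l3^2 - x2 - (l1^2 - x1 - x2)) \<noteq> x1"
  shows "l2*((l1^2 - x1 - x2) - (l2^2 - (l1^2 - x1 - x2) - (l1^2 - x1 - x2))) - (l1*(x1 - (l1^2 - x1 - x2)) - y1) = l4*(x1 - (l4^2 - x1 - (l3^2 - x2 - (l1^2 - x1 - x2)))) - y1"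
  using assms by Groebner_Basis.algebra

lemma Ft_x:
  fixes x1 y1 x2 l1 l2 l3 l4 :: rat
  assumes bnz: "y1^2 \<noteq> x1^3" and R1: "2*l1*y1 + l1^2*(x2 - x1) = x1^2 + x1*x2 + x2^2"
  and R2: "2*l2*(l1*(x1 - (l1^2 - x1 - x2)) - y1) = 3*(l1^2 - x1 - x2)^2"
  and H3: "(l1*(x1 - (l1^2 - x1 - x2)) - y1) - (y1 + l1*(x2 - x1)) = l3*((l1^2 - x1 - x2) - x2)" and R3: "2*l3*(y1 + l1*(x2 - x1)) + l3^2*((l1^2 - x1 - x2) - x2) = x2^2 + x2*(l1^2 - x1 - x2) + (l1^2 - x1 - x2)^2"
  and T1: "(l3^2 - x2 - (l1^2 - x1 - x2)) = x1" and T2: "(l3*(x2 - (l3^2 - x2 - (l1^2 - x1 - x2))) - (y1 + l1*(x2 - x1))) = y1" and R4: "2*l4*y1 = 3*x1^2"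
  shows "(l2^2 - (l1^2 - x1 - x2) - (l1^2 - x1 - x2)) = (l4^2 - x1 - (l3^2 - x2 - (l1^2 - x1 - x2)))"
  using assms by Groebner_Basis.algebra

lemma Ft_y:
  fixes x1 y1 x2 l1 l2 l3 l4 :: rat
  assumes bnz: "y1^2 \<noteq> x1^3" and R1: "2*l1*y1 + l1^2*(x2 - x1) = x1^2 + x1*x2 + x2^2"
  and R2: "2*l2*(l1*(x1 - (l1^2 - x1 - x2)) - y1) = 3*(l1^2 - x1 - x2)^2"
  and H3: "(l1*(x1 - (l1^2 - x1 - x2)) - y1) - (y1 + l1*(x2 - x1)) = l3*((l1^2 - x1 - x2) - x2)" and R3: "2*l3*(y1 + l1*(x2 - x1)) + l3^2*((l1^2 - x1 - x2) - x2) = x2^2 + x2*(l1^2 - x1 - x2) + (l1^2 - x1 - x2)^2"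
  and T1: "(l3^2 - x2 - (l1^2 - x1 - x2)) = x1" and T2: "(l3*(x2 - (l3^2 - x2 - (l1^2 - x1 - x2))) - (y1 + l1*(x2 - x1))) = y1" and R4: "2*l4*y1 = 3*x1^2"
  shows "l2*((l1^2 - x1 - x2) - (l2^2 - (l1^2 - x1 - x2) - (l1^2 - x1 - x2))) - (l1*(x1 - (l1^2 - x1 - x2)) - y1) = l4*(x1 - (l4^2 - x1 - (l3^2 - x2 - (l1^2 - x1 - x2)))) - y1"
  using assms by Groebner_Basis.algebra

lemma same_x:
  fixes y1 y2 x b :: rat
  assumes "y1^2 = x^3 + b" "y2^2 = x^3 + b" "\<not> (y1 = - y2)" shows "y1 = y2"
proof -
  have "(y1 - y2)*(y1 + y2) = 0" using assms by (simp add: algebra_simps power2_eq_square)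
  then show ?thesis using assms(3) by (auto simp: add_eq_0_iff2)
qed

lemma assoc_Utan:
  assumes bnz: "b \<noteq> 0" and c1: "y1^2 = x1^3 + b" and c2: "y2^2 = x2^3 + b"
    and s1: "ecsl x1 y1 x2 y2 l1"
    and S: "ec_add 0 b (Aff x1 y1) (Aff x2 y2) = Aff xS yS"
    and nvU: "yS \<noteq> 0"
  shows "ec_add 0 b (ec_add 0 b (Aff x1 y1) (Aff x2 y2)) (Aff xS yS)
       = ec_add 0 b (Aff x1 y1) (ec_add 0 b (Aff x2 y2) (Aff xS yS))"
proof -
  define P Q Sp where "P = Aff x1 y1" and "Q = Aff x2 y2" and "Sp = Aff xS yS"
  have oP: "on_curve 0 b P" and oQ: "on_curve 0 b Q" using c1 c2 P_def Q_def by auto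
  have Sthd: "ecthd x1 y1 x2 l1 = Aff xS yS" using add_sl[OF c1 bnz s1] S by simp
  have eS: "xS = l1^2 - x1 - x2" "yS = l1*(x1 - (l1^2 - x1 - x2)) - y1" using Sthd by (auto simp: ecthd_def)
  have cS: "yS^2 = xS^3 + b" using thd_oc[OF c1 s1] Sthd by simp
  have oS: "on_curve 0 b Sp" using cS Sp_def by simp
  have e2: "y2 = y1 + l1*(x2 - x1)" using s1 by (simp add: ecsl_def)
  have R1: "2*l1*y1 + l1^2*(x2 - x1) = x1^2 + x1*x2 + x2^2" using s1 by (simp add: ecsl_def)
  have bnz': "y1^2 \<noteq> x1^3" using c1 bnz by simp
  have "\<exists>l. ecsl xS yS xS yS l" by (rule sl_ex[OF cS cS]) (use nvU in auto)
  then obtain l2 where s2: "ecsl xS yS xS yS l2" by blast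
  have R2: "2*l2*yS = 3*xS^2" using s2 by (simp add: ecsl_def power2_eq_square)
  have LHS: "ec_add 0 b (Aff xS yS) (Aff xS yS) = ecthd xS yS xS l2" by (rule add_sl[OF cS bnz s2])
  show ?thesis
  proof (cases "x2 = xS \<and> y2 = - yS")
    case True
    then have v: "ec_add 0 b (Aff x2 y2) (Aff xS yS) = Inf" by simp
    have nQ: "ec_neg Q = Sp" using True Q_def Sp_def by simp
    have cc0: "ec_add 0 b (ec_add 0 b P Q) (ec_neg Q) = P" by (rule cancel[OF oP oQ bnz])
    have PQ': "ec_add 0 b P Q = Sp" using S unfolding P_def Q_def Sp_def .
    have SS: "ec_add 0 b Sp Sp = P" using cc0 unfolding PQ' nQ .
    have "ec_add 0 b (ec_add 0 b (Aff x1 y1) (Aff x2 y2)) (Aff xS yS) = P"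
      using SS unfolding Sp_def by (simp only: S)
    moreover have "ec_add 0 b (Aff x1 y1) (ec_add 0 b (Aff x2 y2) (Aff xS yS)) = P"
      unfolding v P_def by simp
    ultimately show ?thesis by simp
  next
    case False
    have "\<exists>l. ecsl x2 y2 xS yS l" by (rule sl_ex[OF c2 cS]) (use False in auto)
    then obtain l3 where s3: "ecsl x2 y2 xS yS l3" by blast
    define xT yT where "xT = l3^2 - x2 - xS" and "yT = l3*(x2 - xT) - y2"
    have T: "ec_add 0 b (Aff x2 y2) (Aff xS yS) = Aff xT yT"
      using add_sl[OF c2 bnz s3] by (simp add: ecthd_def xT_def yT_def)
    have cT: "yT^2 = xT^3 + b" using thd_oc[OF c2 s3] by (simp add: ecthd_def xT_def yT_def)
    have H3: "yS - y2 = l3*(xS - x2)" and R3: "2*l3*y2 + l3^2*(xS - x2) = x2^2 + x2*xS + xS^2"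
      using s3 by (auto simp: ecsl_def)
    show ?thesis
    proof (cases "x1 = xT \<and> y1 = - yT")
      case True
      have PT: "P = ec_neg (ec_add 0 b Q Sp)" using True T P_def Q_def Sp_def by simp
      have "Sp = ec_add 0 b P Q" using S P_def Q_def Sp_def by simp
      also have "\<dots> = ec_add 0 b (ec_add 0 b (ec_neg Sp) (ec_neg Q)) (ec_neg (ec_neg Q))"
      proof -
        have "ec_add 0 b (ec_neg Q) (ec_neg Sp) = ec_add 0 b (ec_neg Sp) (ec_neg Q)"
          by (rule add_comm) (use oQ oS bnz in auto)
        then show ?thesis using PT neg_add[OF oQ oS bnz] by simp
      qed
      also have "\<dots> = ec_neg Sp" by (rule cancel) (use oQ oS bnz in auto)
      finally have "Sp = ec_neg Sp" .
      then have "yS = 0" using Sp_def by simp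
      then show ?thesis using nvU by simp
    next
      case False
      have "\<exists>l. ecsl x1 y1 xT yT l" by (rule sl_ex[OF c1 cT]) (use False in auto)
      then obtain l4 where s4: "ecsl x1 y1 xT yT l4" by blast
      have RHS: "ec_add 0 b (Aff x1 y1) (Aff xT yT) = ecthd x1 y1 xT l4" by (rule add_sl[OF c1 bnz s4])
      have "ecthd xS yS xS l2 = ecthd x1 y1 xT l4"
      proof (cases "x1 = xT")
        case True
        have y1T: "y1 = yT" by (rule same_x[of y1 x1 b yT]) (use c1 cT True False in auto)
        have R4: "2*l4*y1 = 3*x1^2" using s4 True by (simp add: ecsl_def power2_eq_square)
        have T1: "l3^2 - x2 - (l1^2 - x1 - x2) = x1" using True by (simp add: xT_def eS)
        have T2: "l3*(x2 - (l3^2 - x2 - (l1^2 - x1 - x2))) - (y1 + l1*(x2 - x1)) = y1"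
          using y1T by (simp add: yT_def xT_def eS e2)
        have hx: "(l2^2 - (l1^2 - x1 - x2) - (l1^2 - x1 - x2)) = (l4^2 - x1 - (l3^2 - x2 - (l1^2 - x1 - x2)))"
          by (rule Ft_x[OF bnz' R1 _ _ _ T1 T2 R4]) (use R2 H3 R3 in \<open>simp_all add: eS e2\<close>)
        have hy: "l2*((l1^2 - x1 - x2) - (l2^2 - (l1^2 - x1 - x2) - (l1^2 - x1 - x2))) - (l1*(x1 - (l1^2 - x1 - x2)) - y1) = l4*(x1 - (l4^2 - x1 - (l3^2 - x2 - (l1^2 - x1 - x2)))) - y1"
          by (rule Ft_y[OF bnz' R1 _ _ _ T1 T2 R4]) (use R2 H3 R3 in \<open>simp_all add: eS e2\<close>)
        show ?thesis using hx hy by (simp add: ecthd_def eS xT_def)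
      next
        case False
        have H4: "yT - y1 = l4*(xT - x1)" using s4 by (simp add: ecsl_def)
        have n4: "l3^2 - x2 - (l1^2 - x1 - x2) \<noteq> x1" using False by (simp add: xT_def eS)
        have H4': "l3*(x2 - (l3^2 - x2 - (l1^2 - x1 - x2))) - (y1 + l1*(x2 - x1)) - y1 = l4*((l3^2 - x2 - (l1^2 - x1 - x2)) - x1)"
          using H4 by (simp add: yT_def xT_def eS e2)
        have hx: "(l2^2 - (l1^2 - x1 - x2) - (l1^2 - x1 - x2)) = (l4^2 - x1 - (l3^2 - x2 - (l1^2 - x1 - x2)))"
          by (rule Fc_x[OF bnz' R1 _ _ _ H4' n4]) (use R2 H3 R3 in \<open>simp_all add: eS e2\<close>)
        have hy: "l2*((l1^2 - x1 - x2) - (l2^2 - (l1^2 - x1 - x2) - (l1^2 - x1 - x2))) - (l1*(x1 - (l1^2 - x1 - x2)) - y1) = l4*(x1 - (l4^2 - x1 - (l3^2 - x2 - (l1^2 - x1 - x2)))) - y1"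
          by (rule Fc_y[OF bnz' R1 _ _ _ H4' n4]) (use R2 H3 R3 in \<open>simp_all add: eS e2\<close>)
        show ?thesis using hx hy by (simp add: ecthd_def eS xT_def)
      qed
      then show ?thesis using S LHS T RHS by simp
    qed
  qed
qed

lemma assoc_gen:
  assumes bnz: "b \<noteq> 0" and c1: "y1^2 = x1^3 + b" and c2: "y2^2 = x2^3 + b" and c3: "y3^2 = x3^3 + b"
    and s1: "ecsl x1 y1 x2 y2 l1" and s3: "ecsl x2 y2 x3 y3 l3"
    and S: "ecthd x1 y1 x2 l1 = Aff xS yS" and T: "ecthd x2 y2 x3 l3 = Aff xT yT"
    and s2: "ecsl xS yS x3 y3 l2" and n2: "x3 \<noteq> xS"
    and s4: "ecsl x1 y1 xT yT l4" and n4: "xT \<noteq> x1"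
  shows "ecthd xS yS x3 l2 = ecthd x1 y1 xT l4"
proof -
  have eS: "xS = l1^2 - x1 - x2" "yS = l1*(x1 - (l1^2 - x1 - x2)) - y1" using S by (auto simp: ecthd_def)
  have eT: "xT = l3^2 - x2 - x3" "yT = l3*(x2 - (l3^2 - x2 - x3)) - y2" using T by (auto simp: ecthd_def)
  have e2: "y2 = y1 + l1*(x2 - x1)" and R1: "2*l1*y1 + l1^2*(x2 - x1) = x1^2 + x1*x2 + x2^2"
    using s1 by (auto simp: ecsl_def)
  have e3: "y3 = y2 + l3*(x3 - x2)" and R3: "2*l3*y2 + l3^2*(x3 - x2) = x2^2 + x2*x3 + x3^2"
    using s3 by (auto simp: ecsl_def)
  have H2: "y3 = yS + l2*(x3 - xS)" using s2 by (simp add: ecsl_def)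
  have H4: "yT = y1 + l4*(xT - x1)" using s4 by (simp add: ecsl_def)
  have R3': "2*l3*(y1 + l1*(x2 - x1)) + l3^2*(x3 - x2) = x2^2 + x2*x3 + x3^2" using R3 e2 by simp
  have H2': "((y1 + l1*(x2 - x1)) + l3*(x3 - x2)) - (l1*(x1 - (l1^2 - x1 - x2)) - y1) = l2*(x3 - (l1^2 - x1 - x2))"
    using H2 e2 e3 eS by simp
  have n2': "x3 \<noteq> (l1^2 - x1 - x2)" using n2 eS by simp
  have H4': "(l3*(x2 - (l3^2 - x2 - x3)) - (y1 + l1*(x2 - x1))) - y1 = l4*((l3^2 - x2 - x3) - x1)"
    using H4 eT e2 by simp
  have n4': "(l3^2 - x2 - x3) \<noteq> x1" using n4 eT by simp
  have hx: "l2^2 - (l1^2 - x1 - x2) - x3 = l4^2 - x1 - (l3^2 - x2 - x3)"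
    by (rule W_x[OF R1 R3' H2' n2' H4' n4'])
  have hy: "l2*((l1^2 - x1 - x2) - (l2^2 - (l1^2 - x1 - x2) - x3)) - (l1*(x1 - (l1^2 - x1 - x2)) - y1) = l4*(x1 - (l4^2 - x1 - (l3^2 - x2 - x3))) - y1"
    by (rule W_y[OF R1 R3' H2' n2' H4' n4'])
  show ?thesis using hx hy eS eT by (simp add: ecthd_def)
qed

lemma add_Inf_left[simp]: "ec_add 0 b Inf P = P" by simp
lemma add_Inf_right[simp]: "ec_add 0 b P Inf = P" by (cases P) auto

lemma ec_assoc:
  assumes oP: "on_curve 0 b P" and oQ: "on_curve 0 b Q" and oR: "on_curve 0 b R" and bnz: "b \<noteq> 0"
  shows "ec_add 0 b (ec_add 0 b P Q) R = ec_add 0 b P (ec_add 0 b Q R)"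
proof -
  have cl: "\<And>A B. on_curve 0 b A \<Longrightarrow> on_curve 0 b B \<Longrightarrow> on_curve 0 b (ec_add 0 b A B)"
    using add_closed bnz by blast
  have cm: "\<And>A B. on_curve 0 b A \<Longrightarrow> on_curve 0 b B \<Longrightarrow> ec_add 0 b A B = ec_add 0 b B A"
    using add_comm bnz by blast
  have cc: "\<And>A B. on_curve 0 b A \<Longrightarrow> on_curve 0 b B \<Longrightarrow> ec_add 0 b (ec_add 0 b A B) (ec_neg B) = A"
    using cancel bnz by blast
  have na: "\<And>A B. on_curve 0 b A \<Longrightarrow> on_curve 0 b B \<Longrightarrow> ec_neg (ec_add 0 b A B) = ec_add 0 b (ec_neg A) (ec_neg B)"
    using neg_add bnz by blast
  show ?thesis
  proof (cases "P = Inf \<or> Q = Inf \<or> R = Inf")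
    case True then show ?thesis by auto
  next
    case False
    then obtain x1 y1 x2 y2 x3 y3 where P: "P = Aff x1 y1" and Q: "Q = Aff x2 y2" and R: "R = Aff x3 y3"
      by (cases P; cases Q; cases R) auto
    have c1: "y1^2 = x1^3 + b" and c2: "y2^2 = x2^3 + b" and c3: "y3^2 = x3^3 + b"
      using oP oQ oR P Q R by auto
    show ?thesis
    proof (cases "Q = ec_neg P")
      case True
      have "ec_add 0 b P (ec_add 0 b Q R) = ec_add 0 b (ec_add 0 b Q R) P"
        using cm cl oP oQ oR by blast
      also have "\<dots> = ec_add 0 b (ec_add 0 b R (ec_neg P)) (ec_neg (ec_neg P))"
        using True cm oP oR by simp
      also have "\<dots> = R" using cc[of R "ec_neg P"] oR oP by simp
      finally show ?thesis using True by simp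
    next
      case nPQ: False
      show ?thesis
      proof (cases "R = ec_neg Q")
        case True
        then show ?thesis using cc oP oQ by simp
      next
        case nQR: False
        show ?thesis
        proof (cases "R = ec_neg (ec_add 0 b P Q)")
          case True
          have "ec_add 0 b Q R = ec_add 0 b Q (ec_add 0 b (ec_neg P) (ec_neg Q))"
            using True na oP oQ by simp
          also have "\<dots> = ec_add 0 b (ec_add 0 b (ec_neg P) (ec_neg Q)) (ec_neg (ec_neg Q))"
            using cm cl oP oQ by simp
          also have "\<dots> = ec_neg P" using cc[of "ec_neg P" "ec_neg Q"] oP oQ by simp
          finally show ?thesis using True by simp
        next
          case nSR: False
          show ?thesis
          proof (cases "P = ec_neg (ec_add 0 b Q R)")
            case True
            have "ec_add 0 b P Q = ec_add 0 b (ec_add 0 b (ec_neg Q) (ec_neg R)) Q"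
              using True na oQ oR by simp
            also have "\<dots> = ec_add 0 b (ec_add 0 b (ec_neg R) (ec_neg Q)) (ec_neg (ec_neg Q))"
              using cm oQ oR by simp
            also have "\<dots> = ec_neg R" using cc[of "ec_neg R" "ec_neg Q"] oQ oR by simp
            finally have "ec_add 0 b (ec_add 0 b P Q) R = Inf" using cm oR by simp
            moreover have "ec_add 0 b P (ec_add 0 b Q R) = Inf"
              using True cm cl oQ oR by (metis add_negr oc_neg)
            ultimately show ?thesis by simp
          next
            case nPT: False
            have nv1: "\<not> (x1 = x2 \<and> y1 = - y2)" using nPQ P Q by auto
            have nv3: "\<not> (x2 = x3 \<and> y2 = - y3)" using nQR Q R by auto
            have "\<exists>l. ecsl x1 y1 x2 y2 l" by (rule sl_ex[OF c1 c2 nv1])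
            then obtain l1 where s1: "ecsl x1 y1 x2 y2 l1" by blast
            have "\<exists>l. ecsl x2 y2 x3 y3 l" by (rule sl_ex[OF c2 c3 nv3])
            then obtain l3 where s3: "ecsl x2 y2 x3 y3 l3" by blast
            obtain xS yS where S: "ecthd x1 y1 x2 l1 = Aff xS yS" by (simp add: ecthd_def)
            obtain xT yT where T: "ecthd x2 y2 x3 l3 = Aff xT yT" by (simp add: ecthd_def)
            have PQ: "ec_add 0 b P Q = Aff xS yS" using add_sl[OF c1 bnz s1] S P Q by simp
            have QR: "ec_add 0 b Q R = Aff xT yT" using add_sl[OF c2 bnz s3] T Q R by simp
            have cS: "yS^2 = xS^3 + b" using thd_oc[OF c1 s1] S by simp
            have cT: "yT^2 = xT^3 + b" using thd_oc[OF c2 s3] T by simp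
            have nvU: "\<not> (xS = x3 \<and> yS = - y3)" using nSR PQ R by auto
            have nvV: "\<not> (x1 = xT \<and> y1 = - yT)" using nPT QR P by auto
            show ?thesis
            proof (cases "xS = x3")
              case True
              have y3S: "yS = y3" by (rule same_x[of yS xS b y3]) (use cS c3 True nvU in auto)
              have ySnz: "yS \<noteq> 0" using nvU True y3S by auto
              have "ec_add 0 b (ec_add 0 b (Aff x1 y1) (Aff x2 y2)) (Aff xS yS)
                  = ec_add 0 b (Aff x1 y1) (ec_add 0 b (Aff x2 y2) (Aff xS yS))"
                by (rule assoc_Utan[OF bnz c1 c2 s1 _ ySnz]) (use PQ P Q in simp)
              then show ?thesis using P Q R True y3S by simp
            next
              case nU: False
              show ?thesis
              proof (cases "x1 = xT")
                case True
                have y1T: "yT = y1" by (rule same_x[of yT xT b y1]) (use cT c1 True nvV in auto)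
                have yTnz: "yT \<noteq> 0" using nvV True y1T by auto
                have "\<exists>l. ecsl x3 y3 x2 y2 l" by (rule sl_ex[OF c3 c2]) (use nv3 in auto)
                then obtain l5 where s5: "ecsl x3 y3 x2 y2 l5" by blast
                have RQ0: "ec_add 0 b R Q = ec_add 0 b Q R" using cm oQ oR by blast
                have RQ: "ec_add 0 b (Aff x3 y3) (Aff x2 y2) = Aff xT yT"
                  using RQ0 QR unfolding Q R by (simp only:)
                have m: "ec_add 0 b (ec_add 0 b (Aff x3 y3) (Aff x2 y2)) (Aff xT yT)
                  = ec_add 0 b (Aff x3 y3) (ec_add 0 b (Aff x2 y2) (Aff xT yT))"
                  by (rule assoc_Utan[OF bnz c3 c2 s5 RQ yTnz])
                have PT: "P = Aff xT yT" using P True y1T by simp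
                have "ec_add 0 b (ec_add 0 b P Q) R = ec_add 0 b R (ec_add 0 b Q P)"
                  using cm cl oP oQ oR by metis
                also have "\<dots> = ec_add 0 b (ec_add 0 b R Q) P" using m PT Q R RQ by simp
                also have "\<dots> = ec_add 0 b P (ec_add 0 b Q R)"
                  using cm cl oP oQ oR by metis
                finally show ?thesis .
              next
                case nV: False
                have "\<exists>l. ecsl xS yS x3 y3 l" by (rule sl_ex[OF cS c3 nvU])
                then obtain l2 where s2: "ecsl xS yS x3 y3 l2" by blast
                have "\<exists>l. ecsl x1 y1 xT yT l" by (rule sl_ex[OF c1 cT nvV])
                then obtain l4 where s4: "ecsl x1 y1 xT yT l4" by blast
                have n2: "x3 \<noteq> xS" using nU by auto
                have n4: "xT \<noteq> x1" using nV by auto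
                have "ecthd xS yS x3 l2 = ecthd x1 y1 xT l4"
                  by (rule assoc_gen[OF bnz c1 c2 c3 s1 s3 S T s2 n2 s4 n4])
                then show ?thesis using add_sl[OF cS bnz s2] add_sl[OF c1 bnz s4] PQ QR P R by simp
              qed
            qed
          qed
        qed
      qed
    qed
  qed
qed




lemma nmul_oc: "on_curve 0 b P \<Longrightarrow> b \<noteq> 0 \<Longrightarrow> on_curve 0 b (ec_nmul 0 b n P)"
  by (induction n) (auto intro: add_closed)

lemma nmul_add:
  assumes oP: "on_curve 0 b P" and bnz: "b \<noteq> 0"
  shows "ec_nmul 0 b (m + n) P = ec_add 0 b (ec_nmul 0 b m P) (ec_nmul 0 b n P)"
proof (induction m)
  case 0 then show ?case by simp
next
  case (Suc m)
  have "ec_nmul 0 b (Suc m + n) P = ec_add 0 b P (ec_nmul 0 b (m + n) P)" by simp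
  also have "\<dots> = ec_add 0 b P (ec_add 0 b (ec_nmul 0 b m P) (ec_nmul 0 b n P))" using Suc by simp
  also have "\<dots> = ec_add 0 b (ec_add 0 b P (ec_nmul 0 b m P)) (ec_nmul 0 b n P)"
    using ec_assoc[OF oP nmul_oc[OF oP bnz] nmul_oc[OF oP bnz] bnz] by simp
  finally show ?case by simp
qed

lemma smul_oc: "on_curve 0 b P \<Longrightarrow> b \<noteq> 0 \<Longrightarrow> on_curve 0 b (ec_smul 0 b n P)"
  by (simp add: ec_smul_def nmul_oc)

lemma smul_double:
  assumes oP: "on_curve 0 b P" and bnz: "b \<noteq> 0"
  shows "ec_smul 0 b (2*m) P = ec_add 0 b (ec_smul 0 b m P) (ec_smul 0 b m P)"
proof (cases "m \<ge> 0")
  case True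
  have "nat (2*m) = nat m + nat m" using True by simp
  then show ?thesis using True nmul_add[OF oP bnz] by (simp add: ec_smul_def)
next
  case False
  have "nat (- (2*m)) = nat (-m) + nat (-m)" using False by simp
  then show ?thesis using False nmul_add[OF oP bnz] neg_add[OF nmul_oc[OF oP bnz] nmul_oc[OF oP bnz] bnz]
    by (simp add: ec_smul_def)
qed

definition eclin :: "rat \<Rightarrow> int list \<Rightarrow> ec_pt list \<Rightarrow> ec_pt" where
  "eclin b ns Ps = ec_sum 0 b (map2 (ec_smul 0 b) ns Ps)"

lemma lin_Cons: "eclin b (n#ns) (P#Ps) = ec_add 0 b (ec_smul 0 b n P) (eclin b ns Ps)"
  by (simp add: eclin_def ec_sum_def)

lemma lin_Nil1: "eclin b [] Ps = Inf" by (simp add: eclin_def ec_sum_def)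
lemma lin_Nil2: "eclin b ns [] = Inf" by (simp add: eclin_def ec_sum_def)

lemma lin_oc: "\<forall>P\<in>set Ps. on_curve 0 b P \<Longrightarrow> b \<noteq> 0 \<Longrightarrow> on_curve 0 b (eclin b ns Ps)"
proof (induction ns arbitrary: Ps)
  case Nil then show ?case by (simp add: lin_Nil1)
next
  case (Cons n ns)
  then show ?case by (cases Ps) (auto simp: lin_Cons lin_Nil2 intro!: add_closed smul_oc)
qed

lemma swap4:
  assumes oa: "on_curve 0 b a" and os: "on_curve 0 b s" and bnz: "b \<noteq> 0"
  shows "ec_add 0 b (ec_add 0 b a a) (ec_add 0 b s s) = ec_add 0 b (ec_add 0 b a s) (ec_add 0 b a s)"
proof -
  have cl: "\<And>A B. on_curve 0 b A \<Longrightarrow> on_curve 0 b B \<Longrightarrow> on_curve 0 b (ec_add 0 b A B)"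
    using add_closed bnz by blast
  have "ec_add 0 b (ec_add 0 b a s) (ec_add 0 b a s) = ec_add 0 b a (ec_add 0 b s (ec_add 0 b a s))"
    using ec_assoc[OF oa os cl[OF oa os] bnz] by simp
  also have "ec_add 0 b s (ec_add 0 b a s) = ec_add 0 b (ec_add 0 b s a) s"
    using ec_assoc[OF os oa os bnz] by simp
  also have "ec_add 0 b s a = ec_add 0 b a s" using add_comm[OF os oa bnz] .
  also have "ec_add 0 b (ec_add 0 b a s) s = ec_add 0 b a (ec_add 0 b s s)"
    using ec_assoc[OF oa os os bnz] by simp
  also have "ec_add 0 b a (ec_add 0 b a (ec_add 0 b s s)) = ec_add 0 b (ec_add 0 b a a) (ec_add 0 b s s)"
    using ec_assoc[OF oa oa cl[OF os os] bnz] by simp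
  finally show ?thesis by simp
qed

lemma lin_double:
  "\<forall>P\<in>set Ps. on_curve 0 b P \<Longrightarrow> b \<noteq> 0 \<Longrightarrow>
   eclin b (map (\<lambda>n. 2*n) ns) Ps = ec_add 0 b (eclin b ns Ps) (eclin b ns Ps)"
proof (induction ns arbitrary: Ps)
  case Nil then show ?case by (simp add: lin_Nil1)
next
  case (Cons n ns)
  show ?case
  proof (cases Ps)
    case Nil then show ?thesis by (simp add: lin_Nil2)
  next
    case (Cons P Ps')
    have oP: "on_curve 0 b P" and oPs: "\<forall>P\<in>set Ps'. on_curve 0 b P" using Cons.prems Cons by auto
    have IH: "eclin b (map (\<lambda>n. 2*n) ns) Ps' = ec_add 0 b (eclin b ns Ps') (eclin b ns Ps')"
      using Cons.IH[OF oPs Cons.prems(2)] .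
    show ?thesis
      using Cons IH smul_double[OF oP Cons.prems(2)]
        swap4[OF smul_oc[OF oP Cons.prems(2)] lin_oc[OF oPs Cons.prems(2)] Cons.prems(2)]
      by (simp add: lin_Cons)
  qed
qed

lemma hom_nmul:
  assumes hom: "\<And>A B. on_curve 0 b A \<Longrightarrow> on_curve 0 b B \<Longrightarrow> psi (ec_add 0 b A B) = psi A * psi B"
    and one: "psi Inf = 1" and oP: "on_curve 0 b P" and bnz: "b \<noteq> 0"
  shows "psi (ec_nmul 0 b n P) = psi P ^ n"
  by (induction n) (simp_all add: one hom oP nmul_oc[OF oP bnz])

lemma hom_smul:
  assumes hom: "\<And>A B. on_curve 0 b A \<Longrightarrow> on_curve 0 b B \<Longrightarrow> psi (ec_add 0 b A B) = psi A * psi B"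
    and one: "psi Inf = 1" and neg: "\<And>A. psi (ec_neg A) = psi A" and oP: "on_curve 0 b P" and bnz: "b \<noteq> 0"
  shows "psi (ec_smul 0 b n P) = psi P ^ nat \<bar>n\<bar>"
  using hom_nmul[OF hom one oP bnz] neg by (simp add: ec_smul_def)

lemma hom_lin:
  assumes hom: "\<And>A B. on_curve 0 b A \<Longrightarrow> on_curve 0 b B \<Longrightarrow> psi (ec_add 0 b A B) = psi A * psi B"
    and one: "psi Inf = 1" and neg: "\<And>A. psi (ec_neg A) = psi A" and bnz: "b \<noteq> 0"
  shows "\<forall>P\<in>set Ps. on_curve 0 b P \<Longrightarrow> psi (eclin b ns Ps) = prod_list (map2 (\<lambda>n P. psi P ^ nat \<bar>n\<bar>) ns Ps)"
proof (induction ns arbitrary: Ps)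
  case Nil then show ?case by (simp add: lin_Nil1 one)
next
  case (Cons n ns)
  then show ?case
    by (cases Ps) (auto simp: lin_Cons lin_Nil2 one hom smul_oc lin_oc bnz hom_smul[OF hom one neg _ bnz])
qed




lemma Legendre_cong:
  assumes "[a = b] (mod m)" shows "Legendre a m = Legendre b m"
proof -
  have z: "[a = 0] (mod m) \<longleftrightarrow> [b = 0] (mod m)"
    using assms cong_sym cong_trans by blast
  have q: "QuadRes m a \<longleftrightarrow> QuadRes m b"
    using assms cong_sym cong_trans unfolding QuadRes_def by blast
  show ?thesis using z q by (simp add: Legendre_def)
qed

lemma Legendre_vals: "Legendre a m \<in> {-1, 0, 1}"
  by (auto simp: Legendre_def)

lemma Legendre_mult:
  assumes pp: "prime p" and p2: "2 < p"
  shows "Legendre (a*b) (int p) = Legendre a (int p) * Legendre b (int p)"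
proof -
  let ?e = "(p - 1) div 2"
  have "[Legendre (a*b) (int p) = (a*b) ^ ?e] (mod (int p))" by (rule euler_criterion[OF pp p2])
  moreover have "[(a*b) ^ ?e = a ^ ?e * b ^ ?e] (mod (int p))" by (simp add: power_mult_distrib)
  moreover have "[a ^ ?e * b ^ ?e = Legendre a (int p) * Legendre b (int p)] (mod (int p))"
    using euler_criterion[OF pp p2, of a] euler_criterion[OF pp p2, of b] cong_mult cong_sym by blast
  ultimately have c: "[Legendre (a*b) (int p) = Legendre a (int p) * Legendre b (int p)] (mod (int p))"
    using cong_trans by blast
  have v1: "Legendre (a*b) (int p) \<in> {-1,0,1}" and v2: "Legendre a (int p) * Legendre b (int p) \<in> {-1,0,1}"
    using Legendre_vals[of "a*b" "int p"] Legendre_vals[of a "int p"] Legendre_vals[of b "int p"] by auto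
  have d: "int p dvd (Legendre (a*b) (int p) - Legendre a (int p) * Legendre b (int p))"
    using c by (simp add: cong_iff_dvd_diff dvd_diff_commute)
  have p3: "int p \<ge> 3" using p2 by simp
  show ?thesis
  proof (rule ccontr)
    assume ne: "Legendre (a*b) (int p) \<noteq> Legendre a (int p) * Legendre b (int p)"
    let ?d = "Legendre (a*b) (int p) - Legendre a (int p) * Legendre b (int p)"
    have "?d \<noteq> 0" using ne by simp
    moreover have "\<bar>?d\<bar> \<le> 2" using v1 v2 by auto
    ultimately have lt: "\<bar>?d\<bar> < int p" using p3 by simp
    have "\<bar>int p\<bar> \<le> \<bar>?d\<bar>" by (rule dvd_imp_le_int[OF \<open>?d \<noteq> 0\<close> d])
    then show False using lt by simp
  qed
qed

lemma alg_coll_curve: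
  fixes x1 x2 x3 l nu b :: rat
  assumes "x1 + x2 + x3 = l^2" "x1*x2 + x1*x3 + x2*x3 = -2*l*nu" "x1*x2*x3 = nu^2 - b"
  shows "(l*x1 + nu)^2 = x1^3 + b"
  using assms by Groebner_Basis.algebra

lemma alg_A:
  fixes x1 x2 x3 l nu b r :: rat
  assumes "x1 + x2 + x3 = l^2" "x1*x2 + x1*x3 + x2*x3 = -2*l*nu" "x1*x2*x3 = nu^2 - b"
  shows "(x1 - r)*(x2 - r)*(x3 - r) = (l*r + nu)^2 - (r ^ 3 + b)"
  using assms by Groebner_Basis.algebra

lemma alg_B:
  fixes x1 x2 x3 l nu r :: rat
  assumes "x1 + x2 + x3 = l^2" "x1*x2 + x1*x3 + x2*x3 = -2*l*nu"
  shows "(x1 - r)*(x2 - r) - 3 * r ^ 2 = (x3 - r)*(x3 + 2*r + l^2) - 2*l*(l*x3 + nu)"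
  using assms by Groebner_Basis.algebra

lemma alg_E:
  fixes x1 x2 x3 l nu b u w :: rat
  assumes "x1 + x2 + x3 = l^2" "x1*x2 + x1*x3 + x2*x3 = -2*l*nu" "x1*x2*x3 = nu^2 - b"
    "x1 * u = 1" "x2 * w = 1"
  shows "u + w + x3*u*w = l^2*u*w" "1 + x3*(u + w) = -2*l*nu*u*w" "x3 + b*u*w = nu^2*u*w"
  using assms by Groebner_Basis.algebra+

lemma alg_sl_coll:
  fixes x1 x2 y1 l b :: rat
  assumes "2*l*y1 + l^2*(x2 - x1) = x1^2 + x1*x2 + x2^2" "y1^2 = x1^3 + b"
  shows "x1*x2 + x1*(l^2 - x1 - x2) + x2*(l^2 - x1 - x2) = -2*l*(y1 - l*x1)"
    "x1*x2*(l^2 - x1 - x2) = (y1 - l*x1)^2 - b"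
  using assms by Groebner_Basis.algebra+

locale pctx =
  fixes p :: nat
  assumes pp: "prime p" and p3: "3 < p"
begin

definition pint :: "rat \<Rightarrow> bool" where
  "pint q \<longleftrightarrow> (\<exists>a d. \<not> int p dvd d \<and> q = of_int a / of_int d)"

definition pmax :: "rat \<Rightarrow> bool" where
  "pmax q \<longleftrightarrow> (\<exists>a d. \<not> int p dvd d \<and> int p dvd a \<and> q = of_int a / of_int d)"

lemma ppi: "prime (int p)" using pp by simp

lemma p_not_dvd_1: "\<not> int p dvd 1" using p3 by simp

lemma p_dvd_mult: "int p dvd a * b \<Longrightarrow> int p dvd a \<or> int p dvd b"
  using ppi prime_dvd_mult_iff by blast

lemma pint_frac: "\<not> int p dvd d \<Longrightarrow> pint (of_int a / of_int d)"
  by (auto simp: pint_def)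

lemma pint_int[simp]: "pint (of_int a)"
  using pint_frac[of 1 a] p_not_dvd_1 by simp

lemma pint_num[simp]: "pint (numeral n)" "pint 0" "pint 1"
  using pint_int[of "numeral n"] pint_int[of 0] pint_int[of 1] by simp_all

lemma pmax_pint: "pmax q \<Longrightarrow> pint q"
  by (auto simp: pmax_def pint_def)

lemma pint_add: "pint q1 \<Longrightarrow> pint q2 \<Longrightarrow> pint (q1 + q2)"
proof -
  assume "pint q1" "pint q2"
  then obtain a d a' d' where "\<not> int p dvd d" "q1 = of_int a / of_int d" "\<not> int p dvd d'" "q2 = of_int a' / of_int d'"
    by (auto simp: pint_def)
  moreover have "d \<noteq> 0" "d' \<noteq> 0" using calculation by auto
  ultimately show ?thesis unfolding pint_def
    by (intro exI[of _ "a*d' + a'*d"] exI[of _ "d*d'"]) (auto simp: field_simps dest: p_dvd_mult)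
qed

lemma pint_mult: "pint q1 \<Longrightarrow> pint q2 \<Longrightarrow> pint (q1 * q2)"
proof -
  assume "pint q1" "pint q2"
  then obtain a d a' d' where "\<not> int p dvd d" "q1 = of_int a / of_int d" "\<not> int p dvd d'" "q2 = of_int a' / of_int d'"
    by (auto simp: pint_def)
  then show ?thesis unfolding pint_def
    by (intro exI[of _ "a*a'"] exI[of _ "d*d'"]) (auto dest: p_dvd_mult)
qed

lemma pint_uminus: "pint q \<Longrightarrow> pint (- q)"
proof -
  assume "pint q"
  then obtain a d where "\<not> int p dvd d" "q = of_int a / of_int d" by (auto simp: pint_def)
  then show ?thesis unfolding pint_def by (intro exI[of _ "-a"] exI[of _ d]) simp
qed

lemma pint_diff: "pint q1 \<Longrightarrow> pint q2 \<Longrightarrow> pint (q1 - q2)"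
  using pint_add[of q1 "- q2"] pint_uminus by simp

lemma pint_pow: "pint q \<Longrightarrow> pint (q ^ n)"
  by (induction n) (auto intro: pint_mult)

lemma pmax_add: "pmax q1 \<Longrightarrow> pmax q2 \<Longrightarrow> pmax (q1 + q2)"
proof -
  assume "pmax q1" "pmax q2"
  then obtain a d a' d' where h: "\<not> int p dvd d" "int p dvd a" "q1 = of_int a / of_int d" "\<not> int p dvd d'" "int p dvd a'" "q2 = of_int a' / of_int d'"
    by (auto simp: pmax_def)
  moreover have "d \<noteq> 0" "d' \<noteq> 0" using calculation by auto
  ultimately show ?thesis unfolding pmax_def
    by (intro exI[of _ "a*d' + a'*d"] exI[of _ "d*d'"]) (auto simp: field_simps dest: p_dvd_mult)
qed

lemma pmax_mult: "pmax q1 \<Longrightarrow> pint q2 \<Longrightarrow> pmax (q1 * q2)"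
proof -
  assume "pmax q1" "pint q2"
  then obtain a d a' d' where "\<not> int p dvd d" "int p dvd a" "q1 = of_int a / of_int d" "\<not> int p dvd d'" "q2 = of_int a' / of_int d'"
    by (auto simp: pmax_def pint_def)
  then show ?thesis unfolding pmax_def
    by (intro exI[of _ "a*a'"] exI[of _ "d*d'"]) (auto dest: p_dvd_mult)
qed

lemma pmax_mult2: "pint q1 \<Longrightarrow> pmax q2 \<Longrightarrow> pmax (q1 * q2)"
  using pmax_mult[of q2 q1] by (simp add: mult.commute)

lemma pmax_uminus: "pmax q \<Longrightarrow> pmax (- q)"
proof -
  assume "pmax q"
  then obtain a d where "\<not> int p dvd d" "int p dvd a" "q = of_int a / of_int d" by (auto simp: pmax_def)
  then show ?thesis unfolding pmax_def by (intro exI[of _ "-a"] exI[of _ d]) simp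
qed

lemma pmax_diff: "pmax q1 \<Longrightarrow> pmax q2 \<Longrightarrow> pmax (q1 - q2)"
  using pmax_add[of q1 "- q2"] pmax_uminus by simp

lemma pmax_frac: "\<not> int p dvd d \<Longrightarrow> pmax (of_int a / of_int d) \<longleftrightarrow> int p dvd a"
proof
  assume nd: "\<not> int p dvd d" and "pmax (of_int a / of_int d)"
  then obtain a' d' where h: "\<not> int p dvd d'" "int p dvd a'" "of_int a / of_int d = (of_int a' / of_int d' :: rat)"
    by (auto simp: pmax_def)
  have "d \<noteq> 0" "d' \<noteq> 0" using nd h by auto
  then have "of_int (a * d') = (of_int (a' * d) :: rat)" using h(3) by (simp add: field_simps)
  then have e: "a * d' = a' * d" by (simp only: of_int_eq_iff)
  have "int p dvd a * d'" unfolding e using h(2) by simp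
  then show "int p dvd a" using h(1) p_dvd_mult by blast
next
  assume "\<not> int p dvd d" "int p dvd a"
  then show "pmax (of_int a / of_int d)" by (auto simp: pmax_def)
qed

lemma pmax_int: "pmax (of_int a) \<longleftrightarrow> int p dvd a"
  using pmax_frac[of 1 a] p_not_dvd_1 by simp

lemma not_pint_frac:
  assumes "int p dvd d" "\<not> int p dvd a" "d \<noteq> 0" shows "\<not> pint (of_int a / of_int d)"
proof
  assume "pint (of_int a / of_int d)"
  then obtain a' d' where h: "\<not> int p dvd d'" "of_int a / of_int d = (of_int a' / of_int d' :: rat)"
    by (auto simp: pint_def)
  have "d' \<noteq> 0" using h by auto
  then have "of_int (a * d') = (of_int (a' * d) :: rat)" using h(2) assms(3) by (simp add: field_simps)
  then have e: "a * d' = a' * d" by (simp only: of_int_eq_iff)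
  have "int p dvd a * d'" unfolding e using assms(1) by simp
  then show False using h(1) assms(2) p_dvd_mult by blast
qed

lemma pmax_0[simp]: "pmax 0"
  using pmax_int[of 0] by simp

lemma not_pmax_1[simp]: "\<not> pmax 1"
  using pmax_int[of 1] p_not_dvd_1 by simp

lemma prime_prop: "pint q1 \<Longrightarrow> pint q2 \<Longrightarrow> pmax (q1 * q2) \<Longrightarrow> pmax q1 \<or> pmax q2"
proof -
  assume "pint q1" "pint q2" "pmax (q1 * q2)"
  then obtain a d a' d' where h: "\<not> int p dvd d" "q1 = of_int a / of_int d" "\<not> int p dvd d'" "q2 = of_int a' / of_int d'"
    by (auto simp: pint_def)
  have nd: "\<not> int p dvd d * d'" using h p_dvd_mult by blast
  have e: "q1 * q2 = of_int (a*a') / of_int (d*d')" using h by simp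
  have "pmax (of_int (a*a') / of_int (d*d'))" using \<open>pmax (q1 * q2)\<close> by (simp only: e)
  then have "int p dvd a * a'" by (simp only: pmax_frac[OF nd])
  then have "int p dvd a \<or> int p dvd a'" by (rule p_dvd_mult)
  then show ?thesis using h pmax_frac by auto
qed

lemma unit_mult: "pint q1 \<Longrightarrow> pint q2 \<Longrightarrow> \<not> pmax q1 \<Longrightarrow> \<not> pmax q2 \<Longrightarrow> \<not> pmax (q1 * q2)"
  using prime_prop by blast

lemma nonint_inv:
  assumes "\<not> pint q" shows "pmax (inverse q)"
proof -
  obtain a d where qd: "quotient_of q = (a, d)" by (cases "quotient_of q") auto
  have q: "q = of_int a / of_int d" using quotient_of_div[OF qd] .
  have dpos: "d > 0" using quotient_of_denom_pos[OF qd] .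
  have cop: "coprime a d" using quotient_of_coprime[OF qd] .
  have pd: "int p dvd d" using assms q pint_frac by blast
  have pa: "\<not> int p dvd a"
  proof
    assume "int p dvd a"
    then have "int p dvd gcd a d" using pd by simp
    then show False using cop p_not_dvd_1 by simp
  qed
  have "inverse q = of_int d / of_int a" using q by simp
  then show ?thesis using pa pd by (auto simp: pmax_def)
qed

lemma unit_inv:
  assumes "pint q" "\<not> pmax q" shows "pint (inverse q)"
proof -
  obtain a d where h: "\<not> int p dvd d" "q = of_int a / of_int d" using assms(1) by (auto simp: pint_def)
  have "\<not> int p dvd a" using assms(2) h pmax_frac by blast
  moreover have "inverse q = of_int d / of_int a" using h by simp
  ultimately show ?thesis by (auto simp: pint_def)
qed

lemma sq_pint: assumes "pint (q^2)" shows "pint q"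
proof (rule ccontr)
  assume n: "\<not> pint q"
  then have "q \<noteq> 0" by auto
  have "pmax (inverse q)" using nonint_inv[OF n] .
  then have "pmax (inverse q * inverse q)" using pmax_pint pmax_mult by blast
  then have "pmax ((inverse q * inverse q) * q^2)" using assms by (rule pmax_mult)
  moreover have "(inverse q * inverse q) * q^2 = 1" using \<open>q \<noteq> 0\<close> by (simp add: field_simps power2_eq_square)
  ultimately show False by simp
qed

lemma sq_pmax: assumes "pint q" "pmax (q^2)" shows "pmax q"
  using prime_prop[OF assms(1) assms(1)] assms(2) by (simp add: power2_eq_square)

lemma pint_res:
  assumes "pint q" shows "\<exists>t::int. pmax (q - of_int t)"
proof -
  obtain a d where h: "\<not> int p dvd d" "q = of_int a / of_int d" using assms by (auto simp: pint_def)
  have "coprime (int p) d" using h(1) ppi by (simp add: prime_imp_coprime)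
  then obtain u v where uv: "u * int p + v * d = 1"
    by (metis bezout_int gcd.commute coprime_iff_gcd_eq_1 mult.commute)
  have "d \<noteq> 0" using h by auto
  have "q - of_int (a*v) = of_int (a - a*v*d) / of_int d" using h \<open>d \<noteq> 0\<close> by (simp add: field_simps)
  moreover have "a - a*v*d = a*u*int p"
  proof -
    have "a = a * (u * int p + v * d)" using uv by simp
    then show ?thesis by (simp add: algebra_simps)
  qed
  ultimately have "pmax (q - of_int (a*v))" using h(1) pmax_frac[of d "a*u*int p"] by simp
  then show ?thesis by blast
qed


definition chi :: "rat \<Rightarrow> int" where
  "chi q = Legendre (SOME t. pmax (q - of_int t)) (int p)"

lemma pmax_int_cong: "pmax (of_int t1 - of_int t2) \<Longrightarrow> [t1 = t2] (mod int p)"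
proof -
  assume "pmax (of_int t1 - of_int t2)"
  then have "pmax (of_int (t1 - t2))" by simp
  then have "int p dvd (t1 - t2)" by (simp only: pmax_int)
  then show ?thesis by (simp add: cong_iff_dvd_diff)
qed

lemma chi_eq: assumes "pmax (q - of_int t)" shows "chi q = Legendre t (int p)"
proof -
  have ex: "\<exists>t. pmax (q - of_int t)" using assms by blast
  define s where "s = (SOME t. pmax (q - of_int t))"
  have hs: "pmax (q - of_int s)" unfolding s_def using someI_ex[OF ex] .
  have "pmax ((q - of_int s) - (q - of_int t))" using pmax_diff[OF hs assms] .
  then have "pmax (of_int t - of_int s)" by simp
  then have "[t = s] (mod int p)" by (rule pmax_int_cong)
  then show ?thesis unfolding chi_def s_def[symmetric] using Legendre_cong by metis
qed

lemma chi_cong: assumes "pint q1" "pmax (q1 - q2)" shows "chi q1 = chi q2"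
proof -
  obtain t where t: "pmax (q1 - of_int t)" using pint_res[OF assms(1)] by blast
  have "pmax ((q1 - of_int t) - (q1 - q2))" using pmax_diff[OF t assms(2)] .
  then have "pmax (q2 - of_int t)" by simp
  then show ?thesis using chi_eq t by simp
qed

lemma p2: "2 < p" using p3 by simp

lemma chi_mult: assumes "pint q1" "pint q2" shows "chi (q1*q2) = chi q1 * chi q2"
proof -
  obtain t1 where t1: "pmax (q1 - of_int t1)" using pint_res[OF assms(1)] by blast
  obtain t2 where t2: "pmax (q2 - of_int t2)" using pint_res[OF assms(2)] by blast
  have "pmax (q1 * (q2 - of_int t2) + (q1 - of_int t1) * of_int t2)"
    by (rule pmax_add[OF pmax_mult2[OF assms(1) t2] pmax_mult[OF t1 pint_int]])
  then have "pmax (q1*q2 - of_int (t1*t2))" by (simp add: algebra_simps)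
  then have "chi (q1*q2) = Legendre (t1*t2) (int p)" by (rule chi_eq)
  also have "\<dots> = Legendre t1 (int p) * Legendre t2 (int p)" by (rule Legendre_mult[OF pp p2])
  finally show ?thesis using chi_eq[OF t1] chi_eq[OF t2] by simp
qed

lemma chi_unit: assumes "pint q" "\<not> pmax q" shows "chi q = 1 \<or> chi q = -1"
proof -
  obtain t where t: "pmax (q - of_int t)" using pint_res[OF assms(1)] by blast
  have nt: "\<not> int p dvd t"
  proof
    assume "int p dvd t"
    then have "pmax (of_int t)" by (simp add: pmax_int)
    then have "pmax ((q - of_int t) + of_int t)" using pmax_add[OF t] by blast
    then show False using assms(2) by simp
  qed
  have "\<not> [t = 0] (mod int p)" using nt by (simp add: cong_0_iff)
  then show ?thesis using chi_eq[OF t] by (auto simp: Legendre_def)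
qed

lemma chi_sq: assumes "pint q" "\<not> pmax q" shows "chi (q^2) = 1"
  using chi_mult[OF assms(1) assms(1)] chi_unit[OF assms] by (auto simp: power2_eq_square)

lemma chi_frac: assumes nd: "\<not> int p dvd d" shows "chi (of_int a / of_int d) = Legendre (a*d) (int p)"
proof -
  have "pint (of_int a / of_int d)" using pint_frac[OF nd] .
  then obtain t where t: "pmax (of_int a / of_int d - of_int t)" using pint_res by blast
  have "d \<noteq> 0" using nd by auto
  then have e: "of_int a / of_int d - of_int t = (of_int (a - t*d) / of_int d :: rat)" by (simp add: field_simps)
  have "pmax (of_int (a - t*d) / of_int d)" using t by (simp only: e)
  then have "int p dvd (a - t*d)" by (simp only: pmax_frac[OF nd])
  then have c: "[a*d = t*(d*d)] (mod int p)"
    by (simp add: cong_iff_dvd_diff algebra_simps) (metis dvd_mult2 mult.commute right_diff_distrib)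
  have "Legendre (d*d) (int p) = 1"
  proof -
    have "\<not> [d*d = 0] (mod int p)" using nd p_dvd_mult by (simp add: cong_0_iff) blast
    moreover have "QuadRes (int p) (d*d)" unfolding QuadRes_def by (rule exI[of _ d]) (simp add: power2_eq_square)
    ultimately show ?thesis by (simp add: Legendre_def)
  qed
  then have "Legendre (a*d) (int p) = Legendre t (int p)"
    using Legendre_cong[OF c] Legendre_mult[OF pp p2, of t "d*d"] by simp
  then show ?thesis using chi_eq[OF t] by simp
qed

end

locale pcurve = pctx +
  fixes b :: rat and r :: int
  assumes bint: "pint b" and bnz: "b \<noteq> 0" and rroot: "pmax (of_int r ^ 3 + b)" and rnz: "\<not> int p dvd r"
begin

lemma tr_unit: "pint (3 * of_int r ^ 2)" "\<not> pmax (3 * of_int r ^ 2)"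
proof -
  show "pint (3 * of_int r ^ 2)" by (simp add: pint_mult pint_pow)
  have "\<not> int p dvd 3"
  proof
    assume "int p dvd 3"
    then have "int p \<le> 3" by (rule zdvd_imp_le) simp
    then show False using p3 by simp
  qed
  then have "\<not> int p dvd 3 * r * r" using rnz p_dvd_mult by blast
  then have "\<not> pmax (of_int (3 * r * r))" by (simp only: pmax_int) simp
  then show "\<not> pmax (3 * of_int r ^ 2)" by (simp add: power2_eq_square mult.assoc)
qed

definition psix :: "rat \<Rightarrow> int" where
  "psix x = (if pint x then (if pmax (x - of_int r) then chi (3 * of_int r ^ 2) else chi (x - of_int r)) else 1)"

lemma psix_pm: "psix x = 1 \<or> psix x = -1"
proof -
  have "pint x \<Longrightarrow> \<not> pmax (x - of_int r) \<Longrightarrow> chi (x - of_int r) = 1 \<or> chi (x - of_int r) = -1"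
    by (rule chi_unit) (auto intro: pint_diff)
  then show ?thesis using chi_unit[OF tr_unit] by (auto simp: psix_def)
qed

lemma psix_sq: "psix x * psix x = 1"
  using psix_pm[of x] by auto

lemma psix_cong: assumes "pint x1" "pmax (x1 - x2)" shows "psix x1 = psix x2"
proof -
  have i2: "pint x2" using pint_diff[OF assms(1) pmax_pint[OF assms(2)]] by simp
  have e: "x2 - of_int r = (x1 - of_int r) - (x1 - x2)" by simp
  have m: "pmax (x1 - of_int r) \<longleftrightarrow> pmax (x2 - of_int r)"
  proof
    assume "pmax (x1 - of_int r)" then show "pmax (x2 - of_int r)" unfolding e using pmax_diff assms(2) by blast
  next
    assume "pmax (x2 - of_int r)"
    moreover have "x1 - of_int r = (x2 - of_int r) + (x1 - x2)" by simp
    ultimately show "pmax (x1 - of_int r)" using pmax_add assms(2) by metis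
  qed
  have "chi (x1 - of_int r) = chi (x2 - of_int r)"
  proof (rule chi_cong)
    show "pint (x1 - of_int r)" using assms(1) by (simp add: pint_diff)
    show "pmax (x1 - of_int r - (x2 - of_int r))" using assms(2) by simp
  qed
  then show ?thesis using assms(1) i2 m by (simp add: psix_def)
qed

definition coll :: "rat \<Rightarrow> rat \<Rightarrow> rat \<Rightarrow> rat \<Rightarrow> rat \<Rightarrow> bool" where
  "coll l nu x1 x2 x3 \<longleftrightarrow> x1 + x2 + x3 = l^2 \<and> x1*x2 + x1*x3 + x2*x3 = -2*l*nu \<and> x1*x2*x3 = nu^2 - b"

lemma coll_swap12: "coll l nu x1 x2 x3 \<Longrightarrow> coll l nu x2 x1 x3"
  by (simp add: coll_def algebra_simps)

lemma coll_swap23: "coll l nu x1 x2 x3 \<Longrightarrow> coll l nu x1 x3 x2"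
  by (simp add: coll_def algebra_simps)

lemma coll_curve: "coll l nu x1 x2 x3 \<Longrightarrow> (l*x1 + nu)^2 = x1^3 + b"
  unfolding coll_def using alg_coll_curve by blast

lemma coll_int: assumes "coll l nu x1 x2 x3" "pint x1" "pint x2" "pint x3" shows "pint l" "pint nu"
proof -
  have "l^2 = x1 + x2 + x3" using assms(1) by (simp add: coll_def)
  then have "pint (l^2)" using assms by (simp add: pint_add)
  then show "pint l" by (rule sq_pint)
  have "nu^2 = x1*x2*x3 + b" using assms(1) by (simp add: coll_def)
  then have "pint (nu^2)" using assms bint by (simp add: pint_add pint_mult)
  then show "pint nu" by (rule sq_pint)
qed

lemma E_case:
  assumes c: "coll l nu x1 x2 x3" and n1: "\<not> pint x1" and n2: "\<not> pint x2" and i3: "pint x3"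
  shows False
proof -
  have x1nz: "x1 \<noteq> 0" and x2nz: "x2 \<noteq> 0" using n1 n2 by auto
  define u w where "u = inverse x1" and "w = inverse x2"
  have pu: "pmax u" and pw: "pmax w" using nonint_inv n1 n2 u_def w_def by auto
  have hu: "x1 * u = 1" and hw: "x2 * w = 1" using x1nz x2nz u_def w_def by simp_all
  have e1: "x1 + x2 + x3 = l^2" and e2: "x1*x2 + x1*x3 + x2*x3 = -2*l*nu" and e3: "x1*x2*x3 = nu^2 - b"
    using c by (auto simp: coll_def)
  define A B C where "A = u + w + x3*u*w" and "B = 1 + x3*(u + w)" and "C = x3 + b*u*w"
  have iu: "pint u" and iw: "pint w" using pu pw pmax_pint by auto
  have pA: "pmax A" unfolding A_def
    by (intro pmax_add pu pw pmax_mult[OF pmax_mult2[OF i3 pu] iw])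
  have iC: "pint C" unfolding C_def by (intro pint_add pint_mult i3 bint iu iw)
  have pB1: "pmax (B - 1)" unfolding B_def by (simp add: pmax_mult2[OF i3 pmax_add[OF pu pw]])
  have iB: "pint B" using pmax_pint[OF pB1] pint_add[of "B - 1" 1] by simp
  have nB: "\<not> pmax B"
  proof
    assume "pmax B"
    then have "pmax (B - (B - 1))" using pmax_diff pB1 by blast
    then show False by simp
  qed
  have hA: "A = l^2*u*w" and hB: "B = -2*l*nu*u*w" and hC: "C = nu^2*u*w"
    unfolding A_def B_def C_def using alg_E[OF e1 e2 e3 hu hw] by simp_all
  have "B * B = A * (4 * C)" unfolding hA hB hC by (simp add: algebra_simps power2_eq_square)
  moreover have "pmax (A * (4 * C))" by (rule pmax_mult[OF pA]) (simp add: pint_mult iC)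
  ultimately have "pmax (B * B)" by simp
  then show False using unit_mult[OF iB iB nB nB] by simp
qed

lemma D_case:
  assumes c: "coll l nu x1 x2 x3" and i1: "pint x1" and i2: "pint x2" and n3: "\<not> pint x3"
  shows "pmax (x1 - x2)"
proof -
  have e1: "l^2 = x1 + x2 + x3" using c by (simp add: coll_def)
  have "\<not> pint (l^2)"
  proof
    assume "pint (l^2)"
    then have "pint (l^2 - x1 - x2)" using i1 i2 by (simp add: pint_diff)
    then show False using n3 e1 by simp
  qed
  then have nl: "\<not> pint l" using pint_pow by blast
  then have lnz: "l \<noteq> 0" by auto
  have pinv: "pmax (inverse l)" using nonint_inv[OF nl] .
  have y1: "pint (l*x1 + nu)"
  proof (rule sq_pint)
    show "pint ((l*x1 + nu)^2)" unfolding coll_curve[OF c] by (simp add: pint_add pint_pow i1 bint)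
  qed
  have c2: "coll l nu x2 x1 x3" by (rule coll_swap12[OF c])
  have y2: "pint (l*x2 + nu)"
  proof (rule sq_pint)
    show "pint ((l*x2 + nu)^2)" unfolding coll_curve[OF c2] by (simp add: pint_add pint_pow i2 bint)
  qed
  have "x1 - x2 = ((l*x1 + nu) - (l*x2 + nu)) * inverse l" using lnz by (simp add: field_simps)
  moreover have "pmax (((l*x1 + nu) - (l*x2 + nu)) * inverse l)"
    by (rule pmax_mult2[OF pint_diff[OF y1 y2] pinv])
  ultimately show ?thesis by simp
qed

lemma B_case:
  assumes c: "coll l nu x1 x2 x3" and i1: "pint x1" and i2: "pint x2" and i3: "pint x3"
    and m3: "pmax (x3 - of_int r)"
  shows "psix x1 * psix x2 * psix x3 = 1"
proof -
  have il: "pint l" and inu: "pint nu" using coll_int[OF c i1 i2 i3] by auto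
  have c3: "coll l nu x3 x2 x1" using coll_swap12[OF coll_swap23[OF coll_swap12[OF c]]] .
  have iy3: "pint (l*x3 + nu)" by (intro pint_add pint_mult il i3 inu)
  have "(l*x3 + nu)^2 = (x3 - of_int r) * (x3^2 + x3 * of_int r + of_int r ^ 2) + (of_int r ^ 3 + b)"
    unfolding coll_curve[OF c3] by (simp add: algebra_simps power2_eq_square power3_eq_cube)
  moreover have "pmax ((x3 - of_int r) * (x3^2 + x3 * of_int r + of_int r ^ 2) + (of_int r ^ 3 + b))"
    by (intro pmax_add rroot pmax_mult m3 pint_add pint_mult pint_pow i3 pint_int)
  ultimately have "pmax ((l*x3 + nu)^2)" by simp
  then have py3: "pmax (l*x3 + nu)" using sq_pmax[OF iy3] by blast
  have e1: "x1 + x2 + x3 = l^2" and e2: "x1*x2 + x1*x3 + x2*x3 = -2*l*nu" using c by (auto simp: coll_def)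
  have ident: "(x1 - of_int r)*(x2 - of_int r) - 3 * of_int r ^ 2
      = (x3 - of_int r)*(x3 + 2*of_int r + l^2) - 2*l*(l*x3 + nu)"
    using alg_B[OF e1 e2] .
  have i4: "pint (x3 + 2*of_int r + l^2)" by (intro pint_add pint_mult pint_pow i3 pint_int il) simp
  have i5: "pint (2*l)" by (intro pint_mult il) simp
  have "pmax ((x3 - of_int r)*(x3 + 2*of_int r + l^2) - 2*l*(l*x3 + nu))"
    using pmax_diff[OF pmax_mult[OF m3 i4] pmax_mult2[OF i5 py3]] by (simp add: mult.assoc)
  then have pd: "pmax ((x1 - of_int r)*(x2 - of_int r) - 3 * of_int r ^ 2)" using ident by simp
  have ipr: "pint ((x1 - of_int r)*(x2 - of_int r))" by (intro pint_mult pint_diff i1 i2 pint_int)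
  have nprod: "\<not> pmax ((x1 - of_int r)*(x2 - of_int r))"
  proof
    assume "pmax ((x1 - of_int r)*(x2 - of_int r))"
    then have "pmax ((x1 - of_int r)*(x2 - of_int r) - ((x1 - of_int r)*(x2 - of_int r) - 3 * of_int r ^ 2))"
      using pmax_diff pd by blast
    then show False using tr_unit by simp
  qed
  have n1: "\<not> pmax (x1 - of_int r)"
  proof
    assume "pmax (x1 - of_int r)"
    then have "pmax ((x1 - of_int r)*(x2 - of_int r))" by (rule pmax_mult) (intro pint_diff i2 pint_int)
    then show False using nprod by simp
  qed
  have n2: "\<not> pmax (x2 - of_int r)"
  proof
    assume "pmax (x2 - of_int r)"
    then have "pmax ((x1 - of_int r)*(x2 - of_int r))" by (rule pmax_mult2[rotated]) (intro pint_diff i1 pint_int)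
    then show False using nprod by simp
  qed
  have "psix x1 * psix x2 = chi ((x1 - of_int r)*(x2 - of_int r))"
    using i1 i2 n1 n2 chi_mult[of "x1 - of_int r" "x2 - of_int r"] by (simp add: psix_def pint_diff)
  also have "\<dots> = chi (3 * of_int r ^ 2)" by (rule chi_cong[OF ipr pd])
  finally have "psix x1 * psix x2 * psix x3 = chi (3 * of_int r ^ 2) * chi (3 * of_int r ^ 2)"
    using i3 m3 by (simp add: psix_def)
  then show ?thesis using chi_unit[OF tr_unit] by auto
qed

lemma A_case:
  assumes c: "coll l nu x1 x2 x3" and i1: "pint x1" and i2: "pint x2" and i3: "pint x3"
    and n1: "\<not> pmax (x1 - of_int r)" and n2: "\<not> pmax (x2 - of_int r)" and n3: "\<not> pmax (x3 - of_int r)"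
  shows "psix x1 * psix x2 * psix x3 = 1"
proof -
  have il: "pint l" and inu: "pint nu" using coll_int[OF c i1 i2 i3] by auto
  have e1: "x1 + x2 + x3 = l^2" and e2: "x1*x2 + x1*x3 + x2*x3 = -2*l*nu" and e3: "x1*x2*x3 = nu^2 - b"
    using c by (auto simp: coll_def)
  define Pr where "Pr = (x1 - of_int r)*(x2 - of_int r)*(x3 - of_int r)"
  have ident: "Pr = (l*of_int r + nu)^2 - (of_int r ^ 3 + b)" unfolding Pr_def using alg_A[OF e1 e2 e3] .
  have d1: "pint (x1 - of_int r)" "pint (x2 - of_int r)" "pint (x3 - of_int r)" using i1 i2 i3 by (auto intro: pint_diff)
  have iPr: "pint Pr" unfolding Pr_def using d1 by (intro pint_mult)
  have nPr: "\<not> pmax Pr" unfolding Pr_def using d1 n1 n2 n3 by (intro unit_mult pint_mult)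
  have iq: "pint (l*of_int r + nu)" by (intro pint_add pint_mult il inu pint_int)
  have "Pr - (l*of_int r + nu)^2 = - (of_int r ^ 3 + b)" using ident by simp
  then have dq: "pmax (Pr - (l*of_int r + nu)^2)" using pmax_uminus[OF rroot] by simp
  have nq: "\<not> pmax (l*of_int r + nu)"
  proof
    assume "pmax (l*of_int r + nu)"
    then have "pmax ((l*of_int r + nu)^2)" by (simp add: power2_eq_square pmax_mult iq)
    then have "pmax (Pr - (l*of_int r + nu)^2 + (l*of_int r + nu)^2)" using pmax_add dq by blast
    then show False using nPr by simp
  qed
  have "psix x1 * psix x2 * psix x3 = chi Pr"
    using i1 i2 i3 n1 n2 n3 d1 unfolding Pr_def
    by (simp add: psix_def chi_mult pint_mult)
  also have "\<dots> = chi ((l*of_int r + nu)^2)" by (rule chi_cong[OF iPr dq])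
  also have "\<dots> = 1" by (rule chi_sq[OF iq nq])
  finally show ?thesis .
qed

lemma psix_nonint: "\<not> pint x \<Longrightarrow> psix x = 1" by (simp add: psix_def)

lemma triple:
  assumes c: "coll l nu x1 x2 x3"
  shows "psix x1 * psix x2 * psix x3 = 1"
proof -
  have c213: "coll l nu x2 x1 x3" using coll_swap12[OF c] .
  have c132: "coll l nu x1 x3 x2" using coll_swap23[OF c] .
  have c231: "coll l nu x2 x3 x1" using coll_swap23[OF c213] .
  have c312: "coll l nu x3 x1 x2" using coll_swap12[OF c132] .
  have c321: "coll l nu x3 x2 x1" using coll_swap12[OF c231] .
  consider (TTT) "pint x1" "pint x2" "pint x3" | (TTF) "pint x1" "pint x2" "\<not> pint x3"
    | (TFT) "pint x1" "\<not> pint x2" "pint x3" | (FTT) "\<not> pint x1" "pint x2" "pint x3"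
    | (TFF) "pint x1" "\<not> pint x2" "\<not> pint x3" | (FTF) "\<not> pint x1" "pint x2" "\<not> pint x3"
    | (FFT) "\<not> pint x1" "\<not> pint x2" "pint x3" | (FFF) "\<not> pint x1" "\<not> pint x2" "\<not> pint x3"
    by blast
  then show ?thesis
  proof cases
    case TTT
    show ?thesis
    proof (cases "pmax (x3 - of_int r)")
      case True then show ?thesis using B_case[OF c TTT True] by simp
    next
      case n3: False
      show ?thesis
      proof (cases "pmax (x1 - of_int r)")
        case True
        have "psix x2 * psix x3 * psix x1 = 1" using B_case[OF c231 TTT(2) TTT(3) TTT(1) True] .
        then show ?thesis by (simp add: algebra_simps)
      next
        case n1: False
        show ?thesis
        proof (cases "pmax (x2 - of_int r)")
          case True
          have "psix x1 * psix x3 * psix x2 = 1" using B_case[OF c132 TTT(1) TTT(3) TTT(2) True] .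
          then show ?thesis by (simp add: algebra_simps)
        next
          case False then show ?thesis using A_case[OF c TTT n1 False n3] by simp
        qed
      qed
    qed
  next
    case TTF
    have "psix x1 = psix x2" using psix_cong D_case[OF c TTF] TTF by blast
    then show ?thesis using psix_sq[of x2] psix_nonint[OF TTF(3)] by simp
  next
    case TFT
    have "psix x1 = psix x3" using psix_cong D_case[OF c132 TFT(1) TFT(3) TFT(2)] TFT by blast
    then show ?thesis using psix_sq[of x3] psix_nonint[OF TFT(2)] by simp
  next
    case FTT
    have "psix x2 = psix x3" using psix_cong D_case[OF c231 FTT(2) FTT(3) FTT(1)] FTT by blast
    then show ?thesis using psix_sq[of x3] psix_nonint[OF FTT(1)] by simp
  next
    case TFF then show ?thesis using E_case[OF c231 TFF(2) TFF(3) TFF(1)] by simp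
  next
    case FTF then show ?thesis using E_case[OF c132 FTF(1) FTF(3) FTF(2)] by simp
  next
    case FFT then show ?thesis using E_case[OF c FFT] by simp
  next
    case FFF then show ?thesis by (simp add: psix_nonint)
  qed
qed

definition psi :: "ec_pt \<Rightarrow> int" where
  "psi P = (case P of Inf \<Rightarrow> 1 | Aff x y \<Rightarrow> psix x)"

lemma psi_Inf[simp]: "psi Inf = 1" by (simp add: psi_def)
lemma psi_Aff[simp]: "psi (Aff x y) = psix x" by (simp add: psi_def)
lemma psi_neg: "psi (ec_neg P) = psi P" by (cases P) auto

lemma sl_coll:
  assumes c1: "y1^2 = x1^3 + b" and s: "ecsl x1 y1 x2 y2 l"
  shows "coll l (y1 - l*x1) x1 x2 (l^2 - x1 - x2)"
proof -
  have a: "y2 = y1 + l*(x2 - x1)" and R: "2*l*y1 + l^2*(x2 - x1) = x1^2 + x1*x2 + x2^2"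
    using s by (auto simp: ecsl_def)
  note alg_sl_coll[OF R c1]
  then show ?thesis by (simp add: coll_def)
qed

lemma psi_hom:
  assumes oP: "on_curve 0 b P" and oQ: "on_curve 0 b Q"
  shows "psi (ec_add 0 b P Q) = psi P * psi Q"
proof (cases P)
  case Inf then show ?thesis by simp
next
  case (Aff x1 y1) note P = this
  show ?thesis
  proof (cases Q)
    case Inf then show ?thesis using P by simp
  next
    case (Aff x2 y2) note Q = this
    have c1: "y1^2 = x1^3 + b" and c2: "y2^2 = x2^3 + b" using oP oQ P Q by auto
    show ?thesis
    proof (cases "x1 = x2 \<and> y1 = - y2")
      case True then show ?thesis using P Q psix_sq[of x2] by simp
    next
      case False
      have "\<exists>l. ecsl x1 y1 x2 y2 l" by (rule sl_ex[OF c1 c2 False])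
      then obtain l where s: "ecsl x1 y1 x2 y2 l" by blast
      have add: "ec_add 0 b P Q = ecthd x1 y1 x2 l" using add_sl[OF c1 bnz s] P Q by simp
      have t: "psix x1 * psix x2 * psix (l^2 - x1 - x2) = 1" by (rule triple[OF sl_coll[OF c1 s]])
      have "psix (l^2 - x1 - x2) = psix x1 * psix x2"
        using t psix_sq[of "l^2 - x1 - x2"] psix_pm[of "l^2 - x1 - x2"] by auto
      then show ?thesis using add P Q by (simp add: ecthd_def)
    qed
  qed
qed

end




lemma no2tor:
  assumes oQ: "on_curve 0 b Q" and QQ: "ec_add 0 b Q Q = Inf" and nc: "\<forall>x::rat. x^3 + b \<noteq> 0"
  shows "Q = Inf"
proof (cases Q)
  case Inf then show ?thesis .
next
  case (Aff x y)
  have "y = - y"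
  proof (rule ccontr)
    assume "y \<noteq> - y"
    then show False using QQ Aff by (simp add: Let_def)
  qed
  then have "y = 0" by simp
  then have "x^3 + b = 0" using oQ Aff by simp
  then show ?thesis using nc by blast
qed

lemma prod_parity:
  assumes "\<forall>v \<in> set vs. v = 1 \<or> v = -1" "length ns = length vs"
  shows "prod_list (map2 (\<lambda>n v. v ^ nat \<bar>n\<bar>) ns vs)
       = (if even (sum_list (map2 (\<lambda>n v. if v = -1 then n else 0) ns vs)) then (1::int) else -1)"
  using assms(2,1)
proof (induction ns vs rule: list_induct2)
  case Nil then show ?case by simp
next
  case (Cons n ns v vs)
  have v: "v = 1 \<or> v = -1" using Cons.prems by simp
  have IH: "prod_list (map2 (\<lambda>n v. v ^ nat \<bar>n\<bar>) ns vs)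
       = (if even (sum_list (map2 (\<lambda>n v. if v = -1 then n else 0) ns vs)) then (1::int) else -1)"
    using Cons.IH Cons.prems by simp
  have e: "even (nat \<bar>n\<bar>) \<longleftrightarrow> even n" by (simp add: even_nat_iff)
  show ?case
  proof (cases "v = 1")
    case True then show ?thesis using IH by simp
  next
    case False
    then have "v = -1" using v by simp
    then show ?thesis using IH e by (auto simp: neg_one_even_power neg_one_odd_power)
  qed
qed

lemma map2_map_right: "map2 f ns (map g Ps) = map2 (\<lambda>n P. f n (g P)) ns Ps"
  by (induction ns arbitrary: Ps) (auto simp: zip_map2 map_zip_map2)

lemma char_parity:
  assumes pc: "pcurve p b r" and oc: "\<forall>P\<in>set Ps. on_curve 0 b P" and lin0: "eclin b ns Ps = Inf"
    and len: "length ns = length Ps"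
  shows "even (sum_list (map2 (\<lambda>n v. if v = -1 then n else 0) ns (map (pcurve.psi p r) Ps)))"
proof -
  interpret pcurve p b r by (rule pc)
  have "psi (eclin b ns Ps) = prod_list (map2 (\<lambda>n P. psi P ^ nat \<bar>n\<bar>) ns Ps)"
    by (rule hom_lin[OF psi_hom psi_Inf psi_neg bnz oc])
  then have "prod_list (map2 (\<lambda>n P. psi P ^ nat \<bar>n\<bar>) ns Ps) = 1" using lin0 by simp
  then have 1: "prod_list (map2 (\<lambda>n v. v ^ nat \<bar>n\<bar>) ns (map psi Ps)) = 1"
    by (simp add: map2_map_right)
  have vs: "\<forall>v \<in> set (map psi Ps). v = 1 \<or> v = -1" using psix_pm by (auto simp: psi_def split: ec_pt.splits)
  show ?thesis using prod_parity[OF vs] 1 len by (simp split: if_splits)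
qed

lemma descent:
  assumes bnz: "b \<noteq> 0" and nc: "\<forall>x::rat. x^3 + b \<noteq> 0" and oc: "\<forall>P\<in>set Ps. on_curve 0 b P"
    and key: "\<And>ns. length ns = length Ps \<Longrightarrow> eclin b ns Ps = Inf \<Longrightarrow> \<forall>n\<in>set ns. even n"
  shows "ec_lin_indep 0 b Ps"
proof -
  have main: "\<And>ns. sum_list (map (\<lambda>n. nat \<bar>n\<bar>) ns) = M \<Longrightarrow> length ns = length Ps \<Longrightarrow> eclin b ns Ps = Inf \<Longrightarrow> \<forall>n\<in>set ns. n = 0" for M
  proof (induction M rule: less_induct)
    case (less M)
    fix ns assume M: "sum_list (map (\<lambda>n. nat \<bar>n\<bar>) ns) = M" and len: "length ns = length Ps" and l0: "eclin b ns Ps = Inf"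
    have ev: "\<forall>n\<in>set ns. even n" using key[OF len l0] .
    define ms where "ms = map (\<lambda>n. n div 2) ns"
    have nsms: "ns = map (\<lambda>n. 2*n) ms" unfolding ms_def using ev by (induction ns) auto
    have lenm: "length ms = length Ps" using len ms_def by simp
    have "ec_add 0 b (eclin b ms Ps) (eclin b ms Ps) = Inf" using l0 lin_double[OF oc bnz, of ms] nsms by simp
    then have lm: "eclin b ms Ps = Inf" using no2tor[OF lin_oc[OF oc bnz] _ nc] by blast
    show "\<forall>n\<in>set ns. n = 0"
    proof (cases "\<forall>n\<in>set ns. n = 0")
      case True then show ?thesis .
    next
      case False
      have lt: "sum_list (map (\<lambda>n. nat \<bar>n\<bar>) ms) < M"
        unfolding M[symmetric] nsms using False unfolding nsms
      proof (induction ms)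
        case Nil then show ?case by simp
      next
        case (Cons m ms)
        show ?case
        proof (cases "m = 0")
          case True
          then have "\<not> (\<forall>n\<in>set (map ((*) 2) ms). n = 0)" using Cons.prems by simp
          then show ?thesis using Cons.IH True by simp
        next
          case False
          have a: "nat \<bar>m\<bar> < nat \<bar>2*m\<bar>" using False by (simp add: abs_mult)
          have b: "sum_list (map (\<lambda>n. nat \<bar>n\<bar>) ms) \<le> sum_list (map (\<lambda>n. nat \<bar>n\<bar>) (map ((*) 2) ms))"
            by (induction ms) (auto simp: abs_mult)
          have "nat \<bar>m\<bar> + sum_list (map (\<lambda>n. nat \<bar>n\<bar>) ms) < nat \<bar>2*m\<bar> + sum_list (map (\<lambda>n. nat \<bar>n\<bar>) (map ((*) 2) ms))"
            using add_less_le_mono[OF a b] .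
          then show ?thesis by simp
        qed
      qed
      have "\<forall>n\<in>set ms. n = 0" using less.IH[OF lt refl lenm lm] .
      then show ?thesis using nsms by auto
    qed
  qed
  show ?thesis unfolding ec_lin_indep_def
    using main[OF refl] by (simp add: eclin_def)
qed


lemma Legendre_eval:
  assumes pp: "prime p" and p2: "2 < p" and nd: "\<not> int p dvd n"
  shows "Legendre n (int p) = (if (n mod int p) ^ ((p - 1) div 2) mod int p = 1 then 1 else -1)"
proof -
  have c0: "[n = n mod int p] (mod int p)" by (simp add: cong_def)
  have L: "Legendre n (int p) = Legendre (n mod int p) (int p)" by (rule Legendre_cong[OF c0])
  have e: "[Legendre (n mod int p) (int p) = (n mod int p) ^ ((p - 1) div 2)] (mod int p)"
    by (rule euler_criterion[OF pp p2])
  have nz: "\<not> [n mod int p = 0] (mod int p)" using nd by (simp add: cong_0_iff dvd_mod_iff)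
  have pm: "Legendre (n mod int p) (int p) = 1 \<or> Legendre (n mod int p) (int p) = -1"
    using nz by (auto simp: Legendre_def)
  have p1: "(1::int) mod int p = 1" using p2 by simp
  have pm1: "(-1::int) mod int p = int p - 1" using p2 by (simp add: zmod_zminus1_eq_if)
  show ?thesis
  proof (cases "Legendre (n mod int p) (int p) = 1")
    case True
    then have "(n mod int p) ^ ((p - 1) div 2) mod int p = 1" using e p1 by (simp add: cong_def)
    then show ?thesis using True L by simp
  next
    case False
    then have m1: "Legendre (n mod int p) (int p) = -1" using pm by simp
    then have "(n mod int p) ^ ((p - 1) div 2) mod int p = int p - 1" using e pm1 by (simp add: cong_def)
    then have "(n mod int p) ^ ((p - 1) div 2) mod int p \<noteq> 1" using p2 by simp
    then show ?thesis using m1 L by simp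
  qed
qed

lemma noncube:
  fixes p m :: int
  assumes pp: "prime p" and nd: "\<not> p dvd m"
  shows "\<forall>x::rat. x^3 + of_int (p^2 * m) \<noteq> 0"
proof (intro allI notI)
  fix x :: rat assume h: "x^3 + of_int (p^2 * m) = 0"
  obtain a d where qd: "quotient_of x = (a, d)" by (cases "quotient_of x") auto
  have x: "x = of_int a / of_int d" using quotient_of_div[OF qd] .
  have dpos: "d > 0" using quotient_of_denom_pos[OF qd] .
  have cop: "coprime a d" using quotient_of_coprime[OF qd] .
  have "(of_int a / of_int d :: rat)^3 = - of_int (p^2 * m)" using h x by (simp add: eq_neg_iff_add_eq_0)
  then have "of_int a ^ 3 = - of_int (p^2 * m) * (of_int d ^ 3 :: rat)" using dpos
    by (simp add: power_divide field_simps)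
  then have "of_int (a^3) = (of_int (- (p^2 * m) * d^3) :: rat)" by simp
  then have e: "a^3 = - (p^2 * m) * d^3" by (simp only: of_int_eq_iff)
  have "p dvd a^3" unfolding e by (simp add: power2_eq_square)
  then have pa: "p dvd a" using pp prime_dvd_power by blast
  then obtain a1 where a1: "a = p * a1" by (auto simp: dvd_def)
  have "p^2 * (p * a1^3) = p^2 * (- m * d^3)" using e a1 by (simp add: algebra_simps power3_eq_cube power2_eq_square)
  moreover have "p^2 \<noteq> 0" using pp by (simp add: prime_gt_0_int)
  ultimately have "p * a1^3 = - m * d^3" using mult_left_cancel by blast
  then have "p dvd m * d^3" by (metis dvd_minus_iff dvd_triv_left mult_minus_left)
  then have "p dvd d^3" using nd pp prime_dvd_mult_iff by blast
  then have "p dvd d" using pp prime_dvd_power by blast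
  then have "p dvd gcd a d" using pa by simp
  then have "\<bar>p\<bar> = 1" using cop by simp
  moreover have "1 < p" using pp by (rule prime_gt_1_int)
  ultimately show False by simp
qed

context pcurve
begin

lemma chi_int: "chi (of_int t) = Legendre t (int p)"
  using chi_eq[of "of_int t" t] by simp

lemma psix_int_val:
  "psix (of_int a) = (if int p dvd (a - r) then Legendre (3*r^2) (int p) else Legendre (a - r) (int p))"
proof -
  have e1: "of_int a - of_int r = (of_int (a - r) :: rat)" by simp
  have e2: "3 * of_int r ^ 2 = (of_int (3*r^2) :: rat)" by simp
  show ?thesis unfolding psix_def e1 e2 pmax_int chi_int by simp
qed

lemma psix_frac_val:
  assumes nd: "\<not> int p dvd d"
  shows "psix (of_int a / of_int d) = (if int p dvd (a - r*d) then Legendre (3*r^2) (int p) else Legendre ((a - r*d)*d) (int p))"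
proof -
  have dnz: "d \<noteq> 0" using nd by auto
  have e1: "of_int a / of_int d - of_int r = (of_int (a - r*d) / of_int d :: rat)" using dnz by (simp add: field_simps)
  have e2: "3 * of_int r ^ 2 = (of_int (3*r^2) :: rat)" by simp
  show ?thesis unfolding psix_def e1 e2 pmax_frac[OF nd] chi_frac[OF nd] chi_int using pint_frac[OF nd] by simp
qed

lemma psix_nonint_val:
  assumes "int p dvd d" "\<not> int p dvd a" "d \<noteq> 0"
  shows "psix (of_int a / of_int d) = 1"
  using not_pint_frac[OF assms] by (simp add: psix_def)

end

lemma pcurve_intro:
  assumes "prime p" "3 < p" "b = of_int bb" "bb \<noteq> 0" "int p dvd r^3 + bb" "\<not> int p dvd r"
  shows "pcurve p b r"
proof -
  interpret pctx p by (unfold_locales) (use assms in auto)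
  show ?thesis
  proof (unfold_locales)
    show "pint b" using assms by simp
    show "b \<noteq> 0" using assms by simp
    have "pmax (of_int (r^3 + bb))" using assms pmax_int by blast
    then show "pmax (of_int r ^ 3 + b)" using assms by simp
    show "\<not> int p dvd r" by fact
  qed
qed




lemma prime_5_nat: "prime (5::nat)"
  unfolding prime_iff by (simp add: atLeastAtMost_upt upt_rec)

lemma prime_5_int: "prime (5::int)"
  using prime_5_nat by simp

lemma len10: "length xs = 10 \<Longrightarrow> \<exists>a1 a2 a3 a4 a5 a6 a7 a8 a9 a10. xs = [a1,a2,a3,a4,a5,a6,a7,a8,a9,a10]"
  by (auto simp: length_Suc_conv numeral_eq_Suc)

lemma prime_11: "prime (11::nat)"
  unfolding prime_iff by (simp add: atLeastAtMost_upt upt_rec)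

lemma leg_11: "\<not> 11 dvd n \<Longrightarrow> Legendre n 11 = (if (n mod 11) ^ 5 mod 11 = 1 then 1 else -1)"
  using Legendre_eval[OF prime_11, of n] by simp

lemma prime_17: "prime (17::nat)"
  unfolding prime_iff by (simp add: atLeastAtMost_upt upt_rec)

lemma leg_17: "\<not> 17 dvd n \<Longrightarrow> Legendre n 17 = (if (n mod 17) ^ 8 mod 17 = 1 then 1 else -1)"
  using Legendre_eval[OF prime_17, of n] by simp

lemma prime_29: "prime (29::nat)"
  unfolding prime_iff by (simp add: atLeastAtMost_upt upt_rec)

lemma leg_29: "\<not> 29 dvd n \<Longrightarrow> Legendre n 29 = (if (n mod 29) ^ 14 mod 29 = 1 then 1 else -1)"
  using Legendre_eval[OF prime_29, of n] by simp

lemma prime_41: "prime (41::nat)"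
  unfolding prime_iff by (simp add: atLeastAtMost_upt upt_rec)

lemma leg_41: "\<not> 41 dvd n \<Longrightarrow> Legendre n 41 = (if (n mod 41) ^ 20 mod 41 = 1 then 1 else -1)"
  using Legendre_eval[OF prime_41, of n] by simp

lemma prime_47: "prime (47::nat)"
  unfolding prime_iff by (simp add: atLeastAtMost_upt upt_rec)

lemma leg_47: "\<not> 47 dvd n \<Longrightarrow> Legendre n 47 = (if (n mod 47) ^ 23 mod 47 = 1 then 1 else -1)"
  using Legendre_eval[OF prime_47, of n] by simp

lemma prime_53: "prime (53::nat)"
  unfolding prime_iff by (simp add: atLeastAtMost_upt upt_rec)

lemma leg_53: "\<not> 53 dvd n \<Longrightarrow> Legendre n 53 = (if (n mod 53) ^ 26 mod 53 = 1 then 1 else -1)"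
  using Legendre_eval[OF prime_53, of n] by simp

lemma prime_59: "prime (59::nat)"
  unfolding prime_iff by (simp add: atLeastAtMost_upt upt_rec)

lemma leg_59: "\<not> 59 dvd n \<Longrightarrow> Legendre n 59 = (if (n mod 59) ^ 29 mod 59 = 1 then 1 else -1)"
  using Legendre_eval[OF prime_59, of n] by simp

lemma prime_67: "prime (67::nat)"
  unfolding prime_iff by (simp add: atLeastAtMost_upt upt_rec)

lemma leg_67: "\<not> 67 dvd n \<Longrightarrow> Legendre n 67 = (if (n mod 67) ^ 33 mod 67 = 1 then 1 else -1)"
  using Legendre_eval[OF prime_67, of n] by simp

lemma prime_71: "prime (71::nat)"
  unfolding prime_iff by (simp add: atLeastAtMost_upt upt_rec)

lemma leg_71: "\<not> 71 dvd n \<Longrightarrow> Legendre n 71 = (if (n mod 71) ^ 35 mod 71 = 1 then 1 else -1)"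
  using Legendre_eval[OF prime_71, of n] by simp

lemma oc_A: "\<forall>P\<in>set [Aff (-135797482140) 46781315964225555,
   Aff (-150436201545) 35891470127810220,
   Aff (-42200591214) 67952721291406041,
   Aff 2327642247924 3551854243978575507,
   Aff 5504535148140 12914782107290941395,
   Aff 140506152430 86409469562070095,
   Aff 397507563420 259814927561209005,
   Aff 7162660587075 19169656506442936830,
   Aff 73148794740 71303068454026605,
   Aff (-102758626586) 60063833881519937]. on_curve 0 4692726937524378378756566939402025 P"
  by (simp add: power_divide field_simps)

lemma nc_A: "\<forall>x::rat. x^3 + 4692726937524378378756566939402025 \<noteq> 0"
  using noncube[OF prime_5_int, of "187709077500975135150262677576081"] by simp

lemma inst_A_0: "pcurve 11 4692726937524378378756566939402025 8"
  by (rule pcurve_intro[where bb="4692726937524378378756566939402025"]) (simp_all add: prime_11)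

lemma val_A_0_0: "pcurve.psix 11 8 (-135797482140) = -1"
  using pcurve.psix_int_val[OF inst_A_0, of "-135797482140"] by (simp add: leg_11)

lemma val_A_0_1: "pcurve.psix 11 8 (-150436201545) = 1"
  using pcurve.psix_int_val[OF inst_A_0, of "-150436201545"] by (simp add: leg_11)

lemma val_A_0_2: "pcurve.psix 11 8 (-42200591214) = -1"
  using pcurve.psix_int_val[OF inst_A_0, of "-42200591214"] by (simp add: leg_11)

lemma val_A_0_3: "pcurve.psix 11 8 2327642247924 = -1"
  using pcurve.psix_int_val[OF inst_A_0, of "2327642247924"] by (simp add: leg_11)

lemma val_A_0_4: "pcurve.psix 11 8 5504535148140 = 1"
  using pcurve.psix_int_val[OF inst_A_0, of "5504535148140"] by (simp add: leg_11)

lemma val_A_0_5: "pcurve.psix 11 8 140506152430 = 1"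
  using pcurve.psix_int_val[OF inst_A_0, of "140506152430"] by (simp add: leg_11)

lemma val_A_0_6: "pcurve.psix 11 8 397507563420 = 1"
  using pcurve.psix_int_val[OF inst_A_0, of "397507563420"] by (simp add: leg_11)

lemma val_A_0_7: "pcurve.psix 11 8 7162660587075 = -1"
  using pcurve.psix_int_val[OF inst_A_0, of "7162660587075"] by (simp add: leg_11)

lemma val_A_0_8: "pcurve.psix 11 8 73148794740 = -1"
  using pcurve.psix_int_val[OF inst_A_0, of "73148794740"] by (simp add: leg_11)

lemma val_A_0_9: "pcurve.psix 11 8 (-102758626586) = 1"
  using pcurve.psix_int_val[OF inst_A_0, of "-102758626586"] by (simp add: leg_11)

lemma vals_A_0: "map (pcurve.psi 11 8) [Aff (-135797482140) 46781315964225555,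
   Aff (-150436201545) 35891470127810220,
   Aff (-42200591214) 67952721291406041,
   Aff 2327642247924 3551854243978575507,
   Aff 5504535148140 12914782107290941395,
   Aff 140506152430 86409469562070095,
   Aff 397507563420 259814927561209005,
   Aff 7162660587075 19169656506442936830,
   Aff 73148794740 71303068454026605,
   Aff (-102758626586) 60063833881519937] = [-1, 1, -1, -1, 1, 1, 1, -1, -1, 1]"
  by (simp add: pcurve.psi_Aff[OF inst_A_0] val_A_0_0 val_A_0_1 val_A_0_2 val_A_0_3 val_A_0_4 val_A_0_5 val_A_0_6 val_A_0_7 val_A_0_8 val_A_0_9)

lemma inst_A_1: "pcurve 17 4692726937524378378756566939402025 9"
  by (rule pcurve_intro[where bb="4692726937524378378756566939402025"]) (simp_all add: prime_17)

lemma val_A_1_0: "pcurve.psix 17 9 (-135797482140) = 1"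
  using pcurve.psix_int_val[OF inst_A_1, of "-135797482140"] by (simp add: leg_17)

lemma val_A_1_1: "pcurve.psix 17 9 (-150436201545) = -1"
  using pcurve.psix_int_val[OF inst_A_1, of "-150436201545"] by (simp add: leg_17)

lemma val_A_1_2: "pcurve.psix 17 9 (-42200591214) = -1"
  using pcurve.psix_int_val[OF inst_A_1, of "-42200591214"] by (simp add: leg_17)

lemma val_A_1_3: "pcurve.psix 17 9 2327642247924 = -1"
  using pcurve.psix_int_val[OF inst_A_1, of "2327642247924"] by (simp add: leg_17)

lemma val_A_1_4: "pcurve.psix 17 9 5504535148140 = -1"
  using pcurve.psix_int_val[OF inst_A_1, of "5504535148140"] by (simp add: leg_17)

lemma val_A_1_5: "pcurve.psix 17 9 140506152430 = 1"
  using pcurve.psix_int_val[OF inst_A_1, of "140506152430"] by (simp add: leg_17)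

lemma val_A_1_6: "pcurve.psix 17 9 397507563420 = -1"
  using pcurve.psix_int_val[OF inst_A_1, of "397507563420"] by (simp add: leg_17)

lemma val_A_1_7: "pcurve.psix 17 9 7162660587075 = 1"
  using pcurve.psix_int_val[OF inst_A_1, of "7162660587075"] by (simp add: leg_17)

lemma val_A_1_8: "pcurve.psix 17 9 73148794740 = -1"
  using pcurve.psix_int_val[OF inst_A_1, of "73148794740"] by (simp add: leg_17)

lemma val_A_1_9: "pcurve.psix 17 9 (-102758626586) = -1"
  using pcurve.psix_int_val[OF inst_A_1, of "-102758626586"] by (simp add: leg_17)

lemma vals_A_1: "map (pcurve.psi 17 9) [Aff (-135797482140) 46781315964225555,
   Aff (-150436201545) 35891470127810220,
   Aff (-42200591214) 67952721291406041,
   Aff 2327642247924 3551854243978575507,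
   Aff 5504535148140 12914782107290941395,
   Aff 140506152430 86409469562070095,
   Aff 397507563420 259814927561209005,
   Aff 7162660587075 19169656506442936830,
   Aff 73148794740 71303068454026605,
   Aff (-102758626586) 60063833881519937] = [1, -1, -1, -1, -1, 1, -1, 1, -1, -1]"
  by (simp add: pcurve.psi_Aff[OF inst_A_1] val_A_1_0 val_A_1_1 val_A_1_2 val_A_1_3 val_A_1_4 val_A_1_5 val_A_1_6 val_A_1_7 val_A_1_8 val_A_1_9)

lemma inst_A_2: "pcurve 29 4692726937524378378756566939402025 7"
  by (rule pcurve_intro[where bb="4692726937524378378756566939402025"]) (simp_all add: prime_29)

lemma val_A_2_0: "pcurve.psix 29 7 (-135797482140) = 1"
  using pcurve.psix_int_val[OF inst_A_2, of "-135797482140"] by (simp add: leg_29)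

lemma val_A_2_1: "pcurve.psix 29 7 (-150436201545) = -1"
  using pcurve.psix_int_val[OF inst_A_2, of "-150436201545"] by (simp add: leg_29)

lemma val_A_2_2: "pcurve.psix 29 7 (-42200591214) = -1"
  using pcurve.psix_int_val[OF inst_A_2, of "-42200591214"] by (simp add: leg_29)

lemma val_A_2_3: "pcurve.psix 29 7 2327642247924 = 1"
  using pcurve.psix_int_val[OF inst_A_2, of "2327642247924"] by (simp add: leg_29)

lemma val_A_2_4: "pcurve.psix 29 7 5504535148140 = 1"
  using pcurve.psix_int_val[OF inst_A_2, of "5504535148140"] by (simp add: leg_29)

lemma val_A_2_5: "pcurve.psix 29 7 140506152430 = -1"
  using pcurve.psix_int_val[OF inst_A_2, of "140506152430"] by (simp add: leg_29)

lemma val_A_2_6: "pcurve.psix 29 7 397507563420 = -1"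
  using pcurve.psix_int_val[OF inst_A_2, of "397507563420"] by (simp add: leg_29)

lemma val_A_2_7: "pcurve.psix 29 7 7162660587075 = 1"
  using pcurve.psix_int_val[OF inst_A_2, of "7162660587075"] by (simp add: leg_29)

lemma val_A_2_8: "pcurve.psix 29 7 73148794740 = 1"
  using pcurve.psix_int_val[OF inst_A_2, of "73148794740"] by (simp add: leg_29)

lemma val_A_2_9: "pcurve.psix 29 7 (-102758626586) = -1"
  using pcurve.psix_int_val[OF inst_A_2, of "-102758626586"] by (simp add: leg_29)

lemma vals_A_2: "map (pcurve.psi 29 7) [Aff (-135797482140) 46781315964225555,
   Aff (-150436201545) 35891470127810220,
   Aff (-42200591214) 67952721291406041,
   Aff 2327642247924 3551854243978575507,
   Aff 5504535148140 12914782107290941395,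
   Aff 140506152430 86409469562070095,
   Aff 397507563420 259814927561209005,
   Aff 7162660587075 19169656506442936830,
   Aff 73148794740 71303068454026605,
   Aff (-102758626586) 60063833881519937] = [1, -1, -1, 1, 1, -1, -1, 1, 1, -1]"
  by (simp add: pcurve.psi_Aff[OF inst_A_2] val_A_2_0 val_A_2_1 val_A_2_2 val_A_2_3 val_A_2_4 val_A_2_5 val_A_2_6 val_A_2_7 val_A_2_8 val_A_2_9)

lemma inst_A_3: "pcurve 41 4692726937524378378756566939402025 33"
  by (rule pcurve_intro[where bb="4692726937524378378756566939402025"]) (simp_all add: prime_41)

lemma val_A_3_0: "pcurve.psix 41 33 (-135797482140) = -1"
  using pcurve.psix_int_val[OF inst_A_3, of "-135797482140"] by (simp add: leg_41)

lemma val_A_3_1: "pcurve.psix 41 33 (-150436201545) = 1"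
  using pcurve.psix_int_val[OF inst_A_3, of "-150436201545"] by (simp add: leg_41)

lemma val_A_3_2: "pcurve.psix 41 33 (-42200591214) = -1"
  using pcurve.psix_int_val[OF inst_A_3, of "-42200591214"] by (simp add: leg_41)

lemma val_A_3_3: "pcurve.psix 41 33 2327642247924 = -1"
  using pcurve.psix_int_val[OF inst_A_3, of "2327642247924"] by (simp add: leg_41)

lemma val_A_3_4: "pcurve.psix 41 33 5504535148140 = 1"
  using pcurve.psix_int_val[OF inst_A_3, of "5504535148140"] by (simp add: leg_41)

lemma val_A_3_5: "pcurve.psix 41 33 140506152430 = 1"
  using pcurve.psix_int_val[OF inst_A_3, of "140506152430"] by (simp add: leg_41)

lemma val_A_3_6: "pcurve.psix 41 33 397507563420 = -1"
  using pcurve.psix_int_val[OF inst_A_3, of "397507563420"] by (simp add: leg_41)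

lemma val_A_3_7: "pcurve.psix 41 33 7162660587075 = -1"
  using pcurve.psix_int_val[OF inst_A_3, of "7162660587075"] by (simp add: leg_41)

lemma val_A_3_8: "pcurve.psix 41 33 73148794740 = -1"
  using pcurve.psix_int_val[OF inst_A_3, of "73148794740"] by (simp add: leg_41)

lemma val_A_3_9: "pcurve.psix 41 33 (-102758626586) = -1"
  using pcurve.psix_int_val[OF inst_A_3, of "-102758626586"] by (simp add: leg_41)

lemma vals_A_3: "map (pcurve.psi 41 33) [Aff (-135797482140) 46781315964225555,
   Aff (-150436201545) 35891470127810220,
   Aff (-42200591214) 67952721291406041,
   Aff 2327642247924 3551854243978575507,
   Aff 5504535148140 12914782107290941395,
   Aff 140506152430 86409469562070095,
   Aff 397507563420 259814927561209005,
   Aff 7162660587075 19169656506442936830,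
   Aff 73148794740 71303068454026605,
   Aff (-102758626586) 60063833881519937] = [-1, 1, -1, -1, 1, 1, -1, -1, -1, -1]"
  by (simp add: pcurve.psi_Aff[OF inst_A_3] val_A_3_0 val_A_3_1 val_A_3_2 val_A_3_3 val_A_3_4 val_A_3_5 val_A_3_6 val_A_3_7 val_A_3_8 val_A_3_9)

lemma inst_A_4: "pcurve 47 4692726937524378378756566939402025 15"
  by (rule pcurve_intro[where bb="4692726937524378378756566939402025"]) (simp_all add: prime_47)

lemma val_A_4_0: "pcurve.psix 47 15 (-135797482140) = 1"
  using pcurve.psix_int_val[OF inst_A_4, of "-135797482140"] by (simp add: leg_47)

lemma val_A_4_1: "pcurve.psix 47 15 (-150436201545) = 1"
  using pcurve.psix_int_val[OF inst_A_4, of "-150436201545"] by (simp add: leg_47)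

lemma val_A_4_2: "pcurve.psix 47 15 (-42200591214) = -1"
  using pcurve.psix_int_val[OF inst_A_4, of "-42200591214"] by (simp add: leg_47)

lemma val_A_4_3: "pcurve.psix 47 15 2327642247924 = 1"
  using pcurve.psix_int_val[OF inst_A_4, of "2327642247924"] by (simp add: leg_47)

lemma val_A_4_4: "pcurve.psix 47 15 5504535148140 = 1"
  using pcurve.psix_int_val[OF inst_A_4, of "5504535148140"] by (simp add: leg_47)

lemma val_A_4_5: "pcurve.psix 47 15 140506152430 = 1"
  using pcurve.psix_int_val[OF inst_A_4, of "140506152430"] by (simp add: leg_47)

lemma val_A_4_6: "pcurve.psix 47 15 397507563420 = 1"
  using pcurve.psix_int_val[OF inst_A_4, of "397507563420"] by (simp add: leg_47)

lemma val_A_4_7: "pcurve.psix 47 15 7162660587075 = -1"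
  using pcurve.psix_int_val[OF inst_A_4, of "7162660587075"] by (simp add: leg_47)

lemma val_A_4_8: "pcurve.psix 47 15 73148794740 = 1"
  using pcurve.psix_int_val[OF inst_A_4, of "73148794740"] by (simp add: leg_47)

lemma val_A_4_9: "pcurve.psix 47 15 (-102758626586) = 1"
  using pcurve.psix_int_val[OF inst_A_4, of "-102758626586"] by (simp add: leg_47)

lemma vals_A_4: "map (pcurve.psi 47 15) [Aff (-135797482140) 46781315964225555,
   Aff (-150436201545) 35891470127810220,
   Aff (-42200591214) 67952721291406041,
   Aff 2327642247924 3551854243978575507,
   Aff 5504535148140 12914782107290941395,
   Aff 140506152430 86409469562070095,
   Aff 397507563420 259814927561209005,
   Aff 7162660587075 19169656506442936830,
   Aff 73148794740 71303068454026605,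
   Aff (-102758626586) 60063833881519937] = [1, 1, -1, 1, 1, 1, 1, -1, 1, 1]"
  by (simp add: pcurve.psi_Aff[OF inst_A_4] val_A_4_0 val_A_4_1 val_A_4_2 val_A_4_3 val_A_4_4 val_A_4_5 val_A_4_6 val_A_4_7 val_A_4_8 val_A_4_9)

lemma inst_A_5: "pcurve 53 4692726937524378378756566939402025 38"
  by (rule pcurve_intro[where bb="4692726937524378378756566939402025"]) (simp_all add: prime_53)

lemma val_A_5_0: "pcurve.psix 53 38 (-135797482140) = 1"
  using pcurve.psix_int_val[OF inst_A_5, of "-135797482140"] by (simp add: leg_53)

lemma val_A_5_1: "pcurve.psix 53 38 (-150436201545) = 1"
  using pcurve.psix_int_val[OF inst_A_5, of "-150436201545"] by (simp add: leg_53)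

lemma val_A_5_2: "pcurve.psix 53 38 (-42200591214) = 1"
  using pcurve.psix_int_val[OF inst_A_5, of "-42200591214"] by (simp add: leg_53)

lemma val_A_5_3: "pcurve.psix 53 38 2327642247924 = -1"
  using pcurve.psix_int_val[OF inst_A_5, of "2327642247924"] by (simp add: leg_53)

lemma val_A_5_4: "pcurve.psix 53 38 5504535148140 = -1"
  using pcurve.psix_int_val[OF inst_A_5, of "5504535148140"] by (simp add: leg_53)

lemma val_A_5_5: "pcurve.psix 53 38 140506152430 = -1"
  using pcurve.psix_int_val[OF inst_A_5, of "140506152430"] by (simp add: leg_53)

lemma val_A_5_6: "pcurve.psix 53 38 397507563420 = 1"
  using pcurve.psix_int_val[OF inst_A_5, of "397507563420"] by (simp add: leg_53)

lemma val_A_5_7: "pcurve.psix 53 38 7162660587075 = -1"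
  using pcurve.psix_int_val[OF inst_A_5, of "7162660587075"] by (simp add: leg_53)

lemma val_A_5_8: "pcurve.psix 53 38 73148794740 = -1"
  using pcurve.psix_int_val[OF inst_A_5, of "73148794740"] by (simp add: leg_53)

lemma val_A_5_9: "pcurve.psix 53 38 (-102758626586) = -1"
  using pcurve.psix_int_val[OF inst_A_5, of "-102758626586"] by (simp add: leg_53)

lemma vals_A_5: "map (pcurve.psi 53 38) [Aff (-135797482140) 46781315964225555,
   Aff (-150436201545) 35891470127810220,
   Aff (-42200591214) 67952721291406041,
   Aff 2327642247924 3551854243978575507,
   Aff 5504535148140 12914782107290941395,
   Aff 140506152430 86409469562070095,
   Aff 397507563420 259814927561209005,
   Aff 7162660587075 19169656506442936830,
   Aff 73148794740 71303068454026605,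
   Aff (-102758626586) 60063833881519937] = [1, 1, 1, -1, -1, -1, 1, -1, -1, -1]"
  by (simp add: pcurve.psi_Aff[OF inst_A_5] val_A_5_0 val_A_5_1 val_A_5_2 val_A_5_3 val_A_5_4 val_A_5_5 val_A_5_6 val_A_5_7 val_A_5_8 val_A_5_9)

lemma inst_A_6: "pcurve 59 4692726937524378378756566939402025 32"
  by (rule pcurve_intro[where bb="4692726937524378378756566939402025"]) (simp_all add: prime_59)

lemma val_A_6_0: "pcurve.psix 59 32 (-135797482140) = -1"
  using pcurve.psix_int_val[OF inst_A_6, of "-135797482140"] by (simp add: leg_59)

lemma val_A_6_1: "pcurve.psix 59 32 (-150436201545) = -1"
  using pcurve.psix_int_val[OF inst_A_6, of "-150436201545"] by (simp add: leg_59)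

lemma val_A_6_2: "pcurve.psix 59 32 (-42200591214) = 1"
  using pcurve.psix_int_val[OF inst_A_6, of "-42200591214"] by (simp add: leg_59)

lemma val_A_6_3: "pcurve.psix 59 32 2327642247924 = 1"
  using pcurve.psix_int_val[OF inst_A_6, of "2327642247924"] by (simp add: leg_59)

lemma val_A_6_4: "pcurve.psix 59 32 5504535148140 = -1"
  using pcurve.psix_int_val[OF inst_A_6, of "5504535148140"] by (simp add: leg_59)

lemma val_A_6_5: "pcurve.psix 59 32 140506152430 = -1"
  using pcurve.psix_int_val[OF inst_A_6, of "140506152430"] by (simp add: leg_59)

lemma val_A_6_6: "pcurve.psix 59 32 397507563420 = 1"
  using pcurve.psix_int_val[OF inst_A_6, of "397507563420"] by (simp add: leg_59)

lemma val_A_6_7: "pcurve.psix 59 32 7162660587075 = -1"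
  using pcurve.psix_int_val[OF inst_A_6, of "7162660587075"] by (simp add: leg_59)

lemma val_A_6_8: "pcurve.psix 59 32 73148794740 = -1"
  using pcurve.psix_int_val[OF inst_A_6, of "73148794740"] by (simp add: leg_59)

lemma val_A_6_9: "pcurve.psix 59 32 (-102758626586) = -1"
  using pcurve.psix_int_val[OF inst_A_6, of "-102758626586"] by (simp add: leg_59)

lemma vals_A_6: "map (pcurve.psi 59 32) [Aff (-135797482140) 46781315964225555,
   Aff (-150436201545) 35891470127810220,
   Aff (-42200591214) 67952721291406041,
   Aff 2327642247924 3551854243978575507,
   Aff 5504535148140 12914782107290941395,
   Aff 140506152430 86409469562070095,
   Aff 397507563420 259814927561209005,
   Aff 7162660587075 19169656506442936830,
   Aff 73148794740 71303068454026605,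
   Aff (-102758626586) 60063833881519937] = [-1, -1, 1, 1, -1, -1, 1, -1, -1, -1]"
  by (simp add: pcurve.psi_Aff[OF inst_A_6] val_A_6_0 val_A_6_1 val_A_6_2 val_A_6_3 val_A_6_4 val_A_6_5 val_A_6_6 val_A_6_7 val_A_6_8 val_A_6_9)

lemma inst_A_7: "pcurve 67 4692726937524378378756566939402025 27"
  by (rule pcurve_intro[where bb="4692726937524378378756566939402025"]) (simp_all add: prime_67)

lemma val_A_7_0: "pcurve.psix 67 27 (-135797482140) = 1"
  using pcurve.psix_int_val[OF inst_A_7, of "-135797482140"] by (simp add: leg_67)

lemma val_A_7_1: "pcurve.psix 67 27 (-150436201545) = -1"
  using pcurve.psix_int_val[OF inst_A_7, of "-150436201545"] by (simp add: leg_67)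

lemma val_A_7_2: "pcurve.psix 67 27 (-42200591214) = 1"
  using pcurve.psix_int_val[OF inst_A_7, of "-42200591214"] by (simp add: leg_67)

lemma val_A_7_3: "pcurve.psix 67 27 2327642247924 = 1"
  using pcurve.psix_int_val[OF inst_A_7, of "2327642247924"] by (simp add: leg_67)

lemma val_A_7_4: "pcurve.psix 67 27 5504535148140 = -1"
  using pcurve.psix_int_val[OF inst_A_7, of "5504535148140"] by (simp add: leg_67)

lemma val_A_7_5: "pcurve.psix 67 27 140506152430 = 1"
  using pcurve.psix_int_val[OF inst_A_7, of "140506152430"] by (simp add: leg_67)

lemma val_A_7_6: "pcurve.psix 67 27 397507563420 = 1"
  using pcurve.psix_int_val[OF inst_A_7, of "397507563420"] by (simp add: leg_67)

lemma val_A_7_7: "pcurve.psix 67 27 7162660587075 = 1"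
  using pcurve.psix_int_val[OF inst_A_7, of "7162660587075"] by (simp add: leg_67)

lemma val_A_7_8: "pcurve.psix 67 27 73148794740 = -1"
  using pcurve.psix_int_val[OF inst_A_7, of "73148794740"] by (simp add: leg_67)

lemma val_A_7_9: "pcurve.psix 67 27 (-102758626586) = -1"
  using pcurve.psix_int_val[OF inst_A_7, of "-102758626586"] by (simp add: leg_67)

lemma vals_A_7: "map (pcurve.psi 67 27) [Aff (-135797482140) 46781315964225555,
   Aff (-150436201545) 35891470127810220,
   Aff (-42200591214) 67952721291406041,
   Aff 2327642247924 3551854243978575507,
   Aff 5504535148140 12914782107290941395,
   Aff 140506152430 86409469562070095,
   Aff 397507563420 259814927561209005,
   Aff 7162660587075 19169656506442936830,
   Aff 73148794740 71303068454026605,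
   Aff (-102758626586) 60063833881519937] = [1, -1, 1, 1, -1, 1, 1, 1, -1, -1]"
  by (simp add: pcurve.psi_Aff[OF inst_A_7] val_A_7_0 val_A_7_1 val_A_7_2 val_A_7_3 val_A_7_4 val_A_7_5 val_A_7_6 val_A_7_7 val_A_7_8 val_A_7_9)

lemma inst_A_8: "pcurve 67 4692726937524378378756566939402025 46"
  by (rule pcurve_intro[where bb="4692726937524378378756566939402025"]) (simp_all add: prime_67)

lemma val_A_8_0: "pcurve.psix 67 46 (-135797482140) = -1"
  using pcurve.psix_int_val[OF inst_A_8, of "-135797482140"] by (simp add: leg_67)

lemma val_A_8_1: "pcurve.psix 67 46 (-150436201545) = 1"
  using pcurve.psix_int_val[OF inst_A_8, of "-150436201545"] by (simp add: leg_67)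

lemma val_A_8_2: "pcurve.psix 67 46 (-42200591214) = 1"
  using pcurve.psix_int_val[OF inst_A_8, of "-42200591214"] by (simp add: leg_67)

lemma val_A_8_3: "pcurve.psix 67 46 2327642247924 = 1"
  using pcurve.psix_int_val[OF inst_A_8, of "2327642247924"] by (simp add: leg_67)

lemma val_A_8_4: "pcurve.psix 67 46 5504535148140 = 1"
  using pcurve.psix_int_val[OF inst_A_8, of "5504535148140"] by (simp add: leg_67)

lemma val_A_8_5: "pcurve.psix 67 46 140506152430 = -1"
  using pcurve.psix_int_val[OF inst_A_8, of "140506152430"] by (simp add: leg_67)

lemma val_A_8_6: "pcurve.psix 67 46 397507563420 = -1"
  using pcurve.psix_int_val[OF inst_A_8, of "397507563420"] by (simp add: leg_67)

lemma val_A_8_7: "pcurve.psix 67 46 7162660587075 = 1"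
  using pcurve.psix_int_val[OF inst_A_8, of "7162660587075"] by (simp add: leg_67)

lemma val_A_8_8: "pcurve.psix 67 46 73148794740 = 1"
  using pcurve.psix_int_val[OF inst_A_8, of "73148794740"] by (simp add: leg_67)

lemma val_A_8_9: "pcurve.psix 67 46 (-102758626586) = -1"
  using pcurve.psix_int_val[OF inst_A_8, of "-102758626586"] by (simp add: leg_67)

lemma vals_A_8: "map (pcurve.psi 67 46) [Aff (-135797482140) 46781315964225555,
   Aff (-150436201545) 35891470127810220,
   Aff (-42200591214) 67952721291406041,
   Aff 2327642247924 3551854243978575507,
   Aff 5504535148140 12914782107290941395,
   Aff 140506152430 86409469562070095,
   Aff 397507563420 259814927561209005,
   Aff 7162660587075 19169656506442936830,
   Aff 73148794740 71303068454026605,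
   Aff (-102758626586) 60063833881519937] = [-1, 1, 1, 1, 1, -1, -1, 1, 1, -1]"
  by (simp add: pcurve.psi_Aff[OF inst_A_8] val_A_8_0 val_A_8_1 val_A_8_2 val_A_8_3 val_A_8_4 val_A_8_5 val_A_8_6 val_A_8_7 val_A_8_8 val_A_8_9)

lemma inst_A_9: "pcurve 71 4692726937524378378756566939402025 69"
  by (rule pcurve_intro[where bb="4692726937524378378756566939402025"]) (simp_all add: prime_71)

lemma val_A_9_0: "pcurve.psix 71 69 (-135797482140) = 1"
  using pcurve.psix_int_val[OF inst_A_9, of "-135797482140"] by (simp add: leg_71)

lemma val_A_9_1: "pcurve.psix 71 69 (-150436201545) = -1"
  using pcurve.psix_int_val[OF inst_A_9, of "-150436201545"] by (simp add: leg_71)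

lemma val_A_9_2: "pcurve.psix 71 69 (-42200591214) = -1"
  using pcurve.psix_int_val[OF inst_A_9, of "-42200591214"] by (simp add: leg_71)

lemma val_A_9_3: "pcurve.psix 71 69 2327642247924 = 1"
  using pcurve.psix_int_val[OF inst_A_9, of "2327642247924"] by (simp add: leg_71)

lemma val_A_9_4: "pcurve.psix 71 69 5504535148140 = 1"
  using pcurve.psix_int_val[OF inst_A_9, of "5504535148140"] by (simp add: leg_71)

lemma val_A_9_5: "pcurve.psix 71 69 140506152430 = 1"
  using pcurve.psix_int_val[OF inst_A_9, of "140506152430"] by (simp add: leg_71)

lemma val_A_9_6: "pcurve.psix 71 69 397507563420 = -1"
  using pcurve.psix_int_val[OF inst_A_9, of "397507563420"] by (simp add: leg_71)

lemma val_A_9_7: "pcurve.psix 71 69 7162660587075 = -1"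
  using pcurve.psix_int_val[OF inst_A_9, of "7162660587075"] by (simp add: leg_71)

lemma val_A_9_8: "pcurve.psix 71 69 73148794740 = 1"
  using pcurve.psix_int_val[OF inst_A_9, of "73148794740"] by (simp add: leg_71)

lemma val_A_9_9: "pcurve.psix 71 69 (-102758626586) = 1"
  using pcurve.psix_int_val[OF inst_A_9, of "-102758626586"] by (simp add: leg_71)

lemma vals_A_9: "map (pcurve.psi 71 69) [Aff (-135797482140) 46781315964225555,
   Aff (-150436201545) 35891470127810220,
   Aff (-42200591214) 67952721291406041,
   Aff 2327642247924 3551854243978575507,
   Aff 5504535148140 12914782107290941395,
   Aff 140506152430 86409469562070095,
   Aff 397507563420 259814927561209005,
   Aff 7162660587075 19169656506442936830,
   Aff 73148794740 71303068454026605,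
   Aff (-102758626586) 60063833881519937] = [1, -1, -1, 1, 1, 1, -1, -1, 1, 1]"
  by (simp add: pcurve.psi_Aff[OF inst_A_9] val_A_9_0 val_A_9_1 val_A_9_2 val_A_9_3 val_A_9_4 val_A_9_5 val_A_9_6 val_A_9_7 val_A_9_8 val_A_9_9)

lemma par_A_0:
  assumes "eclin 4692726937524378378756566939402025 [n1,n2,n3,n4,n5,n6,n7,n8,n9,n10] [Aff (-135797482140) 46781315964225555,
   Aff (-150436201545) 35891470127810220,
   Aff (-42200591214) 67952721291406041,
   Aff 2327642247924 3551854243978575507,
   Aff 5504535148140 12914782107290941395,
   Aff 140506152430 86409469562070095,
   Aff 397507563420 259814927561209005,
   Aff 7162660587075 19169656506442936830,
   Aff 73148794740 71303068454026605,
   Aff (-102758626586) 60063833881519937] = Inf"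
  shows "even (n1 + (n3 + (n4 + (n8 + (n9)))))"
  using char_parity[OF inst_A_0 oc_A assms] vals_A_0 by simp

lemma par_A_1:
  assumes "eclin 4692726937524378378756566939402025 [n1,n2,n3,n4,n5,n6,n7,n8,n9,n10] [Aff (-135797482140) 46781315964225555,
   Aff (-150436201545) 35891470127810220,
   Aff (-42200591214) 67952721291406041,
   Aff 2327642247924 3551854243978575507,
   Aff 5504535148140 12914782107290941395,
   Aff 140506152430 86409469562070095,
   Aff 397507563420 259814927561209005,
   Aff 7162660587075 19169656506442936830,
   Aff 73148794740 71303068454026605,
   Aff (-102758626586) 60063833881519937] = Inf"
  shows "even (n2 + (n3 + (n4 + (n5 + (n7 + (n9 + (n10)))))))"
  using char_parity[OF inst_A_1 oc_A assms] vals_A_1 by simp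

lemma par_A_2:
  assumes "eclin 4692726937524378378756566939402025 [n1,n2,n3,n4,n5,n6,n7,n8,n9,n10] [Aff (-135797482140) 46781315964225555,
   Aff (-150436201545) 35891470127810220,
   Aff (-42200591214) 67952721291406041,
   Aff 2327642247924 3551854243978575507,
   Aff 5504535148140 12914782107290941395,
   Aff 140506152430 86409469562070095,
   Aff 397507563420 259814927561209005,
   Aff 7162660587075 19169656506442936830,
   Aff 73148794740 71303068454026605,
   Aff (-102758626586) 60063833881519937] = Inf"
  shows "even (n2 + (n3 + (n6 + (n7 + (n10)))))"
  using char_parity[OF inst_A_2 oc_A assms] vals_A_2 by simp

lemma par_A_3:
  assumes "eclin 4692726937524378378756566939402025 [n1,n2,n3,n4,n5,n6,n7,n8,n9,n10] [Aff (-135797482140) 46781315964225555,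
   Aff (-150436201545) 35891470127810220,
   Aff (-42200591214) 67952721291406041,
   Aff 2327642247924 3551854243978575507,
   Aff 5504535148140 12914782107290941395,
   Aff 140506152430 86409469562070095,
   Aff 397507563420 259814927561209005,
   Aff 7162660587075 19169656506442936830,
   Aff 73148794740 71303068454026605,
   Aff (-102758626586) 60063833881519937] = Inf"
  shows "even (n1 + (n3 + (n4 + (n7 + (n8 + (n9 + (n10)))))))"
  using char_parity[OF inst_A_3 oc_A assms] vals_A_3 by simp

lemma par_A_4:
  assumes "eclin 4692726937524378378756566939402025 [n1,n2,n3,n4,n5,n6,n7,n8,n9,n10] [Aff (-135797482140) 46781315964225555,
   Aff (-150436201545) 35891470127810220,
   Aff (-42200591214) 67952721291406041,
   Aff 2327642247924 3551854243978575507,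
   Aff 5504535148140 12914782107290941395,
   Aff 140506152430 86409469562070095,
   Aff 397507563420 259814927561209005,
   Aff 7162660587075 19169656506442936830,
   Aff 73148794740 71303068454026605,
   Aff (-102758626586) 60063833881519937] = Inf"
  shows "even (n3 + (n8))"
  using char_parity[OF inst_A_4 oc_A assms] vals_A_4 by simp

lemma par_A_5:
  assumes "eclin 4692726937524378378756566939402025 [n1,n2,n3,n4,n5,n6,n7,n8,n9,n10] [Aff (-135797482140) 46781315964225555,
   Aff (-150436201545) 35891470127810220,
   Aff (-42200591214) 67952721291406041,
   Aff 2327642247924 3551854243978575507,
   Aff 5504535148140 12914782107290941395,
   Aff 140506152430 86409469562070095,
   Aff 397507563420 259814927561209005,
   Aff 7162660587075 19169656506442936830,
   Aff 73148794740 71303068454026605,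
   Aff (-102758626586) 60063833881519937] = Inf"
  shows "even (n4 + (n5 + (n6 + (n8 + (n9 + (n10))))))"
  using char_parity[OF inst_A_5 oc_A assms] vals_A_5 by simp

lemma par_A_6:
  assumes "eclin 4692726937524378378756566939402025 [n1,n2,n3,n4,n5,n6,n7,n8,n9,n10] [Aff (-135797482140) 46781315964225555,
   Aff (-150436201545) 35891470127810220,
   Aff (-42200591214) 67952721291406041,
   Aff 2327642247924 3551854243978575507,
   Aff 5504535148140 12914782107290941395,
   Aff 140506152430 86409469562070095,
   Aff 397507563420 259814927561209005,
   Aff 7162660587075 19169656506442936830,
   Aff 73148794740 71303068454026605,
   Aff (-102758626586) 60063833881519937] = Inf"
  shows "even (n1 + (n2 + (n5 + (n6 + (n8 + (n9 + (n10)))))))"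
  using char_parity[OF inst_A_6 oc_A assms] vals_A_6 by simp

lemma par_A_7:
  assumes "eclin 4692726937524378378756566939402025 [n1,n2,n3,n4,n5,n6,n7,n8,n9,n10] [Aff (-135797482140) 46781315964225555,
   Aff (-150436201545) 35891470127810220,
   Aff (-42200591214) 67952721291406041,
   Aff 2327642247924 3551854243978575507,
   Aff 5504535148140 12914782107290941395,
   Aff 140506152430 86409469562070095,
   Aff 397507563420 259814927561209005,
   Aff 7162660587075 19169656506442936830,
   Aff 73148794740 71303068454026605,
   Aff (-102758626586) 60063833881519937] = Inf"
  shows "even (n2 + (n5 + (n9 + (n10))))"
  using char_parity[OF inst_A_7 oc_A assms] vals_A_7 by simp

lemma par_A_8:
  assumes "eclin 4692726937524378378756566939402025 [n1,n2,n3,n4,n5,n6,n7,n8,n9,n10] [Aff (-135797482140) 46781315964225555,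
   Aff (-150436201545) 35891470127810220,
   Aff (-42200591214) 67952721291406041,
   Aff 2327642247924 3551854243978575507,
   Aff 5504535148140 12914782107290941395,
   Aff 140506152430 86409469562070095,
   Aff 397507563420 259814927561209005,
   Aff 7162660587075 19169656506442936830,
   Aff 73148794740 71303068454026605,
   Aff (-102758626586) 60063833881519937] = Inf"
  shows "even (n1 + (n6 + (n7 + (n10))))"
  using char_parity[OF inst_A_8 oc_A assms] vals_A_8 by simp

lemma par_A_9:
  assumes "eclin 4692726937524378378756566939402025 [n1,n2,n3,n4,n5,n6,n7,n8,n9,n10] [Aff (-135797482140) 46781315964225555,
   Aff (-150436201545) 35891470127810220,
   Aff (-42200591214) 67952721291406041,
   Aff 2327642247924 3551854243978575507,
   Aff 5504535148140 12914782107290941395,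
   Aff 140506152430 86409469562070095,
   Aff 397507563420 259814927561209005,
   Aff 7162660587075 19169656506442936830,
   Aff 73148794740 71303068454026605,
   Aff (-102758626586) 60063833881519937] = Inf"
  shows "even (n2 + (n3 + (n7 + (n8))))"
  using char_parity[OF inst_A_9 oc_A assms] vals_A_9 by simp

lemma key_A:
  assumes len: "length ns = length [Aff (-135797482140) 46781315964225555,
   Aff (-150436201545) 35891470127810220,
   Aff (-42200591214) 67952721291406041,
   Aff 2327642247924 3551854243978575507,
   Aff 5504535148140 12914782107290941395,
   Aff 140506152430 86409469562070095,
   Aff 397507563420 259814927561209005,
   Aff 7162660587075 19169656506442936830,
   Aff 73148794740 71303068454026605,
   Aff (-102758626586) 60063833881519937]" and l0: "eclin 4692726937524378378756566939402025 ns [Aff (-135797482140) 46781315964225555,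
   Aff (-150436201545) 35891470127810220,
   Aff (-42200591214) 67952721291406041,
   Aff 2327642247924 3551854243978575507,
   Aff 5504535148140 12914782107290941395,
   Aff 140506152430 86409469562070095,
   Aff 397507563420 259814927561209005,
   Aff 7162660587075 19169656506442936830,
   Aff 73148794740 71303068454026605,
   Aff (-102758626586) 60063833881519937] = Inf"
  shows "\<forall>n\<in>set ns. even n"
proof -
  have l10: "length ns = 10" using len by simp
  obtain n1 n2 n3 n4 n5 n6 n7 n8 n9 n10 where ns: "ns = [n1,n2,n3,n4,n5,n6,n7,n8,n9,n10]" using len10[OF l10] by blast
  have l: "eclin 4692726937524378378756566939402025 [n1,n2,n3,n4,n5,n6,n7,n8,n9,n10] [Aff (-135797482140) 46781315964225555,
   Aff (-150436201545) 35891470127810220,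
   Aff (-42200591214) 67952721291406041,
   Aff 2327642247924 3551854243978575507,
   Aff 5504535148140 12914782107290941395,
   Aff 140506152430 86409469562070095,
   Aff 397507563420 259814927561209005,
   Aff 7162660587075 19169656506442936830,
   Aff 73148794740 71303068454026605,
   Aff (-102758626586) 60063833881519937] = Inf" using l0 ns by simp
  have h0: "even (n1 + (n3 + (n4 + (n8 + (n9)))))" by (rule par_A_0[OF l])
  have h1: "even (n2 + (n3 + (n4 + (n5 + (n7 + (n9 + (n10)))))))" by (rule par_A_1[OF l])
  have h2: "even (n2 + (n3 + (n6 + (n7 + (n10)))))" by (rule par_A_2[OF l])
  have h3: "even (n1 + (n3 + (n4 + (n7 + (n8 + (n9 + (n10)))))))" by (rule par_A_3[OF l])
  have h4: "even (n3 + (n8))" by (rule par_A_4[OF l])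
  have h5: "even (n4 + (n5 + (n6 + (n8 + (n9 + (n10))))))" by (rule par_A_5[OF l])
  have h6: "even (n1 + (n2 + (n5 + (n6 + (n8 + (n9 + (n10)))))))" by (rule par_A_6[OF l])
  have h7: "even (n2 + (n5 + (n9 + (n10))))" by (rule par_A_7[OF l])
  have h8: "even (n1 + (n6 + (n7 + (n10))))" by (rule par_A_8[OF l])
  have h9: "even (n2 + (n3 + (n7 + (n8))))" by (rule par_A_9[OF l])
  have e1: "even n1"
  proof -
    have s: "even ((n1 + (n3 + (n4 + (n8 + (n9))))) + ((n2 + (n3 + (n4 + (n5 + (n7 + (n9 + (n10))))))) + ((n1 + (n3 + (n4 + (n7 + (n8 + (n9 + (n10))))))) + ((n4 + (n5 + (n6 + (n8 + (n9 + (n10)))))) + ((n1 + (n6 + (n7 + (n10)))) + ((n2 + (n3 + (n7 + (n8))))))))))" by (rule dvd_add[OF h0 dvd_add[OF h1 dvd_add[OF h3 dvd_add[OF h5 dvd_add[OF h8 h9]]]]])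
    have q: "(n1 + (n3 + (n4 + (n8 + (n9))))) + ((n2 + (n3 + (n4 + (n5 + (n7 + (n9 + (n10))))))) + ((n1 + (n3 + (n4 + (n7 + (n8 + (n9 + (n10))))))) + ((n4 + (n5 + (n6 + (n8 + (n9 + (n10)))))) + ((n1 + (n6 + (n7 + (n10)))) + ((n2 + (n3 + (n7 + (n8))))))))) = n1 + 2*(1*n1 + 1*n2 + 2*n3 + 2*n4 + 1*n5 + 1*n6 + 2*n7 + 2*n8 + 2*n9 + 2*n10)" by (simp add: algebra_simps)
    show ?thesis using s unfolding q by simp
  qed
  have e2: "even n2"
  proof -
    have s: "even ((n2 + (n3 + (n4 + (n5 + (n7 + (n9 + (n10))))))) + ((n2 + (n3 + (n6 + (n7 + (n10))))) + ((n3 + (n8)) + ((n4 + (n5 + (n6 + (n8 + (n9 + (n10)))))) + ((n1 + (n2 + (n5 + (n6 + (n8 + (n9 + (n10))))))) + ((n2 + (n5 + (n9 + (n10)))) + ((n1 + (n6 + (n7 + (n10)))) + ((n2 + (n3 + (n7 + (n8))))))))))))" by (rule dvd_add[OF h1 dvd_add[OF h2 dvd_add[OF h4 dvd_add[OF h5 dvd_add[OF h6 dvd_add[OF h7 dvd_add[OF h8 h9]]]]]]])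
    have q: "(n2 + (n3 + (n4 + (n5 + (n7 + (n9 + (n10))))))) + ((n2 + (n3 + (n6 + (n7 + (n10))))) + ((n3 + (n8)) + ((n4 + (n5 + (n6 + (n8 + (n9 + (n10)))))) + ((n1 + (n2 + (n5 + (n6 + (n8 + (n9 + (n10))))))) + ((n2 + (n5 + (n9 + (n10)))) + ((n1 + (n6 + (n7 + (n10)))) + ((n2 + (n3 + (n7 + (n8))))))))))) = n2 + 2*(1*n1 + 2*n2 + 2*n3 + 1*n4 + 2*n5 + 2*n6 + 2*n7 + 2*n8 + 2*n9 + 3*n10)" by (simp add: algebra_simps)
    show ?thesis using s unfolding q by simp
  qed
  have e3: "even n3"
  proof -
    have s: "even ((n1 + (n3 + (n4 + (n8 + (n9))))) + ((n1 + (n3 + (n4 + (n7 + (n8 + (n9 + (n10))))))) + ((n3 + (n8)) + ((n1 + (n2 + (n5 + (n6 + (n8 + (n9 + (n10))))))) + ((n2 + (n5 + (n9 + (n10)))) + ((n1 + (n6 + (n7 + (n10))))))))))" by (rule dvd_add[OF h0 dvd_add[OF h3 dvd_add[OF h4 dvd_add[OF h6 dvd_add[OF h7 h8]]]]])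
    have q: "(n1 + (n3 + (n4 + (n8 + (n9))))) + ((n1 + (n3 + (n4 + (n7 + (n8 + (n9 + (n10))))))) + ((n3 + (n8)) + ((n1 + (n2 + (n5 + (n6 + (n8 + (n9 + (n10))))))) + ((n2 + (n5 + (n9 + (n10)))) + ((n1 + (n6 + (n7 + (n10))))))))) = n3 + 2*(2*n1 + 1*n2 + 1*n3 + 1*n4 + 1*n5 + 1*n6 + 1*n7 + 2*n8 + 2*n9 + 2*n10)" by (simp add: algebra_simps)
    show ?thesis using s unfolding q by simp
  qed
  have e4: "even n4"
  proof -
    have s: "even ((n1 + (n3 + (n4 + (n8 + (n9))))) + ((n2 + (n3 + (n6 + (n7 + (n10))))) + ((n1 + (n3 + (n4 + (n7 + (n8 + (n9 + (n10))))))) + ((n3 + (n8)) + ((n4 + (n5 + (n6 + (n8 + (n9 + (n10)))))) + ((n2 + (n5 + (n9 + (n10))))))))))" by (rule dvd_add[OF h0 dvd_add[OF h2 dvd_add[OF h3 dvd_add[OF h4 dvd_add[OF h5 h7]]]]])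
    have q: "(n1 + (n3 + (n4 + (n8 + (n9))))) + ((n2 + (n3 + (n6 + (n7 + (n10))))) + ((n1 + (n3 + (n4 + (n7 + (n8 + (n9 + (n10))))))) + ((n3 + (n8)) + ((n4 + (n5 + (n6 + (n8 + (n9 + (n10)))))) + ((n2 + (n5 + (n9 + (n10))))))))) = n4 + 2*(1*n1 + 1*n2 + 2*n3 + 1*n4 + 1*n5 + 1*n6 + 1*n7 + 2*n8 + 2*n9 + 2*n10)" by (simp add: algebra_simps)
    show ?thesis using s unfolding q by simp
  qed
  have e5: "even n5"
  proof -
    have s: "even ((n2 + (n3 + (n4 + (n5 + (n7 + (n9 + (n10))))))) + ((n2 + (n3 + (n6 + (n7 + (n10))))) + ((n1 + (n3 + (n4 + (n7 + (n8 + (n9 + (n10))))))) + ((n3 + (n8)) + ((n1 + (n6 + (n7 + (n10)))))))))" by (rule dvd_add[OF h1 dvd_add[OF h2 dvd_add[OF h3 dvd_add[OF h4 h8]]]])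
    have q: "(n2 + (n3 + (n4 + (n5 + (n7 + (n9 + (n10))))))) + ((n2 + (n3 + (n6 + (n7 + (n10))))) + ((n1 + (n3 + (n4 + (n7 + (n8 + (n9 + (n10))))))) + ((n3 + (n8)) + ((n1 + (n6 + (n7 + (n10)))))))) = n5 + 2*(1*n1 + 1*n2 + 2*n3 + 1*n4 + 1*n6 + 2*n7 + 1*n8 + 1*n9 + 2*n10)" by (simp add: algebra_simps)
    show ?thesis using s unfolding q by simp
  qed
  have e6: "even n6"
  proof -
    have s: "even ((n2 + (n3 + (n4 + (n5 + (n7 + (n9 + (n10))))))) + ((n4 + (n5 + (n6 + (n8 + (n9 + (n10)))))) + ((n2 + (n3 + (n7 + (n8)))))))" by (rule dvd_add[OF h1 dvd_add[OF h5 h9]])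
    have q: "(n2 + (n3 + (n4 + (n5 + (n7 + (n9 + (n10))))))) + ((n4 + (n5 + (n6 + (n8 + (n9 + (n10)))))) + ((n2 + (n3 + (n7 + (n8)))))) = n6 + 2*(1*n2 + 1*n3 + 1*n4 + 1*n5 + 1*n7 + 1*n8 + 1*n9 + 1*n10)" by (simp add: algebra_simps)
    show ?thesis using s unfolding q by simp
  qed
  have e7: "even n7"
  proof -
    have s: "even ((n2 + (n3 + (n4 + (n5 + (n7 + (n9 + (n10))))))) + ((n2 + (n3 + (n6 + (n7 + (n10))))) + ((n4 + (n5 + (n6 + (n8 + (n9 + (n10)))))) + ((n1 + (n2 + (n5 + (n6 + (n8 + (n9 + (n10))))))) + ((n2 + (n5 + (n9 + (n10)))) + ((n1 + (n6 + (n7 + (n10))))))))))" by (rule dvd_add[OF h1 dvd_add[OF h2 dvd_add[OF h5 dvd_add[OF h6 dvd_add[OF h7 h8]]]]])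
    have q: "(n2 + (n3 + (n4 + (n5 + (n7 + (n9 + (n10))))))) + ((n2 + (n3 + (n6 + (n7 + (n10))))) + ((n4 + (n5 + (n6 + (n8 + (n9 + (n10)))))) + ((n1 + (n2 + (n5 + (n6 + (n8 + (n9 + (n10))))))) + ((n2 + (n5 + (n9 + (n10)))) + ((n1 + (n6 + (n7 + (n10))))))))) = n7 + 2*(1*n1 + 2*n2 + 1*n3 + 1*n4 + 2*n5 + 2*n6 + 1*n7 + 1*n8 + 2*n9 + 3*n10)" by (simp add: algebra_simps)
    show ?thesis using s unfolding q by simp
  qed
  have e8: "even n8"
  proof -
    have s: "even ((n1 + (n3 + (n4 + (n8 + (n9))))) + ((n1 + (n3 + (n4 + (n7 + (n8 + (n9 + (n10))))))) + ((n1 + (n2 + (n5 + (n6 + (n8 + (n9 + (n10))))))) + ((n2 + (n5 + (n9 + (n10)))) + ((n1 + (n6 + (n7 + (n10)))))))))" by (rule dvd_add[OF h0 dvd_add[OF h3 dvd_add[OF h6 dvd_add[OF h7 h8]]]])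
    have q: "(n1 + (n3 + (n4 + (n8 + (n9))))) + ((n1 + (n3 + (n4 + (n7 + (n8 + (n9 + (n10))))))) + ((n1 + (n2 + (n5 + (n6 + (n8 + (n9 + (n10))))))) + ((n2 + (n5 + (n9 + (n10)))) + ((n1 + (n6 + (n7 + (n10)))))))) = n8 + 2*(2*n1 + 1*n2 + 1*n3 + 1*n4 + 1*n5 + 1*n6 + 1*n7 + 1*n8 + 2*n9 + 2*n10)" by (simp add: algebra_simps)
    show ?thesis using s unfolding q by simp
  qed
  have e9: "even n9"
  proof -
    have s: "even ((n1 + (n3 + (n4 + (n8 + (n9))))) + ((n2 + (n3 + (n4 + (n5 + (n7 + (n9 + (n10))))))) + ((n2 + (n3 + (n6 + (n7 + (n10))))) + ((n2 + (n5 + (n9 + (n10)))) + ((n1 + (n6 + (n7 + (n10)))) + ((n2 + (n3 + (n7 + (n8))))))))))" by (rule dvd_add[OF h0 dvd_add[OF h1 dvd_add[OF h2 dvd_add[OF h7 dvd_add[OF h8 h9]]]]])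
    have q: "(n1 + (n3 + (n4 + (n8 + (n9))))) + ((n2 + (n3 + (n4 + (n5 + (n7 + (n9 + (n10))))))) + ((n2 + (n3 + (n6 + (n7 + (n10))))) + ((n2 + (n5 + (n9 + (n10)))) + ((n1 + (n6 + (n7 + (n10)))) + ((n2 + (n3 + (n7 + (n8))))))))) = n9 + 2*(1*n1 + 2*n2 + 2*n3 + 1*n4 + 1*n5 + 1*n6 + 2*n7 + 1*n8 + 1*n9 + 2*n10)" by (simp add: algebra_simps)
    show ?thesis using s unfolding q by simp
  qed
  have e10: "even n10"
  proof -
    have s: "even ((n1 + (n3 + (n4 + (n8 + (n9))))) + ((n2 + (n3 + (n4 + (n5 + (n7 + (n9 + (n10))))))) + ((n2 + (n3 + (n6 + (n7 + (n10))))) + ((n1 + (n3 + (n4 + (n7 + (n8 + (n9 + (n10))))))) + ((n4 + (n5 + (n6 + (n8 + (n9 + (n10)))))) + ((n1 + (n2 + (n5 + (n6 + (n8 + (n9 + (n10))))))) + ((n2 + (n5 + (n9 + (n10)))) + ((n1 + (n6 + (n7 + (n10))))))))))))" by (rule dvd_add[OF h0 dvd_add[OF h1 dvd_add[OF h2 dvd_add[OF h3 dvd_add[OF h5 dvd_add[OF h6 dvd_add[OF h7 h8]]]]]]])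
    have q: "(n1 + (n3 + (n4 + (n8 + (n9))))) + ((n2 + (n3 + (n4 + (n5 + (n7 + (n9 + (n10))))))) + ((n2 + (n3 + (n6 + (n7 + (n10))))) + ((n1 + (n3 + (n4 + (n7 + (n8 + (n9 + (n10))))))) + ((n4 + (n5 + (n6 + (n8 + (n9 + (n10)))))) + ((n1 + (n2 + (n5 + (n6 + (n8 + (n9 + (n10))))))) + ((n2 + (n5 + (n9 + (n10)))) + ((n1 + (n6 + (n7 + (n10))))))))))) = n10 + 2*(2*n1 + 2*n2 + 2*n3 + 2*n4 + 2*n5 + 2*n6 + 2*n7 + 2*n8 + 3*n9 + 3*n10)" by (simp add: algebra_simps)
    show ?thesis using s unfolding q by simp
  qed
  show ?thesis using ns e1 e2 e3 e4 e5 e6 e7 e8 e9 e10 by simp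
qed

lemma indep_A: "ec_lin_indep 0 4692726937524378378756566939402025 [Aff (-135797482140) 46781315964225555,
   Aff (-150436201545) 35891470127810220,
   Aff (-42200591214) 67952721291406041,
   Aff 2327642247924 3551854243978575507,
   Aff 5504535148140 12914782107290941395,
   Aff 140506152430 86409469562070095,
   Aff 397507563420 259814927561209005,
   Aff 7162660587075 19169656506442936830,
   Aff 73148794740 71303068454026605,
   Aff (-102758626586) 60063833881519937]"
  by (rule descent[OF _ nc_A oc_A key_A]) simp

lemma oc_B: "\<forall>P\<in>set [Aff 3528379374409 5984763094833906277,
   Aff (24443832958924/9) (93240170853556763168/27),
   Aff 41991934832044 272097810161011577728,
   Aff (83919846442489/9) (764916625222063960787/27),
   Aff (198185567469961/9) (2788965029861620279109/27),
   Aff (1261563628223644/289) (- 42568769904444402678928/4913),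
   Aff (249889953577441/121) (1112982603584253549839/1331),
   Aff (35098829679837436/1225) (6574520442643878447103184/42875),
   Aff (10442897018676361/729) (- 1065691846252244332562491/19683),
   Aff (21538219648328006044/3214849) (98600392432667169709151373872/5764224257)]. on_curve 0 (-8109032148042125838491347671286699200) P"
  by (simp add: power_divide field_simps)

lemma nc_B: "\<forall>x::rat. x^3 + (-8109032148042125838491347671286699200) \<noteq> 0"
  using noncube[OF prime_5_int, of "-324361285921685033539653906851467968"] by simp

lemma inst_B_0: "pcurve 11 (-8109032148042125838491347671286699200) 3"
  by (rule pcurve_intro[where bb="-8109032148042125838491347671286699200"]) (simp_all add: prime_11)

lemma val_B_0_0: "pcurve.psix 11 3 3528379374409 = -1"
  using pcurve.psix_int_val[OF inst_B_0, of "3528379374409"] by (simp add: leg_11)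

lemma val_B_0_1: "pcurve.psix 11 3 (24443832958924/9) = 1"
  using pcurve.psix_frac_val[OF inst_B_0, of "9" "24443832958924"] by (simp add: leg_11)

lemma val_B_0_2: "pcurve.psix 11 3 41991934832044 = -1"
  using pcurve.psix_int_val[OF inst_B_0, of "41991934832044"] by (simp add: leg_11)

lemma val_B_0_3: "pcurve.psix 11 3 (83919846442489/9) = -1"
  using pcurve.psix_frac_val[OF inst_B_0, of "9" "83919846442489"] by (simp add: leg_11)

lemma val_B_0_4: "pcurve.psix 11 3 (198185567469961/9) = 1"
  using pcurve.psix_frac_val[OF inst_B_0, of "9" "198185567469961"] by (simp add: leg_11)

lemma val_B_0_5: "pcurve.psix 11 3 (1261563628223644/289) = 1"
  using pcurve.psix_frac_val[OF inst_B_0, of "289" "1261563628223644"] by (simp add: leg_11)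

lemma val_B_0_6: "pcurve.psix 11 3 (249889953577441/121) = 1"
  using pcurve.psix_nonint_val[OF inst_B_0, of "121" "249889953577441"] by simp

lemma val_B_0_7: "pcurve.psix 11 3 (35098829679837436/1225) = -1"
  using pcurve.psix_frac_val[OF inst_B_0, of "1225" "35098829679837436"] by (simp add: leg_11)

lemma val_B_0_8: "pcurve.psix 11 3 (10442897018676361/729) = -1"
  using pcurve.psix_frac_val[OF inst_B_0, of "729" "10442897018676361"] by (simp add: leg_11)

lemma val_B_0_9: "pcurve.psix 11 3 (21538219648328006044/3214849) = 1"
  using pcurve.psix_nonint_val[OF inst_B_0, of "3214849" "21538219648328006044"] by simp

lemma vals_B_0: "map (pcurve.psi 11 3) [Aff 3528379374409 5984763094833906277,
   Aff (24443832958924/9) (93240170853556763168/27),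
   Aff 41991934832044 272097810161011577728,
   Aff (83919846442489/9) (764916625222063960787/27),
   Aff (198185567469961/9) (2788965029861620279109/27),
   Aff (1261563628223644/289) (- 42568769904444402678928/4913),
   Aff (249889953577441/121) (1112982603584253549839/1331),
   Aff (35098829679837436/1225) (6574520442643878447103184/42875),
   Aff (10442897018676361/729) (- 1065691846252244332562491/19683),
   Aff (21538219648328006044/3214849) (98600392432667169709151373872/5764224257)] = [-1, 1, -1, -1, 1, 1, 1, -1, -1, 1]"
  by (simp add: pcurve.psi_Aff[OF inst_B_0] val_B_0_0 val_B_0_1 val_B_0_2 val_B_0_3 val_B_0_4 val_B_0_5 val_B_0_6 val_B_0_7 val_B_0_8 val_B_0_9)

lemma inst_B_1: "pcurve 17 (-8109032148042125838491347671286699200) 11"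
  by (rule pcurve_intro[where bb="-8109032148042125838491347671286699200"]) (simp_all add: prime_17)

lemma val_B_1_0: "pcurve.psix 17 11 3528379374409 = 1"
  using pcurve.psix_int_val[OF inst_B_1, of "3528379374409"] by (simp add: leg_17)

lemma val_B_1_1: "pcurve.psix 17 11 (24443832958924/9) = -1"
  using pcurve.psix_frac_val[OF inst_B_1, of "9" "24443832958924"] by (simp add: leg_17)

lemma val_B_1_2: "pcurve.psix 17 11 41991934832044 = -1"
  using pcurve.psix_int_val[OF inst_B_1, of "41991934832044"] by (simp add: leg_17)

lemma val_B_1_3: "pcurve.psix 17 11 (83919846442489/9) = -1"
  using pcurve.psix_frac_val[OF inst_B_1, of "9" "83919846442489"] by (simp add: leg_17)

lemma val_B_1_4: "pcurve.psix 17 11 (198185567469961/9) = -1"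
  using pcurve.psix_frac_val[OF inst_B_1, of "9" "198185567469961"] by (simp add: leg_17)

lemma val_B_1_5: "pcurve.psix 17 11 (1261563628223644/289) = 1"
  using pcurve.psix_nonint_val[OF inst_B_1, of "289" "1261563628223644"] by simp

lemma val_B_1_6: "pcurve.psix 17 11 (249889953577441/121) = -1"
  using pcurve.psix_frac_val[OF inst_B_1, of "121" "249889953577441"] by (simp add: leg_17)

lemma val_B_1_7: "pcurve.psix 17 11 (35098829679837436/1225) = 1"
  using pcurve.psix_frac_val[OF inst_B_1, of "1225" "35098829679837436"] by (simp add: leg_17)

lemma val_B_1_8: "pcurve.psix 17 11 (10442897018676361/729) = -1"
  using pcurve.psix_frac_val[OF inst_B_1, of "729" "10442897018676361"] by (simp add: leg_17)

lemma val_B_1_9: "pcurve.psix 17 11 (21538219648328006044/3214849) = -1"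
  using pcurve.psix_frac_val[OF inst_B_1, of "3214849" "21538219648328006044"] by (simp add: leg_17)

lemma vals_B_1: "map (pcurve.psi 17 11) [Aff 3528379374409 5984763094833906277,
   Aff (24443832958924/9) (93240170853556763168/27),
   Aff 41991934832044 272097810161011577728,
   Aff (83919846442489/9) (764916625222063960787/27),
   Aff (198185567469961/9) (2788965029861620279109/27),
   Aff (1261563628223644/289) (- 42568769904444402678928/4913),
   Aff (249889953577441/121) (1112982603584253549839/1331),
   Aff (35098829679837436/1225) (6574520442643878447103184/42875),
   Aff (10442897018676361/729) (- 1065691846252244332562491/19683),
   Aff (21538219648328006044/3214849) (98600392432667169709151373872/5764224257)] = [1, -1, -1, -1, -1, 1, -1, 1, -1, -1]"
  by (simp add: pcurve.psi_Aff[OF inst_B_1] val_B_1_0 val_B_1_1 val_B_1_2 val_B_1_3 val_B_1_4 val_B_1_5 val_B_1_6 val_B_1_7 val_B_1_8 val_B_1_9)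

lemma inst_B_2: "pcurve 29 (-8109032148042125838491347671286699200) 3"
  by (rule pcurve_intro[where bb="-8109032148042125838491347671286699200"]) (simp_all add: prime_29)

lemma val_B_2_0: "pcurve.psix 29 3 3528379374409 = 1"
  using pcurve.psix_int_val[OF inst_B_2, of "3528379374409"] by (simp add: leg_29)

lemma val_B_2_1: "pcurve.psix 29 3 (24443832958924/9) = -1"
  using pcurve.psix_frac_val[OF inst_B_2, of "9" "24443832958924"] by (simp add: leg_29)

lemma val_B_2_2: "pcurve.psix 29 3 41991934832044 = -1"
  using pcurve.psix_int_val[OF inst_B_2, of "41991934832044"] by (simp add: leg_29)

lemma val_B_2_3: "pcurve.psix 29 3 (83919846442489/9) = 1"
  using pcurve.psix_frac_val[OF inst_B_2, of "9" "83919846442489"] by (simp add: leg_29)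

lemma val_B_2_4: "pcurve.psix 29 3 (198185567469961/9) = 1"
  using pcurve.psix_frac_val[OF inst_B_2, of "9" "198185567469961"] by (simp add: leg_29)

lemma val_B_2_5: "pcurve.psix 29 3 (1261563628223644/289) = -1"
  using pcurve.psix_frac_val[OF inst_B_2, of "289" "1261563628223644"] by (simp add: leg_29)

lemma val_B_2_6: "pcurve.psix 29 3 (249889953577441/121) = -1"
  using pcurve.psix_frac_val[OF inst_B_2, of "121" "249889953577441"] by (simp add: leg_29)

lemma val_B_2_7: "pcurve.psix 29 3 (35098829679837436/1225) = 1"
  using pcurve.psix_frac_val[OF inst_B_2, of "1225" "35098829679837436"] by (simp add: leg_29)

lemma val_B_2_8: "pcurve.psix 29 3 (10442897018676361/729) = 1"
  using pcurve.psix_frac_val[OF inst_B_2, of "729" "10442897018676361"] by (simp add: leg_29)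

lemma val_B_2_9: "pcurve.psix 29 3 (21538219648328006044/3214849) = -1"
  using pcurve.psix_frac_val[OF inst_B_2, of "3214849" "21538219648328006044"] by (simp add: leg_29)

lemma vals_B_2: "map (pcurve.psi 29 3) [Aff 3528379374409 5984763094833906277,
   Aff (24443832958924/9) (93240170853556763168/27),
   Aff 41991934832044 272097810161011577728,
   Aff (83919846442489/9) (764916625222063960787/27),
   Aff (198185567469961/9) (2788965029861620279109/27),
   Aff (1261563628223644/289) (- 42568769904444402678928/4913),
   Aff (249889953577441/121) (1112982603584253549839/1331),
   Aff (35098829679837436/1225) (6574520442643878447103184/42875),
   Aff (10442897018676361/729) (- 1065691846252244332562491/19683),
   Aff (21538219648328006044/3214849) (98600392432667169709151373872/5764224257)] = [1, -1, -1, 1, 1, -1, -1, 1, 1, -1]"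
  by (simp add: pcurve.psi_Aff[OF inst_B_2] val_B_2_0 val_B_2_1 val_B_2_2 val_B_2_3 val_B_2_4 val_B_2_5 val_B_2_6 val_B_2_7 val_B_2_8 val_B_2_9)

lemma inst_B_3: "pcurve 41 (-8109032148042125838491347671286699200) 14"
  by (rule pcurve_intro[where bb="-8109032148042125838491347671286699200"]) (simp_all add: prime_41)

lemma val_B_3_0: "pcurve.psix 41 14 3528379374409 = -1"
  using pcurve.psix_int_val[OF inst_B_3, of "3528379374409"] by (simp add: leg_41)

lemma val_B_3_1: "pcurve.psix 41 14 (24443832958924/9) = 1"
  using pcurve.psix_frac_val[OF inst_B_3, of "9" "24443832958924"] by (simp add: leg_41)

lemma val_B_3_2: "pcurve.psix 41 14 41991934832044 = -1"
  using pcurve.psix_int_val[OF inst_B_3, of "41991934832044"] by (simp add: leg_41)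

lemma val_B_3_3: "pcurve.psix 41 14 (83919846442489/9) = -1"
  using pcurve.psix_frac_val[OF inst_B_3, of "9" "83919846442489"] by (simp add: leg_41)

lemma val_B_3_4: "pcurve.psix 41 14 (198185567469961/9) = 1"
  using pcurve.psix_frac_val[OF inst_B_3, of "9" "198185567469961"] by (simp add: leg_41)

lemma val_B_3_5: "pcurve.psix 41 14 (1261563628223644/289) = 1"
  using pcurve.psix_frac_val[OF inst_B_3, of "289" "1261563628223644"] by (simp add: leg_41)

lemma val_B_3_6: "pcurve.psix 41 14 (249889953577441/121) = -1"
  using pcurve.psix_frac_val[OF inst_B_3, of "121" "249889953577441"] by (simp add: leg_41)

lemma val_B_3_7: "pcurve.psix 41 14 (35098829679837436/1225) = -1"
  using pcurve.psix_frac_val[OF inst_B_3, of "1225" "35098829679837436"] by (simp add: leg_41)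

lemma val_B_3_8: "pcurve.psix 41 14 (10442897018676361/729) = -1"
  using pcurve.psix_frac_val[OF inst_B_3, of "729" "10442897018676361"] by (simp add: leg_41)

lemma val_B_3_9: "pcurve.psix 41 14 (21538219648328006044/3214849) = -1"
  using pcurve.psix_frac_val[OF inst_B_3, of "3214849" "21538219648328006044"] by (simp add: leg_41)

lemma vals_B_3: "map (pcurve.psi 41 14) [Aff 3528379374409 5984763094833906277,
   Aff (24443832958924/9) (93240170853556763168/27),
   Aff 41991934832044 272097810161011577728,
   Aff (83919846442489/9) (764916625222063960787/27),
   Aff (198185567469961/9) (2788965029861620279109/27),
   Aff (1261563628223644/289) (- 42568769904444402678928/4913),
   Aff (249889953577441/121) (1112982603584253549839/1331),
   Aff (35098829679837436/1225) (6574520442643878447103184/42875),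
   Aff (10442897018676361/729) (- 1065691846252244332562491/19683),
   Aff (21538219648328006044/3214849) (98600392432667169709151373872/5764224257)] = [-1, 1, -1, -1, 1, 1, -1, -1, -1, -1]"
  by (simp add: pcurve.psi_Aff[OF inst_B_3] val_B_3_0 val_B_3_1 val_B_3_2 val_B_3_3 val_B_3_4 val_B_3_5 val_B_3_6 val_B_3_7 val_B_3_8 val_B_3_9)

lemma inst_B_4: "pcurve 47 (-8109032148042125838491347671286699200) 8"
  by (rule pcurve_intro[where bb="-8109032148042125838491347671286699200"]) (simp_all add: prime_47)

lemma val_B_4_0: "pcurve.psix 47 8 3528379374409 = 1"
  using pcurve.psix_int_val[OF inst_B_4, of "3528379374409"] by (simp add: leg_47)

lemma val_B_4_1: "pcurve.psix 47 8 (24443832958924/9) = 1"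
  using pcurve.psix_frac_val[OF inst_B_4, of "9" "24443832958924"] by (simp add: leg_47)

lemma val_B_4_2: "pcurve.psix 47 8 41991934832044 = -1"
  using pcurve.psix_int_val[OF inst_B_4, of "41991934832044"] by (simp add: leg_47)

lemma val_B_4_3: "pcurve.psix 47 8 (83919846442489/9) = 1"
  using pcurve.psix_frac_val[OF inst_B_4, of "9" "83919846442489"] by (simp add: leg_47)

lemma val_B_4_4: "pcurve.psix 47 8 (198185567469961/9) = 1"
  using pcurve.psix_frac_val[OF inst_B_4, of "9" "198185567469961"] by (simp add: leg_47)

lemma val_B_4_5: "pcurve.psix 47 8 (1261563628223644/289) = 1"
  using pcurve.psix_frac_val[OF inst_B_4, of "289" "1261563628223644"] by (simp add: leg_47)

lemma val_B_4_6: "pcurve.psix 47 8 (249889953577441/121) = 1"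
  using pcurve.psix_frac_val[OF inst_B_4, of "121" "249889953577441"] by (simp add: leg_47)

lemma val_B_4_7: "pcurve.psix 47 8 (35098829679837436/1225) = -1"
  using pcurve.psix_frac_val[OF inst_B_4, of "1225" "35098829679837436"] by (simp add: leg_47)

lemma val_B_4_8: "pcurve.psix 47 8 (10442897018676361/729) = 1"
  using pcurve.psix_frac_val[OF inst_B_4, of "729" "10442897018676361"] by (simp add: leg_47)

lemma val_B_4_9: "pcurve.psix 47 8 (21538219648328006044/3214849) = 1"
  using pcurve.psix_frac_val[OF inst_B_4, of "3214849" "21538219648328006044"] by (simp add: leg_47)

lemma vals_B_4: "map (pcurve.psi 47 8) [Aff 3528379374409 5984763094833906277,
   Aff (24443832958924/9) (93240170853556763168/27),
   Aff 41991934832044 272097810161011577728,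
   Aff (83919846442489/9) (764916625222063960787/27),
   Aff (198185567469961/9) (2788965029861620279109/27),
   Aff (1261563628223644/289) (- 42568769904444402678928/4913),
   Aff (249889953577441/121) (1112982603584253549839/1331),
   Aff (35098829679837436/1225) (6574520442643878447103184/42875),
   Aff (10442897018676361/729) (- 1065691846252244332562491/19683),
   Aff (21538219648328006044/3214849) (98600392432667169709151373872/5764224257)] = [1, 1, -1, 1, 1, 1, 1, -1, 1, 1]"
  by (simp add: pcurve.psi_Aff[OF inst_B_4] val_B_4_0 val_B_4_1 val_B_4_2 val_B_4_3 val_B_4_4 val_B_4_5 val_B_4_6 val_B_4_7 val_B_4_8 val_B_4_9)

lemma inst_B_5: "pcurve 53 (-8109032148042125838491347671286699200) 21"
  by (rule pcurve_intro[where bb="-8109032148042125838491347671286699200"]) (simp_all add: prime_53)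

lemma val_B_5_0: "pcurve.psix 53 21 3528379374409 = 1"
  using pcurve.psix_int_val[OF inst_B_5, of "3528379374409"] by (simp add: leg_53)

lemma val_B_5_1: "pcurve.psix 53 21 (24443832958924/9) = 1"
  using pcurve.psix_frac_val[OF inst_B_5, of "9" "24443832958924"] by (simp add: leg_53)

lemma val_B_5_2: "pcurve.psix 53 21 41991934832044 = 1"
  using pcurve.psix_int_val[OF inst_B_5, of "41991934832044"] by (simp add: leg_53)

lemma val_B_5_3: "pcurve.psix 53 21 (83919846442489/9) = -1"
  using pcurve.psix_frac_val[OF inst_B_5, of "9" "83919846442489"] by (simp add: leg_53)

lemma val_B_5_4: "pcurve.psix 53 21 (198185567469961/9) = -1"
  using pcurve.psix_frac_val[OF inst_B_5, of "9" "198185567469961"] by (simp add: leg_53)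

lemma val_B_5_5: "pcurve.psix 53 21 (1261563628223644/289) = -1"
  using pcurve.psix_frac_val[OF inst_B_5, of "289" "1261563628223644"] by (simp add: leg_53)

lemma val_B_5_6: "pcurve.psix 53 21 (249889953577441/121) = 1"
  using pcurve.psix_frac_val[OF inst_B_5, of "121" "249889953577441"] by (simp add: leg_53)

lemma val_B_5_7: "pcurve.psix 53 21 (35098829679837436/1225) = -1"
  using pcurve.psix_frac_val[OF inst_B_5, of "1225" "35098829679837436"] by (simp add: leg_53)

lemma val_B_5_8: "pcurve.psix 53 21 (10442897018676361/729) = -1"
  using pcurve.psix_frac_val[OF inst_B_5, of "729" "10442897018676361"] by (simp add: leg_53)

lemma val_B_5_9: "pcurve.psix 53 21 (21538219648328006044/3214849) = -1"
  using pcurve.psix_frac_val[OF inst_B_5, of "3214849" "21538219648328006044"] by (simp add: leg_53)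

lemma vals_B_5: "map (pcurve.psi 53 21) [Aff 3528379374409 5984763094833906277,
   Aff (24443832958924/9) (93240170853556763168/27),
   Aff 41991934832044 272097810161011577728,
   Aff (83919846442489/9) (764916625222063960787/27),
   Aff (198185567469961/9) (2788965029861620279109/27),
   Aff (1261563628223644/289) (- 42568769904444402678928/4913),
   Aff (249889953577441/121) (1112982603584253549839/1331),
   Aff (35098829679837436/1225) (6574520442643878447103184/42875),
   Aff (10442897018676361/729) (- 1065691846252244332562491/19683),
   Aff (21538219648328006044/3214849) (98600392432667169709151373872/5764224257)] = [1, 1, 1, -1, -1, -1, 1, -1, -1, -1]"
  by (simp add: pcurve.psi_Aff[OF inst_B_5] val_B_5_0 val_B_5_1 val_B_5_2 val_B_5_3 val_B_5_4 val_B_5_5 val_B_5_6 val_B_5_7 val_B_5_8 val_B_5_9)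

lemma inst_B_6: "pcurve 59 (-8109032148042125838491347671286699200) 29"
  by (rule pcurve_intro[where bb="-8109032148042125838491347671286699200"]) (simp_all add: prime_59)

lemma val_B_6_0: "pcurve.psix 59 29 3528379374409 = -1"
  using pcurve.psix_int_val[OF inst_B_6, of "3528379374409"] by (simp add: leg_59)

lemma val_B_6_1: "pcurve.psix 59 29 (24443832958924/9) = -1"
  using pcurve.psix_frac_val[OF inst_B_6, of "9" "24443832958924"] by (simp add: leg_59)

lemma val_B_6_2: "pcurve.psix 59 29 41991934832044 = 1"
  using pcurve.psix_int_val[OF inst_B_6, of "41991934832044"] by (simp add: leg_59)

lemma val_B_6_3: "pcurve.psix 59 29 (83919846442489/9) = 1"
  using pcurve.psix_frac_val[OF inst_B_6, of "9" "83919846442489"] by (simp add: leg_59)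

lemma val_B_6_4: "pcurve.psix 59 29 (198185567469961/9) = -1"
  using pcurve.psix_frac_val[OF inst_B_6, of "9" "198185567469961"] by (simp add: leg_59)

lemma val_B_6_5: "pcurve.psix 59 29 (1261563628223644/289) = -1"
  using pcurve.psix_frac_val[OF inst_B_6, of "289" "1261563628223644"] by (simp add: leg_59)

lemma val_B_6_6: "pcurve.psix 59 29 (249889953577441/121) = 1"
  using pcurve.psix_frac_val[OF inst_B_6, of "121" "249889953577441"] by (simp add: leg_59)

lemma val_B_6_7: "pcurve.psix 59 29 (35098829679837436/1225) = -1"
  using pcurve.psix_frac_val[OF inst_B_6, of "1225" "35098829679837436"] by (simp add: leg_59)

lemma val_B_6_8: "pcurve.psix 59 29 (10442897018676361/729) = -1"
  using pcurve.psix_frac_val[OF inst_B_6, of "729" "10442897018676361"] by (simp add: leg_59)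

lemma val_B_6_9: "pcurve.psix 59 29 (21538219648328006044/3214849) = -1"
  using pcurve.psix_frac_val[OF inst_B_6, of "3214849" "21538219648328006044"] by (simp add: leg_59)

lemma vals_B_6: "map (pcurve.psi 59 29) [Aff 3528379374409 5984763094833906277,
   Aff (24443832958924/9) (93240170853556763168/27),
   Aff 41991934832044 272097810161011577728,
   Aff (83919846442489/9) (764916625222063960787/27),
   Aff (198185567469961/9) (2788965029861620279109/27),
   Aff (1261563628223644/289) (- 42568769904444402678928/4913),
   Aff (249889953577441/121) (1112982603584253549839/1331),
   Aff (35098829679837436/1225) (6574520442643878447103184/42875),
   Aff (10442897018676361/729) (- 1065691846252244332562491/19683),
   Aff (21538219648328006044/3214849) (98600392432667169709151373872/5764224257)] = [-1, -1, 1, 1, -1, -1, 1, -1, -1, -1]"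
  by (simp add: pcurve.psi_Aff[OF inst_B_6] val_B_6_0 val_B_6_1 val_B_6_2 val_B_6_3 val_B_6_4 val_B_6_5 val_B_6_6 val_B_6_7 val_B_6_8 val_B_6_9)

lemma inst_B_7: "pcurve 67 (-8109032148042125838491347671286699200) 5"
  by (rule pcurve_intro[where bb="-8109032148042125838491347671286699200"]) (simp_all add: prime_67)

lemma val_B_7_0: "pcurve.psix 67 5 3528379374409 = -1"
  using pcurve.psix_int_val[OF inst_B_7, of "3528379374409"] by (simp add: leg_67)

lemma val_B_7_1: "pcurve.psix 67 5 (24443832958924/9) = -1"
  using pcurve.psix_frac_val[OF inst_B_7, of "9" "24443832958924"] by (simp add: leg_67)

lemma val_B_7_2: "pcurve.psix 67 5 41991934832044 = 1"
  using pcurve.psix_int_val[OF inst_B_7, of "41991934832044"] by (simp add: leg_67)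

lemma val_B_7_3: "pcurve.psix 67 5 (83919846442489/9) = 1"
  using pcurve.psix_frac_val[OF inst_B_7, of "9" "83919846442489"] by (simp add: leg_67)

lemma val_B_7_4: "pcurve.psix 67 5 (198185567469961/9) = -1"
  using pcurve.psix_frac_val[OF inst_B_7, of "9" "198185567469961"] by (simp add: leg_67)

lemma val_B_7_5: "pcurve.psix 67 5 (1261563628223644/289) = -1"
  using pcurve.psix_frac_val[OF inst_B_7, of "289" "1261563628223644"] by (simp add: leg_67)

lemma val_B_7_6: "pcurve.psix 67 5 (249889953577441/121) = -1"
  using pcurve.psix_frac_val[OF inst_B_7, of "121" "249889953577441"] by (simp add: leg_67)

lemma val_B_7_7: "pcurve.psix 67 5 (35098829679837436/1225) = 1"
  using pcurve.psix_frac_val[OF inst_B_7, of "1225" "35098829679837436"] by (simp add: leg_67)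

lemma val_B_7_8: "pcurve.psix 67 5 (10442897018676361/729) = -1"
  using pcurve.psix_frac_val[OF inst_B_7, of "729" "10442897018676361"] by (simp add: leg_67)

lemma val_B_7_9: "pcurve.psix 67 5 (21538219648328006044/3214849) = 1"
  using pcurve.psix_frac_val[OF inst_B_7, of "3214849" "21538219648328006044"] by (simp add: leg_67)

lemma vals_B_7: "map (pcurve.psi 67 5) [Aff 3528379374409 5984763094833906277,
   Aff (24443832958924/9) (93240170853556763168/27),
   Aff 41991934832044 272097810161011577728,
   Aff (83919846442489/9) (764916625222063960787/27),
   Aff (198185567469961/9) (2788965029861620279109/27),
   Aff (1261563628223644/289) (- 42568769904444402678928/4913),
   Aff (249889953577441/121) (1112982603584253549839/1331),
   Aff (35098829679837436/1225) (6574520442643878447103184/42875),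
   Aff (10442897018676361/729) (- 1065691846252244332562491/19683),
   Aff (21538219648328006044/3214849) (98600392432667169709151373872/5764224257)] = [-1, -1, 1, 1, -1, -1, -1, 1, -1, 1]"
  by (simp add: pcurve.psi_Aff[OF inst_B_7] val_B_7_0 val_B_7_1 val_B_7_2 val_B_7_3 val_B_7_4 val_B_7_5 val_B_7_6 val_B_7_7 val_B_7_8 val_B_7_9)

lemma inst_B_8: "pcurve 67 (-8109032148042125838491347671286699200) 11"
  by (rule pcurve_intro[where bb="-8109032148042125838491347671286699200"]) (simp_all add: prime_67)

lemma val_B_8_0: "pcurve.psix 67 11 3528379374409 = 1"
  using pcurve.psix_int_val[OF inst_B_8, of "3528379374409"] by (simp add: leg_67)

lemma val_B_8_1: "pcurve.psix 67 11 (24443832958924/9) = -1"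
  using pcurve.psix_frac_val[OF inst_B_8, of "9" "24443832958924"] by (simp add: leg_67)

lemma val_B_8_2: "pcurve.psix 67 11 41991934832044 = 1"
  using pcurve.psix_int_val[OF inst_B_8, of "41991934832044"] by (simp add: leg_67)

lemma val_B_8_3: "pcurve.psix 67 11 (83919846442489/9) = 1"
  using pcurve.psix_frac_val[OF inst_B_8, of "9" "83919846442489"] by (simp add: leg_67)

lemma val_B_8_4: "pcurve.psix 67 11 (198185567469961/9) = -1"
  using pcurve.psix_frac_val[OF inst_B_8, of "9" "198185567469961"] by (simp add: leg_67)

lemma val_B_8_5: "pcurve.psix 67 11 (1261563628223644/289) = 1"
  using pcurve.psix_frac_val[OF inst_B_8, of "289" "1261563628223644"] by (simp add: leg_67)

lemma val_B_8_6: "pcurve.psix 67 11 (249889953577441/121) = 1"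
  using pcurve.psix_frac_val[OF inst_B_8, of "121" "249889953577441"] by (simp add: leg_67)

lemma val_B_8_7: "pcurve.psix 67 11 (35098829679837436/1225) = 1"
  using pcurve.psix_frac_val[OF inst_B_8, of "1225" "35098829679837436"] by (simp add: leg_67)

lemma val_B_8_8: "pcurve.psix 67 11 (10442897018676361/729) = -1"
  using pcurve.psix_frac_val[OF inst_B_8, of "729" "10442897018676361"] by (simp add: leg_67)

lemma val_B_8_9: "pcurve.psix 67 11 (21538219648328006044/3214849) = -1"
  using pcurve.psix_frac_val[OF inst_B_8, of "3214849" "21538219648328006044"] by (simp add: leg_67)

lemma vals_B_8: "map (pcurve.psi 67 11) [Aff 3528379374409 5984763094833906277,
   Aff (24443832958924/9) (93240170853556763168/27),
   Aff 41991934832044 272097810161011577728,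
   Aff (83919846442489/9) (764916625222063960787/27),
   Aff (198185567469961/9) (2788965029861620279109/27),
   Aff (1261563628223644/289) (- 42568769904444402678928/4913),
   Aff (249889953577441/121) (1112982603584253549839/1331),
   Aff (35098829679837436/1225) (6574520442643878447103184/42875),
   Aff (10442897018676361/729) (- 1065691846252244332562491/19683),
   Aff (21538219648328006044/3214849) (98600392432667169709151373872/5764224257)] = [1, -1, 1, 1, -1, 1, 1, 1, -1, -1]"
  by (simp add: pcurve.psi_Aff[OF inst_B_8] val_B_8_0 val_B_8_1 val_B_8_2 val_B_8_3 val_B_8_4 val_B_8_5 val_B_8_6 val_B_8_7 val_B_8_8 val_B_8_9)

lemma inst_B_9: "pcurve 71 (-8109032148042125838491347671286699200) 24"
  by (rule pcurve_intro[where bb="-8109032148042125838491347671286699200"]) (simp_all add: prime_71)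

lemma val_B_9_0: "pcurve.psix 71 24 3528379374409 = 1"
  using pcurve.psix_int_val[OF inst_B_9, of "3528379374409"] by (simp add: leg_71)

lemma val_B_9_1: "pcurve.psix 71 24 (24443832958924/9) = -1"
  using pcurve.psix_frac_val[OF inst_B_9, of "9" "24443832958924"] by (simp add: leg_71)

lemma val_B_9_2: "pcurve.psix 71 24 41991934832044 = -1"
  using pcurve.psix_int_val[OF inst_B_9, of "41991934832044"] by (simp add: leg_71)

lemma val_B_9_3: "pcurve.psix 71 24 (83919846442489/9) = 1"
  using pcurve.psix_frac_val[OF inst_B_9, of "9" "83919846442489"] by (simp add: leg_71)

lemma val_B_9_4: "pcurve.psix 71 24 (198185567469961/9) = 1"
  using pcurve.psix_frac_val[OF inst_B_9, of "9" "198185567469961"] by (simp add: leg_71)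

lemma val_B_9_5: "pcurve.psix 71 24 (1261563628223644/289) = 1"
  using pcurve.psix_frac_val[OF inst_B_9, of "289" "1261563628223644"] by (simp add: leg_71)

lemma val_B_9_6: "pcurve.psix 71 24 (249889953577441/121) = -1"
  using pcurve.psix_frac_val[OF inst_B_9, of "121" "249889953577441"] by (simp add: leg_71)

lemma val_B_9_7: "pcurve.psix 71 24 (35098829679837436/1225) = -1"
  using pcurve.psix_frac_val[OF inst_B_9, of "1225" "35098829679837436"] by (simp add: leg_71)

lemma val_B_9_8: "pcurve.psix 71 24 (10442897018676361/729) = 1"
  using pcurve.psix_frac_val[OF inst_B_9, of "729" "10442897018676361"] by (simp add: leg_71)

lemma val_B_9_9: "pcurve.psix 71 24 (21538219648328006044/3214849) = 1"
  using pcurve.psix_frac_val[OF inst_B_9, of "3214849" "21538219648328006044"] by (simp add: leg_71)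

lemma vals_B_9: "map (pcurve.psi 71 24) [Aff 3528379374409 5984763094833906277,
   Aff (24443832958924/9) (93240170853556763168/27),
   Aff 41991934832044 272097810161011577728,
   Aff (83919846442489/9) (764916625222063960787/27),
   Aff (198185567469961/9) (2788965029861620279109/27),
   Aff (1261563628223644/289) (- 42568769904444402678928/4913),
   Aff (249889953577441/121) (1112982603584253549839/1331),
   Aff (35098829679837436/1225) (6574520442643878447103184/42875),
   Aff (10442897018676361/729) (- 1065691846252244332562491/19683),
   Aff (21538219648328006044/3214849) (98600392432667169709151373872/5764224257)] = [1, -1, -1, 1, 1, 1, -1, -1, 1, 1]"
  by (simp add: pcurve.psi_Aff[OF inst_B_9] val_B_9_0 val_B_9_1 val_B_9_2 val_B_9_3 val_B_9_4 val_B_9_5 val_B_9_6 val_B_9_7 val_B_9_8 val_B_9_9)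

lemma par_B_0:
  assumes "eclin (-8109032148042125838491347671286699200) [n1,n2,n3,n4,n5,n6,n7,n8,n9,n10] [Aff 3528379374409 5984763094833906277,
   Aff (24443832958924/9) (93240170853556763168/27),
   Aff 41991934832044 272097810161011577728,
   Aff (83919846442489/9) (764916625222063960787/27),
   Aff (198185567469961/9) (2788965029861620279109/27),
   Aff (1261563628223644/289) (- 42568769904444402678928/4913),
   Aff (249889953577441/121) (1112982603584253549839/1331),
   Aff (35098829679837436/1225) (6574520442643878447103184/42875),
   Aff (10442897018676361/729) (- 1065691846252244332562491/19683),
   Aff (21538219648328006044/3214849) (98600392432667169709151373872/5764224257)] = Inf"
  shows "even (n1 + (n3 + (n4 + (n8 + (n9)))))"
  using char_parity[OF inst_B_0 oc_B assms] vals_B_0 by simp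

lemma par_B_1:
  assumes "eclin (-8109032148042125838491347671286699200) [n1,n2,n3,n4,n5,n6,n7,n8,n9,n10] [Aff 3528379374409 5984763094833906277,
   Aff (24443832958924/9) (93240170853556763168/27),
   Aff 41991934832044 272097810161011577728,
   Aff (83919846442489/9) (764916625222063960787/27),
   Aff (198185567469961/9) (2788965029861620279109/27),
   Aff (1261563628223644/289) (- 42568769904444402678928/4913),
   Aff (249889953577441/121) (1112982603584253549839/1331),
   Aff (35098829679837436/1225) (6574520442643878447103184/42875),
   Aff (10442897018676361/729) (- 1065691846252244332562491/19683),
   Aff (21538219648328006044/3214849) (98600392432667169709151373872/5764224257)] = Inf"
  shows "even (n2 + (n3 + (n4 + (n5 + (n7 + (n9 + (n10)))))))"
  using char_parity[OF inst_B_1 oc_B assms] vals_B_1 by simp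

lemma par_B_2:
  assumes "eclin (-8109032148042125838491347671286699200) [n1,n2,n3,n4,n5,n6,n7,n8,n9,n10] [Aff 3528379374409 5984763094833906277,
   Aff (24443832958924/9) (93240170853556763168/27),
   Aff 41991934832044 272097810161011577728,
   Aff (83919846442489/9) (764916625222063960787/27),
   Aff (198185567469961/9) (2788965029861620279109/27),
   Aff (1261563628223644/289) (- 42568769904444402678928/4913),
   Aff (249889953577441/121) (1112982603584253549839/1331),
   Aff (35098829679837436/1225) (6574520442643878447103184/42875),
   Aff (10442897018676361/729) (- 1065691846252244332562491/19683),
   Aff (21538219648328006044/3214849) (98600392432667169709151373872/5764224257)] = Inf"
  shows "even (n2 + (n3 + (n6 + (n7 + (n10)))))"
  using char_parity[OF inst_B_2 oc_B assms] vals_B_2 by simp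

lemma par_B_3:
  assumes "eclin (-8109032148042125838491347671286699200) [n1,n2,n3,n4,n5,n6,n7,n8,n9,n10] [Aff 3528379374409 5984763094833906277,
   Aff (24443832958924/9) (93240170853556763168/27),
   Aff 41991934832044 272097810161011577728,
   Aff (83919846442489/9) (764916625222063960787/27),
   Aff (198185567469961/9) (2788965029861620279109/27),
   Aff (1261563628223644/289) (- 42568769904444402678928/4913),
   Aff (249889953577441/121) (1112982603584253549839/1331),
   Aff (35098829679837436/1225) (6574520442643878447103184/42875),
   Aff (10442897018676361/729) (- 1065691846252244332562491/19683),
   Aff (21538219648328006044/3214849) (98600392432667169709151373872/5764224257)] = Inf"
  shows "even (n1 + (n3 + (n4 + (n7 + (n8 + (n9 + (n10)))))))"
  using char_parity[OF inst_B_3 oc_B assms] vals_B_3 by simp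

lemma par_B_4:
  assumes "eclin (-8109032148042125838491347671286699200) [n1,n2,n3,n4,n5,n6,n7,n8,n9,n10] [Aff 3528379374409 5984763094833906277,
   Aff (24443832958924/9) (93240170853556763168/27),
   Aff 41991934832044 272097810161011577728,
   Aff (83919846442489/9) (764916625222063960787/27),
   Aff (198185567469961/9) (2788965029861620279109/27),
   Aff (1261563628223644/289) (- 42568769904444402678928/4913),
   Aff (249889953577441/121) (1112982603584253549839/1331),
   Aff (35098829679837436/1225) (6574520442643878447103184/42875),
   Aff (10442897018676361/729) (- 1065691846252244332562491/19683),
   Aff (21538219648328006044/3214849) (98600392432667169709151373872/5764224257)] = Inf"
  shows "even (n3 + (n8))"
  using char_parity[OF inst_B_4 oc_B assms] vals_B_4 by simp

lemma par_B_5: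
  assumes "eclin (-8109032148042125838491347671286699200) [n1,n2,n3,n4,n5,n6,n7,n8,n9,n10] [Aff 3528379374409 5984763094833906277,
   Aff (24443832958924/9) (93240170853556763168/27),
   Aff 41991934832044 272097810161011577728,
   Aff (83919846442489/9) (764916625222063960787/27),
   Aff (198185567469961/9) (2788965029861620279109/27),
   Aff (1261563628223644/289) (- 42568769904444402678928/4913),
   Aff (249889953577441/121) (1112982603584253549839/1331),
   Aff (35098829679837436/1225) (6574520442643878447103184/42875),
   Aff (10442897018676361/729) (- 1065691846252244332562491/19683),
   Aff (21538219648328006044/3214849) (98600392432667169709151373872/5764224257)] = Inf"
  shows "even (n4 + (n5 + (n6 + (n8 + (n9 + (n10))))))"
  using char_parity[OF inst_B_5 oc_B assms] vals_B_5 by simp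

lemma par_B_6:
  assumes "eclin (-8109032148042125838491347671286699200) [n1,n2,n3,n4,n5,n6,n7,n8,n9,n10] [Aff 3528379374409 5984763094833906277,
   Aff (24443832958924/9) (93240170853556763168/27),
   Aff 41991934832044 272097810161011577728,
   Aff (83919846442489/9) (764916625222063960787/27),
   Aff (198185567469961/9) (2788965029861620279109/27),
   Aff (1261563628223644/289) (- 42568769904444402678928/4913),
   Aff (249889953577441/121) (1112982603584253549839/1331),
   Aff (35098829679837436/1225) (6574520442643878447103184/42875),
   Aff (10442897018676361/729) (- 1065691846252244332562491/19683),
   Aff (21538219648328006044/3214849) (98600392432667169709151373872/5764224257)] = Inf"
  shows "even (n1 + (n2 + (n5 + (n6 + (n8 + (n9 + (n10)))))))"
  using char_parity[OF inst_B_6 oc_B assms] vals_B_6 by simp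

lemma par_B_7:
  assumes "eclin (-8109032148042125838491347671286699200) [n1,n2,n3,n4,n5,n6,n7,n8,n9,n10] [Aff 3528379374409 5984763094833906277,
   Aff (24443832958924/9) (93240170853556763168/27),
   Aff 41991934832044 272097810161011577728,
   Aff (83919846442489/9) (764916625222063960787/27),
   Aff (198185567469961/9) (2788965029861620279109/27),
   Aff (1261563628223644/289) (- 42568769904444402678928/4913),
   Aff (249889953577441/121) (1112982603584253549839/1331),
   Aff (35098829679837436/1225) (6574520442643878447103184/42875),
   Aff (10442897018676361/729) (- 1065691846252244332562491/19683),
   Aff (21538219648328006044/3214849) (98600392432667169709151373872/5764224257)] = Inf"
  shows "even (n1 + (n2 + (n5 + (n6 + (n7 + (n9))))))"
  using char_parity[OF inst_B_7 oc_B assms] vals_B_7 by simp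

lemma par_B_8:
  assumes "eclin (-8109032148042125838491347671286699200) [n1,n2,n3,n4,n5,n6,n7,n8,n9,n10] [Aff 3528379374409 5984763094833906277,
   Aff (24443832958924/9) (93240170853556763168/27),
   Aff 41991934832044 272097810161011577728,
   Aff (83919846442489/9) (764916625222063960787/27),
   Aff (198185567469961/9) (2788965029861620279109/27),
   Aff (1261563628223644/289) (- 42568769904444402678928/4913),
   Aff (249889953577441/121) (1112982603584253549839/1331),
   Aff (35098829679837436/1225) (6574520442643878447103184/42875),
   Aff (10442897018676361/729) (- 1065691846252244332562491/19683),
   Aff (21538219648328006044/3214849) (98600392432667169709151373872/5764224257)] = Inf"
  shows "even (n2 + (n5 + (n9 + (n10))))"
  using char_parity[OF inst_B_8 oc_B assms] vals_B_8 by simp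

lemma par_B_9:
  assumes "eclin (-8109032148042125838491347671286699200) [n1,n2,n3,n4,n5,n6,n7,n8,n9,n10] [Aff 3528379374409 5984763094833906277,
   Aff (24443832958924/9) (93240170853556763168/27),
   Aff 41991934832044 272097810161011577728,
   Aff (83919846442489/9) (764916625222063960787/27),
   Aff (198185567469961/9) (2788965029861620279109/27),
   Aff (1261563628223644/289) (- 42568769904444402678928/4913),
   Aff (249889953577441/121) (1112982603584253549839/1331),
   Aff (35098829679837436/1225) (6574520442643878447103184/42875),
   Aff (10442897018676361/729) (- 1065691846252244332562491/19683),
   Aff (21538219648328006044/3214849) (98600392432667169709151373872/5764224257)] = Inf"
  shows "even (n2 + (n3 + (n7 + (n8))))"
  using char_parity[OF inst_B_9 oc_B assms] vals_B_9 by simp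

lemma key_B:
  assumes len: "length ns = length [Aff 3528379374409 5984763094833906277,
   Aff (24443832958924/9) (93240170853556763168/27),
   Aff 41991934832044 272097810161011577728,
   Aff (83919846442489/9) (764916625222063960787/27),
   Aff (198185567469961/9) (2788965029861620279109/27),
   Aff (1261563628223644/289) (- 42568769904444402678928/4913),
   Aff (249889953577441/121) (1112982603584253549839/1331),
   Aff (35098829679837436/1225) (6574520442643878447103184/42875),
   Aff (10442897018676361/729) (- 1065691846252244332562491/19683),
   Aff (21538219648328006044/3214849) (98600392432667169709151373872/5764224257)]" and l0: "eclin (-8109032148042125838491347671286699200) ns [Aff 3528379374409 5984763094833906277,
   Aff (24443832958924/9) (93240170853556763168/27),
   Aff 41991934832044 272097810161011577728,
   Aff (83919846442489/9) (764916625222063960787/27),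
   Aff (198185567469961/9) (2788965029861620279109/27),
   Aff (1261563628223644/289) (- 42568769904444402678928/4913),
   Aff (249889953577441/121) (1112982603584253549839/1331),
   Aff (35098829679837436/1225) (6574520442643878447103184/42875),
   Aff (10442897018676361/729) (- 1065691846252244332562491/19683),
   Aff (21538219648328006044/3214849) (98600392432667169709151373872/5764224257)] = Inf"
  shows "\<forall>n\<in>set ns. even n"
proof -
  have l10: "length ns = 10" using len by simp
  obtain n1 n2 n3 n4 n5 n6 n7 n8 n9 n10 where ns: "ns = [n1,n2,n3,n4,n5,n6,n7,n8,n9,n10]" using len10[OF l10] by blast
  have l: "eclin (-8109032148042125838491347671286699200) [n1,n2,n3,n4,n5,n6,n7,n8,n9,n10] [Aff 3528379374409 5984763094833906277,
   Aff (24443832958924/9) (93240170853556763168/27),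
   Aff 41991934832044 272097810161011577728,
   Aff (83919846442489/9) (764916625222063960787/27),
   Aff (198185567469961/9) (2788965029861620279109/27),
   Aff (1261563628223644/289) (- 42568769904444402678928/4913),
   Aff (249889953577441/121) (1112982603584253549839/1331),
   Aff (35098829679837436/1225) (6574520442643878447103184/42875),
   Aff (10442897018676361/729) (- 1065691846252244332562491/19683),
   Aff (21538219648328006044/3214849) (98600392432667169709151373872/5764224257)] = Inf" using l0 ns by simp
  have h0: "even (n1 + (n3 + (n4 + (n8 + (n9)))))" by (rule par_B_0[OF l])
  have h1: "even (n2 + (n3 + (n4 + (n5 + (n7 + (n9 + (n10)))))))" by (rule par_B_1[OF l])
  have h2: "even (n2 + (n3 + (n6 + (n7 + (n10)))))" by (rule par_B_2[OF l])
  have h3: "even (n1 + (n3 + (n4 + (n7 + (n8 + (n9 + (n10)))))))" by (rule par_B_3[OF l])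
  have h4: "even (n3 + (n8))" by (rule par_B_4[OF l])
  have h5: "even (n4 + (n5 + (n6 + (n8 + (n9 + (n10))))))" by (rule par_B_5[OF l])
  have h6: "even (n1 + (n2 + (n5 + (n6 + (n8 + (n9 + (n10)))))))" by (rule par_B_6[OF l])
  have h7: "even (n1 + (n2 + (n5 + (n6 + (n7 + (n9))))))" by (rule par_B_7[OF l])
  have h8: "even (n2 + (n5 + (n9 + (n10))))" by (rule par_B_8[OF l])
  have h9: "even (n2 + (n3 + (n7 + (n8))))" by (rule par_B_9[OF l])
  have e1: "even n1"
  proof -
    have s: "even ((n1 + (n3 + (n4 + (n8 + (n9))))) + ((n2 + (n3 + (n4 + (n5 + (n7 + (n9 + (n10))))))) + ((n1 + (n3 + (n4 + (n7 + (n8 + (n9 + (n10))))))) + ((n4 + (n5 + (n6 + (n8 + (n9 + (n10)))))) + ((n1 + (n2 + (n5 + (n6 + (n7 + (n9)))))) + ((n2 + (n5 + (n9 + (n10)))) + ((n2 + (n3 + (n7 + (n8)))))))))))" by (rule dvd_add[OF h0 dvd_add[OF h1 dvd_add[OF h3 dvd_add[OF h5 dvd_add[OF h7 dvd_add[OF h8 h9]]]]]])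
    have q: "(n1 + (n3 + (n4 + (n8 + (n9))))) + ((n2 + (n3 + (n4 + (n5 + (n7 + (n9 + (n10))))))) + ((n1 + (n3 + (n4 + (n7 + (n8 + (n9 + (n10))))))) + ((n4 + (n5 + (n6 + (n8 + (n9 + (n10)))))) + ((n1 + (n2 + (n5 + (n6 + (n7 + (n9)))))) + ((n2 + (n5 + (n9 + (n10)))) + ((n2 + (n3 + (n7 + (n8)))))))))) = n1 + 2*(1*n1 + 2*n2 + 2*n3 + 2*n4 + 2*n5 + 1*n6 + 2*n7 + 2*n8 + 3*n9 + 2*n10)" by (simp add: algebra_simps)
    show ?thesis using s unfolding q by simp
  qed
  have e2: "even n2"
  proof -
    have s: "even ((n2 + (n3 + (n4 + (n5 + (n7 + (n9 + (n10))))))) + ((n2 + (n3 + (n6 + (n7 + (n10))))) + ((n3 + (n8)) + ((n4 + (n5 + (n6 + (n8 + (n9 + (n10)))))) + ((n1 + (n2 + (n5 + (n6 + (n8 + (n9 + (n10))))))) + ((n1 + (n2 + (n5 + (n6 + (n7 + (n9)))))) + ((n2 + (n3 + (n7 + (n8)))))))))))" by (rule dvd_add[OF h1 dvd_add[OF h2 dvd_add[OF h4 dvd_add[OF h5 dvd_add[OF h6 dvd_add[OF h7 h9]]]]]])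
    have q: "(n2 + (n3 + (n4 + (n5 + (n7 + (n9 + (n10))))))) + ((n2 + (n3 + (n6 + (n7 + (n10))))) + ((n3 + (n8)) + ((n4 + (n5 + (n6 + (n8 + (n9 + (n10)))))) + ((n1 + (n2 + (n5 + (n6 + (n8 + (n9 + (n10))))))) + ((n1 + (n2 + (n5 + (n6 + (n7 + (n9)))))) + ((n2 + (n3 + (n7 + (n8)))))))))) = n2 + 2*(1*n1 + 2*n2 + 2*n3 + 1*n4 + 2*n5 + 2*n6 + 2*n7 + 2*n8 + 2*n9 + 2*n10)" by (simp add: algebra_simps)
    show ?thesis using s unfolding q by simp
  qed
  have e3: "even n3"
  proof -
    have s: "even ((n1 + (n3 + (n4 + (n8 + (n9))))) + ((n1 + (n3 + (n4 + (n7 + (n8 + (n9 + (n10))))))) + ((n3 + (n8)) + ((n1 + (n2 + (n5 + (n6 + (n8 + (n9 + (n10))))))) + ((n1 + (n2 + (n5 + (n6 + (n7 + (n9)))))))))))" by (rule dvd_add[OF h0 dvd_add[OF h3 dvd_add[OF h4 dvd_add[OF h6 h7]]]])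
    have q: "(n1 + (n3 + (n4 + (n8 + (n9))))) + ((n1 + (n3 + (n4 + (n7 + (n8 + (n9 + (n10))))))) + ((n3 + (n8)) + ((n1 + (n2 + (n5 + (n6 + (n8 + (n9 + (n10))))))) + ((n1 + (n2 + (n5 + (n6 + (n7 + (n9)))))))))) = n3 + 2*(2*n1 + 1*n2 + 1*n3 + 1*n4 + 1*n5 + 1*n6 + 1*n7 + 2*n8 + 2*n9 + 1*n10)" by (simp add: algebra_simps)
    show ?thesis using s unfolding q by simp
  qed
  have e4: "even n4"
  proof -
    have s: "even ((n1 + (n3 + (n4 + (n8 + (n9))))) + ((n2 + (n3 + (n6 + (n7 + (n10))))) + ((n1 + (n3 + (n4 + (n7 + (n8 + (n9 + (n10))))))) + ((n3 + (n8)) + ((n4 + (n5 + (n6 + (n8 + (n9 + (n10)))))) + ((n2 + (n5 + (n9 + (n10))))))))))" by (rule dvd_add[OF h0 dvd_add[OF h2 dvd_add[OF h3 dvd_add[OF h4 dvd_add[OF h5 h8]]]]])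
    have q: "(n1 + (n3 + (n4 + (n8 + (n9))))) + ((n2 + (n3 + (n6 + (n7 + (n10))))) + ((n1 + (n3 + (n4 + (n7 + (n8 + (n9 + (n10))))))) + ((n3 + (n8)) + ((n4 + (n5 + (n6 + (n8 + (n9 + (n10)))))) + ((n2 + (n5 + (n9 + (n10))))))))) = n4 + 2*(1*n1 + 1*n2 + 2*n3 + 1*n4 + 1*n5 + 1*n6 + 1*n7 + 2*n8 + 2*n9 + 2*n10)" by (simp add: algebra_simps)
    show ?thesis using s unfolding q by simp
  qed
  have e5: "even n5"
  proof -
    have s: "even ((n2 + (n3 + (n4 + (n5 + (n7 + (n9 + (n10))))))) + ((n2 + (n3 + (n6 + (n7 + (n10))))) + ((n1 + (n3 + (n4 + (n7 + (n8 + (n9 + (n10))))))) + ((n3 + (n8)) + ((n1 + (n2 + (n5 + (n6 + (n7 + (n9)))))) + ((n2 + (n5 + (n9 + (n10))))))))))" by (rule dvd_add[OF h1 dvd_add[OF h2 dvd_add[OF h3 dvd_add[OF h4 dvd_add[OF h7 h8]]]]])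
    have q: "(n2 + (n3 + (n4 + (n5 + (n7 + (n9 + (n10))))))) + ((n2 + (n3 + (n6 + (n7 + (n10))))) + ((n1 + (n3 + (n4 + (n7 + (n8 + (n9 + (n10))))))) + ((n3 + (n8)) + ((n1 + (n2 + (n5 + (n6 + (n7 + (n9)))))) + ((n2 + (n5 + (n9 + (n10))))))))) = n5 + 2*(1*n1 + 2*n2 + 2*n3 + 1*n4 + 1*n5 + 1*n6 + 2*n7 + 1*n8 + 2*n9 + 2*n10)" by (simp add: algebra_simps)
    show ?thesis using s unfolding q by simp
  qed
  have e6: "even n6"
  proof -
    have s: "even ((n2 + (n3 + (n4 + (n5 + (n7 + (n9 + (n10))))))) + ((n4 + (n5 + (n6 + (n8 + (n9 + (n10)))))) + ((n2 + (n3 + (n7 + (n8)))))))" by (rule dvd_add[OF h1 dvd_add[OF h5 h9]])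
    have q: "(n2 + (n3 + (n4 + (n5 + (n7 + (n9 + (n10))))))) + ((n4 + (n5 + (n6 + (n8 + (n9 + (n10)))))) + ((n2 + (n3 + (n7 + (n8)))))) = n6 + 2*(1*n2 + 1*n3 + 1*n4 + 1*n5 + 1*n7 + 1*n8 + 1*n9 + 1*n10)" by (simp add: algebra_simps)
    show ?thesis using s unfolding q by simp
  qed
  have e7: "even n7"
  proof -
    have s: "even ((n2 + (n3 + (n4 + (n5 + (n7 + (n9 + (n10))))))) + ((n2 + (n3 + (n6 + (n7 + (n10))))) + ((n4 + (n5 + (n6 + (n8 + (n9 + (n10)))))) + ((n1 + (n2 + (n5 + (n6 + (n8 + (n9 + (n10))))))) + ((n1 + (n2 + (n5 + (n6 + (n7 + (n9)))))))))))" by (rule dvd_add[OF h1 dvd_add[OF h2 dvd_add[OF h5 dvd_add[OF h6 h7]]]])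
    have q: "(n2 + (n3 + (n4 + (n5 + (n7 + (n9 + (n10))))))) + ((n2 + (n3 + (n6 + (n7 + (n10))))) + ((n4 + (n5 + (n6 + (n8 + (n9 + (n10)))))) + ((n1 + (n2 + (n5 + (n6 + (n8 + (n9 + (n10))))))) + ((n1 + (n2 + (n5 + (n6 + (n7 + (n9)))))))))) = n7 + 2*(1*n1 + 2*n2 + 1*n3 + 1*n4 + 2*n5 + 2*n6 + 1*n7 + 1*n8 + 2*n9 + 2*n10)" by (simp add: algebra_simps)
    show ?thesis using s unfolding q by simp
  qed
  have e8: "even n8"
  proof -
    have s: "even ((n1 + (n3 + (n4 + (n8 + (n9))))) + ((n1 + (n3 + (n4 + (n7 + (n8 + (n9 + (n10))))))) + ((n1 + (n2 + (n5 + (n6 + (n8 + (n9 + (n10))))))) + ((n1 + (n2 + (n5 + (n6 + (n7 + (n9))))))))))" by (rule dvd_add[OF h0 dvd_add[OF h3 dvd_add[OF h6 h7]]])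
    have q: "(n1 + (n3 + (n4 + (n8 + (n9))))) + ((n1 + (n3 + (n4 + (n7 + (n8 + (n9 + (n10))))))) + ((n1 + (n2 + (n5 + (n6 + (n8 + (n9 + (n10))))))) + ((n1 + (n2 + (n5 + (n6 + (n7 + (n9))))))))) = n8 + 2*(2*n1 + 1*n2 + 1*n3 + 1*n4 + 1*n5 + 1*n6 + 1*n7 + 1*n8 + 2*n9 + 1*n10)" by (simp add: algebra_simps)
    show ?thesis using s unfolding q by simp
  qed
  have e9: "even n9"
  proof -
    have s: "even ((n1 + (n3 + (n4 + (n8 + (n9))))) + ((n2 + (n3 + (n4 + (n5 + (n7 + (n9 + (n10))))))) + ((n2 + (n3 + (n6 + (n7 + (n10))))) + ((n1 + (n2 + (n5 + (n6 + (n7 + (n9)))))) + ((n2 + (n3 + (n7 + (n8)))))))))" by (rule dvd_add[OF h0 dvd_add[OF h1 dvd_add[OF h2 dvd_add[OF h7 h9]]]])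
    have q: "(n1 + (n3 + (n4 + (n8 + (n9))))) + ((n2 + (n3 + (n4 + (n5 + (n7 + (n9 + (n10))))))) + ((n2 + (n3 + (n6 + (n7 + (n10))))) + ((n1 + (n2 + (n5 + (n6 + (n7 + (n9)))))) + ((n2 + (n3 + (n7 + (n8)))))))) = n9 + 2*(1*n1 + 2*n2 + 2*n3 + 1*n4 + 1*n5 + 1*n6 + 2*n7 + 1*n8 + 1*n9 + 1*n10)" by (simp add: algebra_simps)
    show ?thesis using s unfolding q by simp
  qed
  have e10: "even n10"
  proof -
    have s: "even ((n1 + (n3 + (n4 + (n8 + (n9))))) + ((n2 + (n3 + (n4 + (n5 + (n7 + (n9 + (n10))))))) + ((n2 + (n3 + (n6 + (n7 + (n10))))) + ((n1 + (n3 + (n4 + (n7 + (n8 + (n9 + (n10))))))) + ((n4 + (n5 + (n6 + (n8 + (n9 + (n10)))))) + ((n1 + (n2 + (n5 + (n6 + (n8 + (n9 + (n10))))))) + ((n1 + (n2 + (n5 + (n6 + (n7 + (n9)))))))))))))" by (rule dvd_add[OF h0 dvd_add[OF h1 dvd_add[OF h2 dvd_add[OF h3 dvd_add[OF h5 dvd_add[OF h6 h7]]]]]])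
    have q: "(n1 + (n3 + (n4 + (n8 + (n9))))) + ((n2 + (n3 + (n4 + (n5 + (n7 + (n9 + (n10))))))) + ((n2 + (n3 + (n6 + (n7 + (n10))))) + ((n1 + (n3 + (n4 + (n7 + (n8 + (n9 + (n10))))))) + ((n4 + (n5 + (n6 + (n8 + (n9 + (n10)))))) + ((n1 + (n2 + (n5 + (n6 + (n8 + (n9 + (n10))))))) + ((n1 + (n2 + (n5 + (n6 + (n7 + (n9)))))))))))) = n10 + 2*(2*n1 + 2*n2 + 2*n3 + 2*n4 + 2*n5 + 2*n6 + 2*n7 + 2*n8 + 3*n9 + 2*n10)" by (simp add: algebra_simps)
    show ?thesis using s unfolding q by simp
  qed
  show ?thesis using ns e1 e2 e3 e4 e5 e6 e7 e8 e9 e10 by simp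
qed

lemma indep_B: "ec_lin_indep 0 (-8109032148042125838491347671286699200) [Aff 3528379374409 5984763094833906277,
   Aff (24443832958924/9) (93240170853556763168/27),
   Aff 41991934832044 272097810161011577728,
   Aff (83919846442489/9) (764916625222063960787/27),
   Aff (198185567469961/9) (2788965029861620279109/27),
   Aff (1261563628223644/289) (- 42568769904444402678928/4913),
   Aff (249889953577441/121) (1112982603584253549839/1331),
   Aff (35098829679837436/1225) (6574520442643878447103184/42875),
   Aff (10442897018676361/729) (- 1065691846252244332562491/19683),
   Aff (21538219648328006044/3214849) (98600392432667169709151373872/5764224257)]"
  by (rule descent[OF _ nc_B oc_B key_B]) simp


theorem mainTheorem3:
  fixes k :: int and c :: rat and Ps :: "ec_pt list"
  assumes "k = 137006962414679910"
    and "c = 4692726937524378378756566939402025"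
    and "Ps = [Aff (-135797482140) 46781315964225555,
               Aff (-150436201545) 35891470127810220,
               Aff (-42200591214) 67952721291406041,
               Aff 2327642247924 3551854243978575507,
               Aff 5504535148140 12914782107290941395,
               Aff 140506152430 86409469562070095,
               Aff 397507563420 259814927561209005,
               Aff 7162660587075 19169656506442936830,
               Aff 73148794740 71303068454026605,
               Aff (-102758626586) 60063833881519937]"
  shows "k = 2 * 3 * 5 * 7 * 23 * 31 * 37 * 43 * 83 * 109 * 151 * 421
         \<and> (\<forall>P \<in> set Ps. on_curve 0 c P)
         \<and> ec_lin_indep 0 c Ps
         \<and> Ek_rank_ge k 10"
  proof -
  have k: "k = 2 * 3 * 5 * 7 * 23 * 31 * 37 * 43 * 83 * 109 * 151 * 421" using assms(1) by simp
  have oc: "\<forall>P \<in> set Ps. on_curve 0 c P" using oc_A unfolding assms(2,3) .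
  have ind: "ec_lin_indep 0 c Ps" using indep_A unfolding assms(2,3) .
  have rk: "Ek_rank_ge k 10"
  proof -
    have b: "- 432 * (of_int k)^2 = ((-8109032148042125838491347671286699200) :: rat)" using assms(1) by simp
    have "ec_rank_ge 0 (-8109032148042125838491347671286699200) 10"
      unfolding ec_rank_ge_def
      by (intro exI[of _ "[Aff 3528379374409 5984763094833906277,
   Aff (24443832958924/9) (93240170853556763168/27),
   Aff 41991934832044 272097810161011577728,
   Aff (83919846442489/9) (764916625222063960787/27),
   Aff (198185567469961/9) (2788965029861620279109/27),
   Aff (1261563628223644/289) (- 42568769904444402678928/4913),
   Aff (249889953577441/121) (1112982603584253549839/1331),
   Aff (35098829679837436/1225) (6574520442643878447103184/42875),
   Aff (10442897018676361/729) (- 1065691846252244332562491/19683),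
   Aff (21538219648328006044/3214849) (98600392432667169709151373872/5764224257)]"] conjI oc_B indep_B) simp
    then show ?thesis unfolding Ek_rank_ge_def b .
  qed
  show ?thesis using k oc ind rk by blast
qed

end
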